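(* Let $\mathcal P$ and $\mathcal Q$ be down-right paths with $\mathcal Q$ above $\mathcal P$. (1) If the initial free energies $(h(\mathbf p_j))_{0\le j\le N}$ are distributed according to the (infinite) measure $\mathrm{wt}^{\mathcal P}(\boldsymbol\lambda_1)d\boldsymbol\lambda_1$ on $\mathbb R^{N+1}$, then $(h(\mathbf q_j))_{0\le j\le N}$ is distributed according to $\mathrm{wt}^{\mathcal Q}(\boldsymbol\lambda_1')d\boldsymbol\lambda_1'$; that is, for every measurable $F:\mathbb R^{N+1}\to[0,\infty]$, $\int_{\mathbb R^{N+1}}\mathbb E\big[F((h(\mathbf q_j))_j)\,\big|\,h(\mathbf p_j)=\lambda_1^{(j)}\ \forall j\big]\mathrm{wt}^{\mathcal P}(\boldsymbol\lambda_1)d\boldsymbol\lambda_1=\int_{\mathbb R^{N+1}}F(\boldsymbol\lambda_1')\mathrm{wt}^{\mathcal Q}(\boldsymbol\lambda_1')d\boldsymbol\lambda_1'$. (2) Assume moreover $u+v>0$. If $\mathbf L_1\in\mathbb R^N$ has density $\mathrm P^{\mathcal P}_{\mathrm{LG}}$ and the polymer is started from $h(\mathbf p_0)=0$, $h(\mathbf p_j)=L_1(j)$, then $(h(\mathbf q_j)-h(\mathbf q_0))_{1\le j\le N}$ has density $\mathrm P^{\mathcal Q}_{\mathrm{LG}}$.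
   Context: Fix $N\ge1$ and $\alpha_1,\dots,\alpha_N,u,v\in\mathbb R$ with $\alpha_i+\alpha_j>0$, $\alpha_i+u>0$, $\alpha_i+v>0$; extend $\alpha_{j+kN}=\alpha_j$. Strip $\{(n,m):0\le m\le n\le m+N\}$; independent weights $\varpi_{n,m}\sim\Gamma^{-1}(\alpha_n+\alpha_m)$ for $0\le m<n<m+N$, $\varpi_{m,m}\sim\Gamma^{-1}(\alpha_m+u)$, $\varpi_{m+N,m}\sim\Gamma^{-1}(\alpha_m+v)$ ($\Gamma^{-1}(\theta)$ has density $x^{-\theta-1}e^{-1/x}/\Gamma(\theta)$ on $(0,\infty)$). A down-right path: strip vertices $\mathbf p_0=(m_0,m_0),\dots,\mathbf p_N$ with steps in $\{(1,0),(0,-1)\}$; edge $\mathsf e_j$ ($\mathbf p_{j-1}\to\mathbf p_j$) has label $\ell_j=\alpha_n$ if horizontal $(n-1,m)\to(n,m)$, $\ell_j=\alpha_m$ if vertical between $(n,m-1),(n,m)$. A vertex is above $\mathcal P$ if reachable from $\mathcal P$ by an up-right path in the strip; $\mathcal Q$ (vertices $\mathbf q_j$) is above $\mathcal P$ if all its vertices are on or above $\mathcal P$. Given $z(\mathbf p_j)=e^{h(\mathbf p_j)}$ (independent of the weights), for $(n,m)$ above $\mathcal P$, $z(n,m)=\sum_\pi z(\pi(0))\prod_{i=1}^{\ell}\varpi_{\pi(i)}$ over up-right paths in the strip from $\pi(0)\in\mathcal P$ to $(n,m)$ touching $\mathcal P$ only at $\pi(0)$; $h=\log z$. Two-layer weight: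 $(\mathrm{up}(j),\mathrm{low}(j))=(j,j-1)$ if $\mathsf e_j$ horizontal, $(j-1,j)$ if vertical; $f_\theta(x)=e^{-\theta x-e^{-x}}$; for $\boldsymbol\lambda=(\boldsymbol\lambda_1,\boldsymbol\lambda_2)$, $\boldsymbol\lambda_i=(\lambda_i^{(0)},\dots,\lambda_i^{(N)})\in\mathbb R^{N+1}$, $\mathrm{wt}^{\mathcal{GP}}(\boldsymbol\lambda)=e^{-u(\lambda_1^{(0)}-\lambda_2^{(0)})-v(\lambda_1^{(N)}-\lambda_2^{(N)})}\prod_{j=1}^N\big[\prod_{i=1}^2f_{\ell_j}(\lambda_i^{(\mathrm{up}(j))}-\lambda_i^{(\mathrm{low}(j))})\big]e^{-e^{-(\lambda_1^{(\mathrm{low}(j))}-\lambda_2^{(\mathrm{up}(j))})}}$, and $\mathrm{wt}^{\mathcal P}(\boldsymbol\lambda_1)=\int_{\mathbb R^{N+1}}\mathrm{wt}^{\mathcal{GP}}(\boldsymbol\lambda_1,\boldsymbol\lambda_2)d\boldsymbol\lambda_2$, invariant under adding a constant to all coordinates of $\boldsymbol\lambda_1$. When $u+v>0$, $Z=\int_{\mathbb R^N}\mathrm{wt}^{\mathcal P}(\boldsymbol\lambda_1)d\lambda_1^{(1)}\cdots d\lambda_1^{(N)}$ (with $\lambda_1^{(0)}$ fixed) is finite, positive and independent of $\mathcal P$ and $\lambda_1^{(0)}$, and $\mathrm P^{\mathcal P}_{\mathrm{LG}}(\mathbf L_1)=\mathrm{wt}^{\mathcal P}(\boldsymbol\lambda_1)/Z$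 with $L_1(j)=\lambda_1^{(j)}-\lambda_1^{(0)}$ is a probability density on $\mathbb R^N$. *)

theory Defs
  imports "HOL-Analysis.Analysis" "HOL-Probability.Probability"
begin

definition alpha_ext :: "nat \<Rightarrow> (nat \<Rightarrow> real) \<Rightarrow> nat \<Rightarrow> real" where
  "alpha_ext N \<alpha> j = \<alpha> (if j mod N = 0 then N else j mod N)"

definition strip :: "nat \<Rightarrow> (nat \<times> nat) set" where
  "strip N = {(n, m). m \<le> n \<and> n \<le> m + N}"

definition weight_param :: "nat \<Rightarrow> (nat \<Rightarrow> real) \<Rightarrow> real \<Rightarrow> real \<Rightarrow> nat \<times> nat \<Rightarrow> real" where
  "weight_param N \<alpha> u v x =
     (let n = fst x; m = snd x in
      if n = m then alpha_ext N \<alpha> m + u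
      else if n = m + N then alpha_ext N \<alpha> m + v
      else alpha_ext N \<alpha> n + alpha_ext N \<alpha> m)"

definition inv_gamma_density :: "real \<Rightarrow> real \<Rightarrow> real" where
  "inv_gamma_density \<theta> x = (if x > 0 then x powr (-\<theta> - 1) * exp (- 1 / x) / Gamma \<theta> else 0)"

definition inv_gamma :: "real \<Rightarrow> real measure" where
  "inv_gamma \<theta> = density lborel (\<lambda>x. ennreal (inv_gamma_density \<theta> x))"

definition weight_measure :: "nat \<Rightarrow> (nat \<Rightarrow> real) \<Rightarrow> real \<Rightarrow> real \<Rightarrow> ((nat \<times> nat) \<Rightarrow> real) measure" where
  "weight_measure N \<alpha> u v = PiM (strip N) (\<lambda>x. inv_gamma (weight_param N \<alpha> u v x))"

text \<open>Down-right path p_0,...,p_N (values of p beyond N are irrelevant).\<close>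
definition down_right_path :: "nat \<Rightarrow> (nat \<Rightarrow> nat \<times> nat) \<Rightarrow> bool" where
  "down_right_path N p \<longleftrightarrow> fst (p 0) = snd (p 0) \<and>
     (\<forall>j\<in>{1..N}. p j = (fst (p (j - 1)) + 1, snd (p (j - 1))) \<or>
                   (snd (p (j - 1)) \<ge> 1 \<and> p j = (fst (p (j - 1)), snd (p (j - 1)) - 1)))"

definition horizontal :: "(nat \<Rightarrow> nat \<times> nat) \<Rightarrow> nat \<Rightarrow> bool" where
  "horizontal p j \<longleftrightarrow> fst (p j) = fst (p (j - 1)) + 1"

definition edge_label :: "nat \<Rightarrow> (nat \<Rightarrow> real) \<Rightarrow> (nat \<Rightarrow> nat \<times> nat) \<Rightarrow> nat \<Rightarrow> real" where
  "edge_label N \<alpha> p j = (if horizontal p j then alpha_ext N \<alpha> (fst (p j)) else alpha_ext N \<alpha> (snd (p (j - 1))))"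

definition up_idx :: "(nat \<Rightarrow> nat \<times> nat) \<Rightarrow> nat \<Rightarrow> nat" where
  "up_idx p j = (if horizontal p j then j else j - 1)"

definition low_idx :: "(nat \<Rightarrow> nat \<times> nat) \<Rightarrow> nat \<Rightarrow> nat" where
  "low_idx p j = (if horizontal p j then j - 1 else j)"

definition path_set :: "nat \<Rightarrow> (nat \<Rightarrow> nat \<times> nat) \<Rightarrow> (nat \<times> nat) set" where
  "path_set N p = p ` {..N}"

definition up_right_path :: "nat \<Rightarrow> (nat \<times> nat) list \<Rightarrow> bool" where
  "up_right_path N \<pi> \<longleftrightarrow> \<pi> \<noteq> [] \<and> set \<pi> \<subseteq> strip N \<and>
     (\<forall>i. i + 1 < length \<pi> \<longrightarrow>
        \<pi> ! (i + 1) = (fst (\<pi> ! i) + 1, snd (\<pi> ! i)) \<or> \<pi> ! (i + 1) = (fst (\<pi> ! i), snd (\<pi> ! i) + 1))"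

definition above :: "nat \<Rightarrow> (nat \<Rightarrow> nat \<times> nat) \<Rightarrow> nat \<times> nat \<Rightarrow> bool" where
  "above N p x \<longleftrightarrow> (\<exists>\<pi>. up_right_path N \<pi> \<and> hd \<pi> \<in> path_set N p \<and> last \<pi> = x)"

definition path_above :: "nat \<Rightarrow> (nat \<Rightarrow> nat \<times> nat) \<Rightarrow> (nat \<Rightarrow> nat \<times> nat) \<Rightarrow> bool" where
  "path_above N p q \<longleftrightarrow> (\<forall>j\<le>N. above N p (q j))"

definition polymer_paths :: "nat \<Rightarrow> (nat \<Rightarrow> nat \<times> nat) \<Rightarrow> nat \<times> nat \<Rightarrow> (nat \<times> nat) list set" where
  "polymer_paths N p x = {\<pi>. up_right_path N \<pi> \<and> hd \<pi> \<in> path_set N p \<and> last \<pi> = x \<and>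
       (\<forall>i\<in>{1..<length \<pi>}. \<pi> ! i \<notin> path_set N p)}"

definition z_poly :: "nat \<Rightarrow> (nat \<Rightarrow> nat \<times> nat) \<Rightarrow> (nat \<Rightarrow> real) \<Rightarrow> ((nat \<times> nat) \<Rightarrow> real) \<Rightarrow> nat \<times> nat \<Rightarrow> real" where
  "z_poly N p lam w x = (\<Sum>\<pi>\<in>polymer_paths N p x.
      exp (lam (THE j. j \<le> N \<and> p j = hd \<pi>)) * (\<Prod>i\<in>{1..<length \<pi>}. w (\<pi> ! i)))"

definition free_energy :: "nat \<Rightarrow> (nat \<Rightarrow> nat \<times> nat) \<Rightarrow> (nat \<Rightarrow> real) \<Rightarrow> ((nat \<times> nat) \<Rightarrow> real) \<Rightarrow> nat \<times> nat \<Rightarrow> real" where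
  "free_energy N p lam w x = ln (z_poly N p lam w x)"

definition f_theta :: "real \<Rightarrow> real \<Rightarrow> real" where
  "f_theta \<theta> x = exp (- \<theta> * x - exp (- x))"

definition wt_GP :: "nat \<Rightarrow> (nat \<Rightarrow> real) \<Rightarrow> real \<Rightarrow> real \<Rightarrow> (nat \<Rightarrow> nat \<times> nat) \<Rightarrow>
    (nat \<Rightarrow> real) \<Rightarrow> (nat \<Rightarrow> real) \<Rightarrow> real" where
  "wt_GP N \<alpha> u v p l1 l2 =
     exp (- u * (l1 0 - l2 0) - v * (l1 N - l2 N)) *
     (\<Prod>j\<in>{1..N}.
        f_theta (edge_label N \<alpha> p j) (l1 (up_idx p j) - l1 (low_idx p j)) *
        f_theta (edge_label N \<alpha> p j) (l2 (up_idx p j) - l2 (low_idx p j)) *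
        exp (- exp (- (l1 (low_idx p j) - l2 (up_idx p j)))))"

definition wt_P :: "nat \<Rightarrow> (nat \<Rightarrow> real) \<Rightarrow> real \<Rightarrow> real \<Rightarrow> (nat \<Rightarrow> nat \<times> nat) \<Rightarrow> (nat \<Rightarrow> real) \<Rightarrow> ennreal" where
  "wt_P N \<alpha> u v p l1 = (\<integral>\<^sup>+ l2. ennreal (wt_GP N \<alpha> u v p l1 l2) \<partial>(PiM {..N} (\<lambda>_. lborel)))"

definition init_vec :: "(nat \<Rightarrow> real) \<Rightarrow> nat \<Rightarrow> real" where
  "init_vec L = (\<lambda>j. if j = 0 then 0 else L j)"

definition Z_LG :: "nat \<Rightarrow> (nat \<Rightarrow> real) \<Rightarrow> real \<Rightarrow> real \<Rightarrow> (nat \<Rightarrow> nat \<times> nat) \<Rightarrow> ennreal" where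
  "Z_LG N \<alpha> u v p = (\<integral>\<^sup>+ L. wt_P N \<alpha> u v p (init_vec L) \<partial>(PiM {1..N} (\<lambda>_. lborel)))"

definition P_LG :: "nat \<Rightarrow> (nat \<Rightarrow> real) \<Rightarrow> real \<Rightarrow> real \<Rightarrow> (nat \<Rightarrow> nat \<times> nat) \<Rightarrow> (nat \<Rightarrow> real) \<Rightarrow> ennreal" where
  "P_LG N \<alpha> u v p L = wt_P N \<alpha> u v p (init_vec L) / Z_LG N \<alpha> u v p"

end

theory Submission
  imports Defs
begin


lemma exp_subst_nn:
  fixes f :: "real \<Rightarrow> real"
  assumes f[measurable]: "f \<in> borel_measurable borel" and nn: "\<And>x. f x \<ge> 0"
  shows "(\<integral>\<^sup>+x. ennreal (f x) * indicator {0<..} x \<partial>lborel) =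
         (\<integral>\<^sup>+s. ennreal (f (exp s) * exp s) \<partial>lborel)"
proof -
  have sub: "(\<integral>\<^sup>+x. ennreal (f x) * indicator {exp (-real n)..exp (real n)} x \<partial>lborel) =
        (\<integral>\<^sup>+s. ennreal (f (exp s) * exp s) * indicator {-real n..real n} s \<partial>lborel)" for n :: nat
  proof -
    have "(\<integral>\<^sup>+x. ennreal (f x * indicator {exp (-real n)..exp (real n)} x) \<partial>lborel) =
        (\<integral>\<^sup>+x. ennreal (f (exp x) * exp x * indicator {-real n..real n} x) \<partial>lborel)"
      by (rule nn_integral_substitution[where g=exp and g'=exp])
         (auto intro!: DERIV_exp continuous_intros simp: set_borel_measurable_def)
    moreover have eq: "\<And>(a::real) S (x::real). ennreal (a * indicator S x) = ennreal a * indicator S x"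
      by (simp add: indicator_def)
    ultimately show ?thesis unfolding eq by simp
  qed
  have L: "(\<integral>\<^sup>+x. ennreal (f x) * indicator {0<..} x \<partial>lborel) =
      (SUP n. \<integral>\<^sup>+x. ennreal (f x) * indicator {exp (-real n)..exp (real n)} x \<partial>lborel)"
  proof -
    have "(\<lambda>x. ennreal (f x) * indicator {0<..} x) =
        (\<lambda>x. SUP n. ennreal (f x) * indicator {exp (-real n)..exp (real n)} x)"
    proof
      fix x
      show "ennreal (f x) * indicator {0<..} x = (SUP n. ennreal (f x) * indicator {exp (-real n)..exp (real n)} x)"
      proof (cases "x > 0")
        case True
        obtain n1 :: nat where n1: "real n1 > ln x" using reals_Archimedean2 by blast
        obtain n2 :: nat where n2: "real n2 > - ln x" using reals_Archimedean2 by blast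
        let ?n = "max n1 n2"
        have "x \<in> {exp (-real ?n)..exp (real ?n)}"
        proof -
          have "exp (-real ?n) \<le> exp (ln x)" using n2 by (simp del: exp_ln)
          moreover have "exp (ln x) \<le> exp (real ?n)" using n1 by (simp del: exp_ln)
          ultimately show ?thesis using True by simp
        qed
        then have "ennreal (f x) \<le> (SUP n. ennreal (f x) * indicator {exp (-real n)..exp (real n)} x)"
          by (intro SUP_upper2[where i="?n"]) auto
        moreover have "(SUP n. ennreal (f x) * indicator {exp (-real n)..exp (real n)} x) \<le> ennreal (f x)"
          by (intro SUP_least) (auto simp: indicator_def)
        ultimately show ?thesis using True by (auto intro: antisym)
      next
        case False
        then have "\<And>n. x \<notin> {exp (-real n)..exp (real n)}"
          by (auto) (metis exp_gt_zero less_le_trans not_le)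
        then show ?thesis using False by simp
      qed
    qed
    moreover have "incseq (\<lambda>n x. ennreal (f x) * indicator {exp (-real n)..exp (real n)} x)"
    proof (intro incseq_SucI le_funI mult_left_mono)
      fix n x
      have "{exp (-real n)..exp (real n)} \<subseteq> {exp (-real (Suc n))..exp (real (Suc n))}"
      proof
        fix y assume y: "y \<in> {exp (-real n)..exp (real n)}"
        have a: "exp (-real (Suc n)) \<le> exp (-real n)" "exp (real n) \<le> exp (real (Suc n))" by auto
        from y have "exp (-real n) \<le> y" "y \<le> exp (real n)" by auto
        with a show "y \<in> {exp (-real (Suc n))..exp (real (Suc n))}" unfolding atLeastAtMost_iff by linarith
      qed
      then show "(indicator {exp (-real n)..exp (real n)} x :: ennreal) \<le> indicator {exp (-real (Suc n))..exp (real (Suc n))} x"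
        by (intro indicator_leI) blast
    qed auto
    ultimately show ?thesis
      by (simp add: nn_integral_monotone_convergence_SUP)
  qed
  have R: "(\<integral>\<^sup>+s. ennreal (f (exp s) * exp s) \<partial>lborel) =
      (SUP n. \<integral>\<^sup>+s. ennreal (f (exp s) * exp s) * indicator {-real n..real n} s \<partial>lborel)"
  proof -
    have "(\<lambda>s. ennreal (f (exp s) * exp s)) =
        (\<lambda>s. SUP n. ennreal (f (exp s) * exp s) * indicator {-real n..real n} s)"
    proof
      fix s
      obtain n :: nat where n: "real n > \<bar>s\<bar>" using reals_Archimedean2 by blast
      have "ennreal (f (exp s) * exp s) \<le> (SUP n. ennreal (f (exp s) * exp s) * indicator {-real n..real n} s)"
      proof (intro SUP_upper2[where i=n])
        have "s \<in> {-real n..real n}" using n by auto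
        then show "ennreal (f (exp s) * exp s) \<le> ennreal (f (exp s) * exp s) * indicator {-real n..real n} s" by simp
      qed auto
      moreover have "(SUP n. ennreal (f (exp s) * exp s) * indicator {-real n..real n} s) \<le> ennreal (f (exp s) * exp s)"
        by (intro SUP_least) (auto simp: indicator_def)
      ultimately show "ennreal (f (exp s) * exp s) = (SUP n. ennreal (f (exp s) * exp s) * indicator {-real n..real n} s)"
        by (auto intro: antisym)
    qed
    moreover have "incseq (\<lambda>n s. ennreal (f (exp s) * exp s) * indicator {-real n..real n} s)"
      by (intro incseq_SucI le_funI mult_left_mono) (auto simp: indicator_def)
    ultimately show ?thesis
      by (simp add: nn_integral_monotone_convergence_SUP)
  qed
  show ?thesis unfolding L R sub ..
qed


lemma G0:
  assumes nu: "\<nu> > 0"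
  shows "(\<integral>\<^sup>+s. ennreal (exp (\<nu> * s - exp s)) \<partial>lborel) = ennreal (Gamma \<nu>)"
proof -
  define f where "f t = (if t > 0 then t powr (\<nu> - 1) / exp t else 0)" for t :: real
  have fm: "f \<in> borel_measurable borel" unfolding f_def by measurable
  have fnn: "f t \<ge> 0" for t unfolding f_def by auto
  have "ennreal (Gamma \<nu>) = (\<integral>\<^sup>+t. ennreal (indicator {0..} t * t powr (\<nu> - 1) / exp t) \<partial>lborel)"
    using Gamma_conv_nn_integral_real[OF nu] by simp
  also have "\<dots> = (\<integral>\<^sup>+t. ennreal (f t) * indicator {0<..} t \<partial>lborel)"
    by (intro nn_integral_cong) (auto simp: f_def indicator_def)
  also have "\<dots> = (\<integral>\<^sup>+s. ennreal (f (exp s) * exp s) \<partial>lborel)"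
    by (rule exp_subst_nn[OF fm fnn])
  also have "\<dots> = (\<integral>\<^sup>+s. ennreal (exp (\<nu> * s - exp s)) \<partial>lborel)"
  proof (intro nn_integral_cong arg_cong[where f=ennreal])
    fix s :: real
    have "f (exp s) * exp s = exp ((\<nu> - 1) * s) / exp (exp s) * exp s"
      by (simp add: f_def powr_def)
    also have "\<dots> = exp ((\<nu> - 1) * s + s - exp s)"
      by (simp add: exp_add exp_diff)
    also have "(\<nu> - 1) * s + s - exp s = \<nu> * s - exp s" by (simp add: algebra_simps)
    finally show "f (exp s) * exp s = exp (\<nu> * s - exp s)" .
  qed
  finally show ?thesis ..
qed

lemma G1:
  assumes nu: "\<nu> > 0" and K: "K > 0"
  shows "(\<integral>\<^sup>+s. ennreal (exp (\<nu> * s - K * exp s)) \<partial>lborel) = ennreal (Gamma \<nu> * K powr (-\<nu>))"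
proof -
  have "(\<integral>\<^sup>+s. ennreal (exp (\<nu> * s - K * exp s)) \<partial>lborel) =
      (\<integral>\<^sup>+s. ennreal (exp (\<nu> * (- ln K + 1 * s) - K * exp (- ln K + 1 * s))) \<partial>lborel)"
    using nn_integral_real_affine[of "\<lambda>s. ennreal (exp (\<nu> * s - K * exp s))" 1 "- ln K"] by simp
  also have "\<dots> = (\<integral>\<^sup>+s. ennreal (K powr (-\<nu>)) * ennreal (exp (\<nu> * s - exp s)) \<partial>lborel)"
  proof -
    have "exp (\<nu> * (- ln K + 1 * s) - K * exp (- ln K + 1 * s)) = K powr (-\<nu>) * exp (\<nu> * s - exp s)" for s
    proof -
      have "K * exp (- ln K + 1 * s) = exp s" using K by (simp add: exp_diff)
      moreover have "K powr (-\<nu>) = exp (-\<nu> * ln K)" using K by (simp add: powr_def)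
      ultimately show ?thesis by (simp add: exp_add[symmetric] algebra_simps)
    qed
    then show ?thesis by (simp add: ennreal_mult)
  qed
  also have "\<dots> = ennreal (K powr (-\<nu>)) * ennreal (Gamma \<nu>)"
    by (subst nn_integral_cmult) (auto simp: G0[OF nu])
  finally show ?thesis using Gamma_real_pos[OF nu] by (simp add: ennreal_mult mult.commute)
qed

lemma G1':
  assumes nu: "\<nu> > 0" and K: "K > 0"
  shows "(\<integral>\<^sup>+s. ennreal (exp (- \<nu> * s - K * exp (- s))) \<partial>lborel) = ennreal (Gamma \<nu> * K powr (-\<nu>))"
proof -
  have "(\<integral>\<^sup>+s. ennreal (exp (- \<nu> * s - K * exp (- s))) \<partial>lborel) =
      (\<integral>\<^sup>+s. ennreal (exp (- \<nu> * (0 + -1 * s) - K * exp (- (0 + -1 * s)))) \<partial>lborel)"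
    using nn_integral_real_affine[of "\<lambda>s. ennreal (exp (- \<nu> * s - K * exp (- s)))" "-1" 0] by simp
  also have "\<dots> = (\<integral>\<^sup>+s. ennreal (exp (\<nu> * s - K * exp s)) \<partial>lborel)" by simp
  finally show ?thesis using G1[OF nu K] by simp
qed


definition Jint :: "real \<Rightarrow> real \<Rightarrow> real \<Rightarrow> ennreal" where
  "Jint \<nu> P Q = (\<integral>\<^sup>+x. ennreal (exp (\<nu> * x - P * exp x - Q * exp (- x))) \<partial>lborel)"

lemma Jrefl:
  assumes P: "P > 0" and Q: "Q > 0"
  shows "Jint \<nu> P Q = ennreal ((Q / P) powr \<nu>) * Jint (- \<nu>) P Q"
proof -
  have "Jint \<nu> P Q = (\<integral>\<^sup>+x. ennreal (exp (\<nu> * (ln (Q/P) + -1 * x) - P * exp (ln (Q/P) + -1 * x) - Q * exp (- (ln (Q/P) + -1 * x)))) \<partial>lborel)"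
    unfolding Jint_def
    using nn_integral_real_affine[of "\<lambda>x. ennreal (exp (\<nu> * x - P * exp x - Q * exp (- x)))" "-1" "ln (Q/P)"] by simp
  also have "\<dots> = (\<integral>\<^sup>+x. ennreal ((Q / P) powr \<nu>) * ennreal (exp (- \<nu> * x - P * exp x - Q * exp (- x))) \<partial>lborel)"
  proof (intro nn_integral_cong)
    fix x :: real
    have e1: "P * exp (ln (Q/P) + -1 * x) = Q * exp (- x)" using P Q by (simp add: exp_diff exp_minus field_simps)
    have e2: "Q * exp (- (ln (Q/P) + -1 * x)) = P * exp x" using P Q by (simp add: exp_add exp_minus exp_diff field_simps)
    have e3: "(Q / P) powr \<nu> = exp (\<nu> * ln (Q/P))" using P Q by (simp add: powr_def)
    have "exp (\<nu> * (ln (Q/P) + -1 * x) - P * exp (ln (Q/P) + -1 * x) - Q * exp (- (ln (Q/P) + -1 * x)))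
        = (Q / P) powr \<nu> * exp (- \<nu> * x - P * exp x - Q * exp (- x))"
      unfolding e1 e2 e3 by (simp add: mult_exp_exp algebra_simps)
    then show "ennreal (exp (\<nu> * (ln (Q/P) + -1 * x) - P * exp (ln (Q/P) + -1 * x) - Q * exp (- (ln (Q/P) + -1 * x))))
        = ennreal ((Q / P) powr \<nu>) * ennreal (exp (- \<nu> * x - P * exp x - Q * exp (- x)))"
      by (simp add: ennreal_mult)
  qed
  also have "\<dots> = ennreal ((Q / P) powr \<nu>) * Jint (- \<nu>) P Q"
    unfolding Jint_def by (subst nn_integral_cmult) auto
  finally show ?thesis .
qed


lemma nn_integral_prod_sep:
  fixes X Y :: "real \<Rightarrow> real"
  assumes [measurable]: "X \<in> borel_measurable borel" "Y \<in> borel_measurable borel"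
    and nn: "\<And>x. X x \<ge> 0"
  shows "(\<integral>\<^sup>+x. (\<integral>\<^sup>+y. ennreal (X x * Y y) \<partial>lborel) \<partial>lborel) =
         (\<integral>\<^sup>+x. ennreal (X x) \<partial>lborel) * (\<integral>\<^sup>+y. ennreal (Y y) \<partial>lborel)"
proof -
  have "(\<integral>\<^sup>+x. (\<integral>\<^sup>+y. ennreal (X x * Y y) \<partial>lborel) \<partial>lborel) =
        (\<integral>\<^sup>+x. ennreal (X x) * (\<integral>\<^sup>+y. ennreal (Y y) \<partial>lborel) \<partial>lborel)"
  proof (intro nn_integral_cong)
    fix x
    have "(\<integral>\<^sup>+y. ennreal (X x * Y y) \<partial>lborel) = (\<integral>\<^sup>+y. ennreal (X x) * ennreal (Y y) \<partial>lborel)"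
      using nn[of x] by (simp add: ennreal_mult')
    also have "\<dots> = ennreal (X x) * (\<integral>\<^sup>+y. ennreal (Y y) \<partial>lborel)"
      by (rule nn_integral_cmult) simp
    finally show "(\<integral>\<^sup>+y. ennreal (X x * Y y) \<partial>lborel) = ennreal (X x) * (\<integral>\<^sup>+y. ennreal (Y y) \<partial>lborel)" .
  qed
  also have "\<dots> = (\<integral>\<^sup>+x. ennreal (X x) \<partial>lborel) * (\<integral>\<^sup>+y. ennreal (Y y) \<partial>lborel)"
    by (rule nn_integral_multc) simp
  finally show ?thesis .
qed

lemma aux6: "a\<ge>0 \<Longrightarrow> b\<ge>0 \<Longrightarrow> c\<ge>0 \<Longrightarrow> d \<ge>0 \<Longrightarrow> e\<ge>0 \<Longrightarrow> g \<ge> 0 \<Longrightarrow>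
  ennreal a * (ennreal b * J) * (ennreal c * ennreal (d * e)) * ennreal g = ennreal (a * b * (c * (d * e)) * g) * J"
  by (simp add: ennreal_mult mult_ac)

lemma BI:
  assumes Bc: "B + c > 0"
  shows "(\<integral>\<^sup>+x. (\<integral>\<^sup>+y. ennreal (exp (-c*(x-y)) * (f_theta B (a - x) * f_theta B (b - y) * exp (- exp (- (x - b))))) \<partial>lborel) \<partial>lborel)
          * ennreal (f_theta (B + c) (x' - a) / Gamma (B + c))
       = (\<integral>\<^sup>+y. ennreal (exp (-c*(x'-y)) * (f_theta B (x' - a) * f_theta B (y - b) * exp (- exp (- (a - y))))) \<partial>lborel)"
proof -
  define P where "P = exp (-a)"
  define Q where "Q = exp b"
  have P: "P > 0" and Q: "Q > 0" unfolding P_def Q_def by auto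
  have G: "Gamma (B + c) > 0" using Bc by (rule Gamma_real_pos)
  have sep: "exp (-c*(x-y)) * (f_theta B (a - x) * f_theta B (b - y) * exp (- exp (- (x - b))))
     = (exp (-B*a) * exp ((B-c)*x - P*exp x - Q * exp (-x))) * (exp (-B*b) * exp ((B+c)*y - exp (-b) * exp y))" for x y
    unfolding P_def Q_def by (simp add: f_theta_def mult_exp_exp algebra_simps)
  have LX: "(\<integral>\<^sup>+x. ennreal (exp (-B*a) * exp ((B-c)*x - P*exp x - Q * exp (-x))) \<partial>lborel)
     = ennreal (exp (-B*a)) * Jint (B - c) P Q"
    unfolding Jint_def by (subst nn_integral_cmult[symmetric]) (auto simp: ennreal_mult)
  have LY: "(\<integral>\<^sup>+y. ennreal (exp (-B*b) * exp ((B+c)*y - exp (-b) * exp y)) \<partial>lborel)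
     = ennreal (exp (-B*b)) * ennreal (Gamma (B + c) * exp (-b) powr (-(B+c)))"
  proof -
    have "(\<integral>\<^sup>+y. ennreal (exp (-B*b) * exp ((B+c)*y - exp (-b) * exp y)) \<partial>lborel)
        = (\<integral>\<^sup>+y. ennreal (exp (-B*b)) * ennreal (exp ((B+c)*y - exp (-b) * exp y)) \<partial>lborel)"
      by (simp add: ennreal_mult)
    also have "\<dots> = ennreal (exp (-B*b)) * (\<integral>\<^sup>+y. ennreal (exp ((B+c)*y - exp (-b) * exp y)) \<partial>lborel)"
      by (rule nn_integral_cmult) simp
    also have "\<dots> = ennreal (exp (-B*b)) * ennreal (Gamma (B + c) * exp (-b) powr (-(B+c)))"
      using G1[OF Bc, of "exp (-b)"] by simp
    finally show ?thesis .
  qed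
  have L: "(\<integral>\<^sup>+x. (\<integral>\<^sup>+y. ennreal (exp (-c*(x-y)) * (f_theta B (a - x) * f_theta B (b - y) * exp (- exp (- (x - b))))) \<partial>lborel) \<partial>lborel)
      = ennreal (exp (-B*a)) * Jint (B - c) P Q * (ennreal (exp (-B*b)) * ennreal (Gamma (B + c) * exp (-b) powr (-(B+c))))"
  proof -
    have L0: "(\<integral>\<^sup>+x. (\<integral>\<^sup>+y. ennreal ((exp (-B*a) * exp ((B-c)*x - P*exp x - Q * exp (-x))) * (exp (-B*b) * exp ((B+c)*y - exp (-b) * exp y))) \<partial>lborel) \<partial>lborel)
      = (\<integral>\<^sup>+x. ennreal (exp (-B*a) * exp ((B-c)*x - P*exp x - Q * exp (-x))) \<partial>lborel) * (\<integral>\<^sup>+y. ennreal (exp (-B*b) * exp ((B+c)*y - exp (-b) * exp y)) \<partial>lborel)"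
      by (rule nn_integral_prod_sep) auto
    show ?thesis unfolding sep L0 LX LY ..
  qed
  have sepR: "exp (-c*(x'-y)) * (f_theta B (x' - a) * f_theta B (y - b) * exp (- exp (- (a - y))))
     = (exp (-c*x') * f_theta B (x' - a) * exp (B * b)) * exp ((c - B)*y - P*exp y - Q * exp (-y))" for y
    unfolding P_def Q_def by (simp add: f_theta_def mult_exp_exp algebra_simps)
  have R: "(\<integral>\<^sup>+y. ennreal (exp (-c*(x'-y)) * (f_theta B (x' - a) * f_theta B (y - b) * exp (- exp (- (a - y))))) \<partial>lborel)
     = ennreal (exp (-c*x') * f_theta B (x' - a) * exp (B * b)) * Jint (c - B) P Q"
    unfolding sepR Jint_def by (subst nn_integral_cmult[symmetric]) (auto simp: ennreal_mult f_theta_def)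
  have JJ: "Jint (B - c) P Q = ennreal ((Q / P) powr (B - c)) * Jint (c - B) P Q"
    using Jrefl[OF P Q, of "B - c"] by simp
  have QP: "Q / P = exp (a + b)" unfolding P_def Q_def by (simp add: exp_add exp_minus field_simps)
  have eb: "exp (-b) powr (-(B+c)) = exp ((B + c) * b)" by (simp add: powr_def algebra_simps)
  have real_eq: "exp (-B*a) * exp ((a+b) * (B - c)) * (exp (-B*b) * (Gamma (B + c) * exp ((B + c) * b))) * (f_theta (B + c) (x' - a) / Gamma (B + c))
      = exp (-c*x') * f_theta B (x' - a) * exp (B * b)"
    using G by (simp add: f_theta_def mult_exp_exp algebra_simps)
  have pw: "exp (a + b) powr (B - c) = exp ((a+b) * (B - c))" by (simp add: powr_def mult.commute)
  have nn1: "f_theta (B + c) (x' - a) / Gamma (B + c) \<ge> 0" using G by (simp add: f_theta_def)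
  have "ennreal (exp (-B*a)) * (ennreal (exp ((a+b) * (B - c))) * Jint (c - B) P Q) * (ennreal (exp (-B*b)) * ennreal (Gamma (B + c) * exp ((B + c) * b)))
          * ennreal (f_theta (B + c) (x' - a) / Gamma (B + c))
      = ennreal (exp (-B*a) * exp ((a+b) * (B - c)) * (exp (-B*b) * (Gamma (B + c) * exp ((B + c) * b))) * (f_theta (B + c) (x' - a) / Gamma (B + c))) * Jint (c - B) P Q"
    using G nn1 aux6[of "exp (-B*a)" "exp ((a+b) * (B - c))" "exp (-B*b)" "Gamma (B + c)" "exp ((B + c) * b)" "f_theta (B + c) (x' - a) / Gamma (B + c)" "Jint (c - B) P Q"]
    by simp
  also have "\<dots> = ennreal (exp (-c*x') * f_theta B (x' - a) * exp (B * b)) * Jint (c - B) P Q"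
    unfolding real_eq ..
  finally show ?thesis
    unfolding L R JJ QP eb pw .

qed


lemma aux7: "a\<ge>0 \<Longrightarrow> b\<ge>0 \<Longrightarrow> c\<ge>0 \<Longrightarrow> d \<ge>0 \<Longrightarrow> e\<ge>0 \<Longrightarrow> g \<ge> 0 \<Longrightarrow>
  ennreal a * (ennreal b * J) * (ennreal c * ennreal (d * e)) * ennreal g = ennreal (a * b * (c * (d * e)) * g) * J"
  by (simp add: ennreal_mult mult_ac)

lemma CI:
  assumes AB: "A + B > 0"
  shows "(\<integral>\<^sup>+x. (\<integral>\<^sup>+y. ennreal (f_theta A (a - x) * f_theta A (b - y) * exp (- exp (- (x - b))) *
              (f_theta B (c - x) * f_theta B (d - y) * exp (- exp (- (x - d))))) \<partial>lborel) \<partial>lborel)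
          * ennreal (f_theta (A + B) (x' - ln (exp a + exp c)) / Gamma (A + B))
       = (\<integral>\<^sup>+y. ennreal (f_theta B (x' - a) * f_theta B (y - b) * exp (- exp (- (a - y))) *
              (f_theta A (x' - c) * f_theta A (y - d) * exp (- exp (- (c - y))))) \<partial>lborel)"
proof -
  define P where "P = exp (-a) + exp (-c)"
  define Q where "Q = exp b + exp d"
  define S where "S = exp (-b) + exp (-d)"
  have P: "P > 0" and Q: "Q > 0" and S: "S > 0" unfolding P_def Q_def S_def by (auto intro: add_pos_pos)
  have G: "Gamma (A + B) > 0" using AB by (rule Gamma_real_pos)
  have sep: "f_theta A (a - x) * f_theta A (b - y) * exp (- exp (- (x - b))) *
              (f_theta B (c - x) * f_theta B (d - y) * exp (- exp (- (x - d))))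
     = (exp (-A*a - B*c) * exp ((A+B)*x - P*exp x - Q * exp (-x))) * (exp (-A*b - B*d) * exp ((A+B)*y - S * exp y))" for x y
    unfolding P_def Q_def S_def by (simp add: f_theta_def mult_exp_exp algebra_simps)
  have LX: "(\<integral>\<^sup>+x. ennreal (exp (-A*a - B*c) * exp ((A+B)*x - P*exp x - Q * exp (-x))) \<partial>lborel)
     = ennreal (exp (-A*a - B*c)) * Jint (A + B) P Q"
    unfolding Jint_def by (subst nn_integral_cmult[symmetric]) (auto simp: ennreal_mult)
  have LY: "(\<integral>\<^sup>+y. ennreal (exp (-A*b - B*d) * exp ((A+B)*y - S * exp y)) \<partial>lborel)
     = ennreal (exp (-A*b - B*d)) * ennreal (Gamma (A + B) * S powr (-(A+B)))"
  proof -
    have "(\<integral>\<^sup>+y. ennreal (exp (-A*b - B*d) * exp ((A+B)*y - S * exp y)) \<partial>lborel)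
        = (\<integral>\<^sup>+y. ennreal (exp (-A*b - B*d)) * ennreal (exp ((A+B)*y - S * exp y)) \<partial>lborel)"
      by (simp add: ennreal_mult)
    also have "\<dots> = ennreal (exp (-A*b - B*d)) * (\<integral>\<^sup>+y. ennreal (exp ((A+B)*y - S * exp y)) \<partial>lborel)"
      by (rule nn_integral_cmult) simp
    also have "\<dots> = ennreal (exp (-A*b - B*d)) * ennreal (Gamma (A + B) * S powr (-(A+B)))"
      using G1[OF AB S] by simp
    finally show ?thesis .
  qed
  have L: "(\<integral>\<^sup>+x. (\<integral>\<^sup>+y. ennreal (f_theta A (a - x) * f_theta A (b - y) * exp (- exp (- (x - b))) *
              (f_theta B (c - x) * f_theta B (d - y) * exp (- exp (- (x - d))))) \<partial>lborel) \<partial>lborel)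
      = ennreal (exp (-A*a - B*c)) * Jint (A + B) P Q * (ennreal (exp (-A*b - B*d)) * ennreal (Gamma (A + B) * S powr (-(A+B))))"
  proof -
    have L0: "(\<integral>\<^sup>+x. (\<integral>\<^sup>+y. ennreal ((exp (-A*a - B*c) * exp ((A+B)*x - P*exp x - Q * exp (-x))) * (exp (-A*b - B*d) * exp ((A+B)*y - S * exp y))) \<partial>lborel) \<partial>lborel)
      = (\<integral>\<^sup>+x. ennreal (exp (-A*a - B*c) * exp ((A+B)*x - P*exp x - Q * exp (-x))) \<partial>lborel) * (\<integral>\<^sup>+y. ennreal (exp (-A*b - B*d) * exp ((A+B)*y - S * exp y)) \<partial>lborel)"
      by (rule nn_integral_prod_sep) auto
    show ?thesis unfolding sep L0 LX LY ..
  qed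
  have sepR: "f_theta B (x' - a) * f_theta B (y - b) * exp (- exp (- (a - y))) *
              (f_theta A (x' - c) * f_theta A (y - d) * exp (- exp (- (c - y))))
     = (f_theta B (x' - a) * f_theta A (x' - c) * exp (B * b + A * d)) * exp (- (A + B)*y - P*exp y - Q * exp (-y))" for y
    unfolding P_def Q_def by (simp add: f_theta_def mult_exp_exp algebra_simps)
  have R: "(\<integral>\<^sup>+y. ennreal (f_theta B (x' - a) * f_theta B (y - b) * exp (- exp (- (a - y))) *
              (f_theta A (x' - c) * f_theta A (y - d) * exp (- exp (- (c - y))))) \<partial>lborel)
     = ennreal (f_theta B (x' - a) * f_theta A (x' - c) * exp (B * b + A * d)) * Jint (- (A + B)) P Q"
    unfolding sepR Jint_def by (subst nn_integral_cmult[symmetric]) (auto simp: ennreal_mult f_theta_def)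
  have JJ: "Jint (A + B) P Q = ennreal ((Q / P) powr (A + B)) * Jint (- (A + B)) P Q"
    using Jrefl[OF P Q, of "A + B"] by simp
  have lQ: "ln Q = b + d + ln S"
  proof -
    have "Q = exp (b + d) * S" unfolding Q_def S_def by (simp add: exp_add exp_minus field_simps)
    then show ?thesis using S by (simp add: ln_mult)
  qed
  have lac: "ln (exp a + exp c) = a + c + ln P"
  proof -
    have "exp a + exp c = exp (a + c) * P" unfolding P_def by (simp add: exp_add exp_minus field_simps)
    then show ?thesis using P by (simp add: ln_mult)
  qed
  have eac: "exp (- (x' - ln (exp a + exp c))) = exp (a - x') + exp (c - x')"
    by (simp add: exp_diff exp_minus field_simps add_pos_pos)
  have pw1: "(Q / P) powr (A + B) = exp ((A + B) * (b + d + ln S - ln P))"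
    using P Q by (simp add: powr_def ln_div lQ mult.commute)
  have pw2: "S powr (-(A+B)) = exp (- (A + B) * ln S)"
    using S by (simp add: powr_def mult.commute)
  have fnu: "f_theta (A + B) (x' - ln (exp a + exp c)) = exp (- (A + B) * (x' - (a + c + ln P)) - (exp (a - x') + exp (c - x')))"
    unfolding f_theta_def eac unfolding lac ..
  have real_eq: "exp (-A*a - B*c) * exp ((A + B) * (b + d + ln S - ln P)) * (exp (-A*b - B*d) * (Gamma (A + B) * exp (- (A + B) * ln S)))
        * (exp (- (A + B) * (x' - (a + c + ln P)) - (exp (a - x') + exp (c - x'))) / Gamma (A + B))
      = f_theta B (x' - a) * f_theta A (x' - c) * exp (B * b + A * d)"
    using G by (simp add: f_theta_def mult_exp_exp algebra_simps)
  have nn1: "f_theta (A + B) (x' - ln (exp a + exp c)) / Gamma (A + B) \<ge> 0" using G by (simp add: f_theta_def)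
  have "ennreal (exp (-A*a - B*c)) * (ennreal ((Q / P) powr (A + B)) * Jint (- (A + B)) P Q) * (ennreal (exp (-A*b - B*d)) * ennreal (Gamma (A + B) * S powr (-(A+B))))
          * ennreal (f_theta (A + B) (x' - ln (exp a + exp c)) / Gamma (A + B))
      = ennreal (exp (-A*a - B*c) * (Q / P) powr (A + B) * (exp (-A*b - B*d) * (Gamma (A + B) * S powr (-(A+B)))) * (f_theta (A + B) (x' - ln (exp a + exp c)) / Gamma (A + B))) * Jint (- (A + B)) P Q"
    using G nn1 aux7[of "exp (-A*a - B*c)" "(Q / P) powr (A + B)" "exp (-A*b - B*d)" "Gamma (A + B)" "S powr (-(A+B))" "f_theta (A + B) (x' - ln (exp a + exp c)) / Gamma (A + B)" "Jint (- (A + B)) P Q"]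
    by simp
  also have "\<dots> = ennreal (f_theta B (x' - a) * f_theta A (x' - c) * exp (B * b + A * d)) * Jint (- (A + B)) P Q"
    unfolding pw1 pw2 fnu real_eq ..
  finally show ?thesis
    unfolding L R JJ .
qed


lemma distr_exp_density:
  "distr (density lborel (\<lambda>s. ennreal (exp s))) borel exp = density lborel (indicator {0<..})"
proof (rule measure_eqI)
  show "sets (distr (density lborel (\<lambda>s. ennreal (exp s))) borel exp) = sets (density lborel (indicator {0<..}))"
    by simp
  fix A assume A: "A \<in> sets (distr (density lborel (\<lambda>s. ennreal (exp s))) borel exp)"
  then have A': "A \<in> sets borel" by simp
  have em: "(exp::real\<Rightarrow>real) \<in> borel_measurable borel" by (intro borel_measurable_continuous_onI continuous_intros)
  have ea: "exp -` A \<in> sets borel" using measurable_sets_borel[OF em A'] .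
  have "emeasure (distr (density lborel (\<lambda>s. ennreal (exp s))) borel exp) A
      = emeasure (density lborel (\<lambda>s. ennreal (exp s))) (exp -` A)"
    using A' by (subst emeasure_distr) auto
  also have "\<dots> = (\<integral>\<^sup>+s. ennreal (exp s) * indicator (exp -` A) s \<partial>lborel)"
    using A' ea by (subst emeasure_density) (auto simp: nn_integral_set_ennreal)
  also have "\<dots> = (\<integral>\<^sup>+s. ennreal (indicator A (exp s) * exp s) \<partial>lborel)"
    by (intro nn_integral_cong) (auto simp: indicator_def)
  also have "\<dots> = (\<integral>\<^sup>+x. ennreal (indicator A x) * indicator {0<..} x \<partial>lborel)"
    using A' by (subst exp_subst_nn) auto
  also have "\<dots> = emeasure (density lborel (indicator {0<..})) A"
    using A' by (subst emeasure_density) (auto intro!: nn_integral_cong simp: indicator_def)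
  finally show "emeasure (distr (density lborel (\<lambda>s. ennreal (exp s))) borel exp) A = emeasure (density lborel (indicator {0<..})) A" .
qed

lemma exp_subst_ennreal:
  assumes [measurable]: "H \<in> borel_measurable borel"
  shows "(\<integral>\<^sup>+x. indicator {0<..} x * H x \<partial>lborel) = (\<integral>\<^sup>+s. ennreal (exp s) * H (exp s) \<partial>lborel)"
proof -
  have "(\<integral>\<^sup>+x. indicator {0<..} x * H x \<partial>lborel) = (\<integral>\<^sup>+x. H x \<partial>density lborel (indicator {0<..}))"
    by (subst nn_integral_density) auto
  also have "\<dots> = (\<integral>\<^sup>+x. H x \<partial>distr (density lborel (\<lambda>s. ennreal (exp s))) borel exp)"
    unfolding distr_exp_density ..
  also have "\<dots> = (\<integral>\<^sup>+s. H (exp s) \<partial>density lborel (\<lambda>s. ennreal (exp s)))"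
    by (subst nn_integral_distr) auto
  also have "\<dots> = (\<integral>\<^sup>+s. ennreal (exp s) * H (exp s) \<partial>lborel)"
    by (subst nn_integral_density) auto
  finally show ?thesis .
qed

lemma inv_gamma_log:
  assumes th: "\<theta> > 0" and [measurable]: "H \<in> borel_measurable borel"
  shows "(\<integral>\<^sup>+x. H x \<partial>inv_gamma \<theta>) = (\<integral>\<^sup>+s. ennreal (f_theta \<theta> s / Gamma \<theta>) * H (exp s) \<partial>lborel)"
proof -
  have G: "Gamma \<theta> > 0" using th by (rule Gamma_real_pos)
  have dm: "(\<lambda>x. ennreal (inv_gamma_density \<theta> x)) \<in> borel_measurable borel"
    unfolding inv_gamma_density_def by measurable
  have "(\<integral>\<^sup>+x. H x \<partial>inv_gamma \<theta>) = (\<integral>\<^sup>+x. ennreal (inv_gamma_density \<theta> x) * H x \<partial>lborel)"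
    unfolding inv_gamma_def using dm by (subst nn_integral_density) auto
  also have "\<dots> = (\<integral>\<^sup>+x. indicator {0<..} x * (ennreal (x powr (-\<theta> - 1) * exp (- 1 / x) / Gamma \<theta>) * H x) \<partial>lborel)"
    by (intro nn_integral_cong) (auto simp: inv_gamma_density_def indicator_def)
  also have "\<dots> = (\<integral>\<^sup>+s. ennreal (exp s) * (ennreal (exp s powr (-\<theta> - 1) * exp (- 1 / exp s) / Gamma \<theta>) * H (exp s)) \<partial>lborel)"
    by (rule exp_subst_ennreal) measurable
  also have "\<dots> = (\<integral>\<^sup>+s. ennreal (f_theta \<theta> s / Gamma \<theta>) * H (exp s) \<partial>lborel)"
  proof (intro nn_integral_cong)
    fix s :: real
    have "exp s * (exp s powr (-\<theta> - 1) * exp (- 1 / exp s) / Gamma \<theta>) = f_theta \<theta> s / Gamma \<theta>"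
      using G by (simp add: powr_def f_theta_def mult_exp_exp exp_minus field_simps)
    then show "ennreal (exp s) * (ennreal (exp s powr (-\<theta> - 1) * exp (- 1 / exp s) / Gamma \<theta>) * H (exp s)) = ennreal (f_theta \<theta> s / Gamma \<theta>) * H (exp s)"
      using G by (simp add: ennreal_mult[symmetric] mult.assoc[symmetric])
  qed
  finally show ?thesis .
qed

lemma prob_inv_gamma:
  assumes th: "\<theta> > 0" shows "prob_space (inv_gamma \<theta>)"
proof
  have G: "Gamma \<theta> > 0" using th by (rule Gamma_real_pos)
  have "emeasure (inv_gamma \<theta>) (space (inv_gamma \<theta>)) = (\<integral>\<^sup>+x. 1 \<partial>inv_gamma \<theta>)"
    by simp
  also have "\<dots> = (\<integral>\<^sup>+s. ennreal (f_theta \<theta> s / Gamma \<theta>) \<partial>lborel)"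
    using inv_gamma_log[OF th, of "\<lambda>_. 1"] by simp
  also have "\<dots> = (\<integral>\<^sup>+s. ennreal (1 / Gamma \<theta>) * ennreal (exp (- \<theta> * s - 1 * exp (- s))) \<partial>lborel)"
    using G by (intro nn_integral_cong) (simp add: f_theta_def ennreal_mult[symmetric])
  also have "\<dots> = ennreal (1 / Gamma \<theta>) * ennreal (Gamma \<theta> * 1 powr (-\<theta>))"
    using G1'[OF th zero_less_one] by (subst nn_integral_cmult) auto
  also have "\<dots> = 1" using G by (simp add: ennreal_mult[symmetric])
  finally show "emeasure (inv_gamma \<theta>) (space (inv_gamma \<theta>)) = 1" .
qed


lemma meas_upd:
  assumes f: "f \<in> measurable M (PiM K N')" and g: "g \<in> measurable M (N' j)"
  shows "(\<lambda>x. (f x)(j := g x)) \<in> measurable M (PiM (insert j K) N')"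
proof -
  have "(\<lambda>x. (f x)(j := g x)) = (\<lambda>x i. if i = j then g x else f x i)"
    by (auto simp: fun_eq_iff)
  moreover have "(\<lambda>x i. if i = j then g x else f x i) \<in> measurable M (PiM (insert j K) N')"
  proof (rule measurable_PiM_single'[where f = "\<lambda>i x. if i = j then g x else f x i"])
    fix i assume i: "i \<in> insert j K"
    show "(\<lambda>x. if i = j then g x else f x i) \<in> measurable M (N' i)"
    proof (cases "i = j")
      case True then show ?thesis using g by simp
    next
      case False then have "i \<in> K" using i by auto
      then show ?thesis using False measurable_component_singleton'[OF f measurable_ident_sets[OF refl], of i] by simp
    qed
  next
    show "(\<lambda>x i. if i = j then g x else f x i) \<in> space M \<rightarrow> (\<Pi>\<^sub>E i\<in>insert j K. space (N' i))"
      using measurable_space[OF f] measurable_space[OF g]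
      by (auto simp: space_PiM PiE_iff extensional_def)
  qed
  ultimately show ?thesis by simp
qed

abbreviation LB :: "nat \<Rightarrow> (nat \<Rightarrow> real) measure" where
  "LB N \<equiv> PiM {..N} (\<lambda>_. lborel)"

lemma sf_LB: "sigma_finite_measure (PiM K (\<lambda>_. lborel :: real measure))" if "finite K"
proof -
  interpret finite_product_sigma_finite "\<lambda>_. lborel :: real measure" K
    using that by unfold_locales
  show ?thesis by (rule sigma_finite_measure_axioms)
qed

lemma psf_lborel: "product_sigma_finite (\<lambda>_. lborel :: real measure)"
  by unfold_locales


lemma local_move:
  fixes W W' :: "(nat \<Rightarrow> real) \<Rightarrow> (nat \<Rightarrow> real) \<Rightarrow> real" and \<rho> :: "real \<Rightarrow> real"
    and Lf :: "(nat \<Rightarrow> real) \<Rightarrow> real" and F :: "(nat \<Rightarrow> real) \<Rightarrow> ennreal"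
  assumes j: "j \<le> N"
    and Wm: "(\<lambda>p. W (fst p) (snd p)) \<in> borel_measurable (LB N \<Otimes>\<^sub>M LB N)"
    and W'm: "(\<lambda>p. W' (fst p) (snd p)) \<in> borel_measurable (LB N \<Otimes>\<^sub>M LB N)"
    and \<rho>m[measurable]: "\<rho> \<in> borel_measurable borel"
    and Lm[measurable]: "Lf \<in> borel_measurable (LB N)"
    and Lj: "\<And>l x. Lf (l(j:=x)) = Lf l"
    and Fm[measurable]: "F \<in> borel_measurable (LB N)"
    and key: "\<And>l m x'. (\<integral>\<^sup>+x. (\<integral>\<^sup>+y. ennreal (W (l(j:=x)) (m(j:=y))) \<partial>lborel) \<partial>lborel) * ennreal (\<rho> (x' - Lf l))
                 = (\<integral>\<^sup>+y. ennreal (W' (l(j:=x')) (m(j:=y))) \<partial>lborel)"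
  shows "(\<integral>\<^sup>+l. (\<integral>\<^sup>+m. ennreal (W l m) \<partial>LB N) * (\<integral>\<^sup>+g. ennreal (\<rho> g) * F (l(j := Lf l + g)) \<partial>lborel) \<partial>LB N)
       = (\<integral>\<^sup>+l. F l * (\<integral>\<^sup>+m. ennreal (W' l m) \<partial>LB N) \<partial>LB N)"
proof -
  define I where "I = {..N} - {j}"
  let ?PI = "PiM I (\<lambda>_. lborel :: real measure)"
  have II: "{..N} = insert j I" "j \<notin> I" "finite I" using j by (auto simp: I_def)
  interpret P: product_sigma_finite "\<lambda>_. lborel :: real measure" by (rule psf_lborel)
  interpret SI: sigma_finite_measure "?PI" using II by (intro sf_LB) auto
  interpret SN: sigma_finite_measure "LB N" by (intro sf_LB) auto
  interpret PI: pair_sigma_finite lborel "?PI" ..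
  have upd[measurable]: "(\<lambda>x. (f x)(j := g x)) \<in> measurable M (LB N)"
    if "f \<in> measurable M (?PI)" "g \<in> borel_measurable M" for M f g
  proof -
    have g': "g \<in> measurable M lborel" using that(2) by simp
    show ?thesis using meas_upd[OF that(1) g'] II(1) by simp
  qed
  have upd2[measurable]: "(\<lambda>x. (f x)(j := g x)) \<in> measurable M (LB N)"
    if "f \<in> measurable M (LB N)" "g \<in> borel_measurable M" for M f g
  proof -
    have "insert j {..N} = {..N}" using j by auto
    moreover have g': "g \<in> measurable M lborel" using that(2) by simp
    ultimately show ?thesis using meas_upd[OF that(1) g', of j] by simp
  qed
  have Wc[measurable]: "(\<lambda>x. W (f x) (g x)) \<in> borel_measurable M"
    if "f \<in> measurable M (LB N)" "g \<in> measurable M (LB N)" for M f g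
    using measurable_compose[OF measurable_Pair[OF that] Wm] by simp
  have W'c[measurable]: "(\<lambda>x. W' (f x) (g x)) \<in> borel_measurable M"
    if "f \<in> measurable M (LB N)" "g \<in> measurable M (LB N)" for M f g
    using measurable_compose[OF measurable_Pair[OF that] W'm] by simp
  define \<Phi> where "\<Phi> l = (\<integral>\<^sup>+g. ennreal (\<rho> g) * F (l(j := Lf l + g)) \<partial>lborel)" for l
  define K where "K l m = (\<integral>\<^sup>+x. (\<integral>\<^sup>+y. ennreal (W (l(j:=x)) (m(j:=y))) \<partial>lborel) \<partial>lborel)" for l m
  have Phi_upd: "\<Phi> (l(j:=x)) = \<Phi> l" for l x
    unfolding \<Phi>_def Lj by simp
  have Phi_tr: "\<Phi> l = (\<integral>\<^sup>+x'. ennreal (\<rho> (x' - Lf l)) * F (l(j := x')) \<partial>lborel)"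
    if l: "l \<in> space (?PI)" for l
  proof -
    have [measurable]: "(\<lambda>x'. F (l(j := x'))) \<in> borel_measurable borel"
      using l by measurable
    show ?thesis unfolding \<Phi>_def
      using nn_integral_real_affine[of "\<lambda>x'. ennreal (\<rho> (x' - Lf l)) * F (l(j := x'))" 1 "Lf l"]
      by simp
  qed
  have LBI: "LB N = PiM (insert j I) (\<lambda>_. lborel)" using II by simp
  have ins: "integral\<^sup>N (LB N) f = (\<integral>\<^sup>+x. (\<integral>\<^sup>+y. f (x(j := y)) \<partial>lborel) \<partial>?PI)"
    if f: "f \<in> borel_measurable (LB N)" for f
  proof -
    have "f \<in> borel_measurable (PiM (insert j I) (\<lambda>_. lborel))" using f LBI by simp
    from P.product_nn_integral_insert[OF II(3) II(2) this] show ?thesis using LBI by simp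
  qed
  have Km[measurable]: "(\<lambda>m. K l m) \<in> borel_measurable (?PI)"
    if l: "l \<in> space (?PI)" for l
    unfolding K_def using l by measurable
  have Wx_int: "(\<integral>\<^sup>+m. ennreal (W l' m) \<partial>LB N) = (\<integral>\<^sup>+m. (\<integral>\<^sup>+y. ennreal (W l' (m(j:=y))) \<partial>lborel) \<partial>?PI)"
    if l': "l' \<in> space (LB N)" for l'
    using l' by (subst ins) auto
  have W'x_int: "(\<integral>\<^sup>+m. ennreal (W' l' m) \<partial>LB N) = (\<integral>\<^sup>+m. (\<integral>\<^sup>+y. ennreal (W' l' (m(j:=y))) \<partial>lborel) \<partial>?PI)"
    if l': "l' \<in> space (LB N)" for l'
    using l' by (subst ins) auto
  have lupd_space: "l(j:=x) \<in> space (LB N)" if "l \<in> space (?PI)" for l x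
    using that II by (auto simp: space_PiM PiE_iff extensional_def)
  have LHS: "(\<integral>\<^sup>+l. (\<integral>\<^sup>+m. ennreal (W l m) \<partial>LB N) * \<Phi> l \<partial>LB N)
      = (\<integral>\<^sup>+l. (\<integral>\<^sup>+m. K l m \<partial>?PI) * \<Phi> l \<partial>?PI)"
  proof -
    have "(\<integral>\<^sup>+l. (\<integral>\<^sup>+m. ennreal (W l m) \<partial>LB N) * \<Phi> l \<partial>LB N)
      = (\<integral>\<^sup>+l. (\<integral>\<^sup>+x. (\<integral>\<^sup>+m. ennreal (W (l(j:=x)) m) \<partial>LB N) * \<Phi> (l(j:=x)) \<partial>lborel) \<partial>?PI)"
      unfolding \<Phi>_def by (subst ins) auto
    also have "\<dots> = (\<integral>\<^sup>+l. (\<integral>\<^sup>+m. K l m \<partial>?PI) * \<Phi> l \<partial>?PI)"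
    proof (intro nn_integral_cong)
      fix l assume l: "l \<in> space (?PI)"
      have "(\<integral>\<^sup>+x. (\<integral>\<^sup>+m. ennreal (W (l(j:=x)) m) \<partial>LB N) * \<Phi> (l(j:=x)) \<partial>lborel)
          = (\<integral>\<^sup>+x. (\<integral>\<^sup>+m. ennreal (W (l(j:=x)) m) \<partial>LB N) \<partial>lborel) * \<Phi> l"
        unfolding Phi_upd using l by (intro nn_integral_multc) measurable
      also have "(\<integral>\<^sup>+x. (\<integral>\<^sup>+m. ennreal (W (l(j:=x)) m) \<partial>LB N) \<partial>lborel)
          = (\<integral>\<^sup>+x. (\<integral>\<^sup>+m. (\<integral>\<^sup>+y. ennreal (W (l(j:=x)) (m(j:=y))) \<partial>lborel) \<partial>?PI) \<partial>lborel)"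
        using l by (intro nn_integral_cong Wx_int lupd_space)
      also have "\<dots> = (\<integral>\<^sup>+m. K l m \<partial>?PI)"
        unfolding K_def using l by (intro PI.Fubini'[symmetric]) measurable
      finally show "(\<integral>\<^sup>+x. (\<integral>\<^sup>+m. ennreal (W (l(j:=x)) m) \<partial>LB N) * \<Phi> (l(j:=x)) \<partial>lborel)
          = (\<integral>\<^sup>+m. K l m \<partial>?PI) * \<Phi> l" .
    qed
    finally show ?thesis .
  qed
  have RHS: "(\<integral>\<^sup>+l. F l * (\<integral>\<^sup>+m. ennreal (W' l m) \<partial>LB N) \<partial>LB N)
      = (\<integral>\<^sup>+l. (\<integral>\<^sup>+m. K l m \<partial>?PI) * \<Phi> l \<partial>?PI)"
  proof -
    have "(\<integral>\<^sup>+l. F l * (\<integral>\<^sup>+m. ennreal (W' l m) \<partial>LB N) \<partial>LB N)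
      = (\<integral>\<^sup>+l. (\<integral>\<^sup>+x. F (l(j:=x)) * (\<integral>\<^sup>+m. ennreal (W' (l(j:=x)) m) \<partial>LB N) \<partial>lborel) \<partial>?PI)"
      by (subst ins) auto
    also have "\<dots> = (\<integral>\<^sup>+l. (\<integral>\<^sup>+m. K l m \<partial>?PI) * \<Phi> l \<partial>?PI)"
    proof (intro nn_integral_cong)
      fix l assume l: "l \<in> space (?PI)"
      have "(\<integral>\<^sup>+x. F (l(j:=x)) * (\<integral>\<^sup>+m. ennreal (W' (l(j:=x)) m) \<partial>LB N) \<partial>lborel)
          = (\<integral>\<^sup>+x. F (l(j:=x)) * ((\<integral>\<^sup>+m. K l m \<partial>?PI) * ennreal (\<rho> (x - Lf l))) \<partial>lborel)"
      proof (intro nn_integral_cong arg_cong2[where f="(*)"] refl)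
        fix x
        have "(\<integral>\<^sup>+m. ennreal (W' (l(j:=x)) m) \<partial>LB N)
            = (\<integral>\<^sup>+m. (\<integral>\<^sup>+y. ennreal (W' (l(j:=x)) (m(j:=y))) \<partial>lborel) \<partial>?PI)"
          using l by (intro W'x_int lupd_space)
        also have "\<dots> = (\<integral>\<^sup>+m. K l m * ennreal (\<rho> (x - Lf l)) \<partial>?PI)"
          unfolding K_def key ..
        also have "\<dots> = (\<integral>\<^sup>+m. K l m \<partial>?PI) * ennreal (\<rho> (x - Lf l))"
          using l by (intro nn_integral_multc) measurable
        finally show "(\<integral>\<^sup>+m. ennreal (W' (l(j:=x)) m) \<partial>LB N) = (\<integral>\<^sup>+m. K l m \<partial>?PI) * ennreal (\<rho> (x - Lf l))" .
      qed
      also have "\<dots> = (\<integral>\<^sup>+x. (\<integral>\<^sup>+m. K l m \<partial>?PI) * (ennreal (\<rho> (x - Lf l)) * F (l(j:=x))) \<partial>lborel)"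
        by (simp add: mult_ac)
      also have "\<dots> = (\<integral>\<^sup>+m. K l m \<partial>?PI) * (\<integral>\<^sup>+x. ennreal (\<rho> (x - Lf l)) * F (l(j:=x)) \<partial>lborel)"
        using l by (intro nn_integral_cmult) measurable
      also have "\<dots> = (\<integral>\<^sup>+m. K l m \<partial>?PI) * \<Phi> l"
        using Phi_tr[OF l] by simp
      finally show "(\<integral>\<^sup>+x. F (l(j:=x)) * (\<integral>\<^sup>+m. ennreal (W' (l(j:=x)) m) \<partial>LB N) \<partial>lborel)
          = (\<integral>\<^sup>+m. K l m \<partial>?PI) * \<Phi> l" .
    qed
    finally show ?thesis .
  qed
  show ?thesis using LHS RHS unfolding \<Phi>_def by simp
qed


lemma drp_fst:
  assumes "down_right_path N r" "j \<le> N"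
  shows "fst (r j) = snd (r j) + j"
  using assms(2)
proof (induction j)
  case 0 then show ?case using assms(1) by (simp add: down_right_path_def)
next
  case (Suc j)
  then have "Suc j \<in> {1..N}" by auto
  with assms(1) have "r (Suc j) = (fst (r j) + 1, snd (r j)) \<or> (snd (r j) \<ge> 1 \<and> r (Suc j) = (fst (r j), snd (r j) - 1))"
    unfolding down_right_path_def by (metis diff_Suc_1)
  with Suc show ?case by auto
qed

lemma drp_pair:
  assumes "down_right_path N r" "j \<le> N"
  shows "r j = (snd (r j) + j, snd (r j))"
  using drp_fst[OF assms] by (metis prod.collapse)

lemma drp_step:
  assumes "down_right_path N r" "1 \<le> j" "j \<le> N"
  shows "(snd (r j) = snd (r (j-1)) \<and> horizontal r j) \<or> (snd (r j) + 1 = snd (r (j-1)) \<and> \<not> horizontal r j)"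
proof -
  have "r j = (fst (r (j-1)) + 1, snd (r (j-1))) \<or> (snd (r (j-1)) \<ge> 1 \<and> r j = (fst (r (j-1)), snd (r (j-1)) - 1))"
    using assms unfolding down_right_path_def by auto
  then show ?thesis unfolding horizontal_def by auto
qed

lemma drp_snd_mono:
  assumes "down_right_path N r" "i \<le> j" "j \<le> N"
  shows "snd (r j) \<le> snd (r i)"
  using assms(2,3)
proof (induction j)
  case 0 then show ?case by simp
next
  case (Suc j)
  show ?case
  proof (cases "i = Suc j")
    case True then show ?thesis by simp
  next
    case False
    then have "snd (r j) \<le> snd (r i)" using Suc by auto
    moreover have "snd (r (Suc j)) \<le> snd (r j)" using drp_step[OF assms(1), of "Suc j"] Suc by auto
    ultimately show ?thesis by simp
  qed
qed

lemma drp_fst_mono: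
  assumes "down_right_path N r" "i \<le> j" "j \<le> N"
  shows "fst (r i) \<le> fst (r j)"
  using assms(2,3)
proof (induction j)
  case 0 then show ?case by simp
next
  case (Suc j)
  show ?case
  proof (cases "i = Suc j")
    case True then show ?thesis by simp
  next
    case False
    then have "fst (r i) \<le> fst (r j)" using Suc by auto
    moreover have "fst (r j) \<le> fst (r (Suc j))"
      using drp_step[OF assms(1), of "Suc j"] Suc drp_fst[OF assms(1), of j] drp_fst[OF assms(1), of "Suc j"] by auto
    ultimately show ?thesis by simp
  qed
qed

lemma drp_in_strip:
  assumes "down_right_path N r" "j \<le> N"
  shows "r j \<in> strip N"
  using drp_fst[OF assms] assms(2) unfolding strip_def by (cases "r j") auto

lemma drp_inj:
  assumes "down_right_path N r" "i \<le> N" "j \<le> N" "r i = r j"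
  shows "i = j"
proof -
  have "fst (r i) = fst (r j)" "snd (r i) = snd (r j)" using assms(4) by auto
  then show ?thesis using drp_fst[OF assms(1,2)] drp_fst[OF assms(1,3)] by linarith
qed

lemma drp_the:
  assumes "down_right_path N r" "i \<le> N"
  shows "(THE j. j \<le> N \<and> r j = r i) = i"
  using drp_inj[OF assms(1)] assms(2) by (intro the_equality) auto


lemma urp_mono:
  assumes "up_right_path N \<pi>" "i \<le> k" "k < length \<pi>"
  shows "fst (\<pi>!i) \<le> fst (\<pi>!k) \<and> snd (\<pi>!i) \<le> snd (\<pi>!k) \<and>
         fst (\<pi>!k) + snd (\<pi>!k) = fst (\<pi>!i) + snd (\<pi>!i) + (k - i)"
  using assms(2,3)
proof (induction k)
  case 0 then show ?case by simp
next
  case (Suc k)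
  show ?case
  proof (cases "i = Suc k")
    case True then show ?thesis by simp
  next
    case False
    then have IH: "fst (\<pi>!i) \<le> fst (\<pi>!k) \<and> snd (\<pi>!i) \<le> snd (\<pi>!k) \<and>
         fst (\<pi>!k) + snd (\<pi>!k) = fst (\<pi>!i) + snd (\<pi>!i) + (k - i)" using Suc by auto
    have "\<pi> ! (k + 1) = (fst (\<pi>!k) + 1, snd (\<pi>!k)) \<or> \<pi> ! (k + 1) = (fst (\<pi>!k), snd (\<pi>!k) + 1)"
      using assms(1) Suc.prems unfolding up_right_path_def by auto
    then show ?thesis using IH False Suc.prems by auto
  qed
qed

lemma urp_le_last:
  assumes "up_right_path N \<pi>" "i < length \<pi>"
  shows "fst (\<pi>!i) \<le> fst (last \<pi>) \<and> snd (\<pi>!i) \<le> snd (last \<pi>)"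
proof -
  have "\<pi> \<noteq> []" using assms(1) unfolding up_right_path_def by auto
  then have "last \<pi> = \<pi> ! (length \<pi> - 1)" by (simp add: last_conv_nth)
  then show ?thesis using urp_mono[OF assms(1), of i "length \<pi> - 1"] assms(2) by auto
qed

lemma urp_length:
  assumes "up_right_path N \<pi>"
  shows "length \<pi> \<le> fst (last \<pi>) + snd (last \<pi>) + 1"
proof -
  have ne: "\<pi> \<noteq> []" using assms(1) unfolding up_right_path_def by auto
  then have "last \<pi> = \<pi> ! (length \<pi> - 1)" by (simp add: last_conv_nth)
  then show ?thesis using urp_mono[OF assms(1), of 0 "length \<pi> - 1"] ne by auto
qed

lemma finite_pp: "finite (polymer_paths N p x)"
proof -
  let ?A = "{..fst x} \<times> {..snd x}"
  have "polymer_paths N p x \<subseteq> {xs. set xs \<subseteq> ?A \<and> length xs \<le> fst x + snd x + 1}"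
  proof
    fix \<pi> assume "\<pi> \<in> polymer_paths N p x"
    then have u: "up_right_path N \<pi>" and l: "last \<pi> = x" unfolding polymer_paths_def by auto
    have "set \<pi> \<subseteq> ?A"
    proof
      fix y assume "y \<in> set \<pi>"
      then obtain i where "i < length \<pi>" "y = \<pi> ! i" by (auto simp: in_set_conv_nth)
      then show "y \<in> ?A" using urp_le_last[OF u, of i] l by (auto simp: mem_Times_iff)
    qed
    then show "\<pi> \<in> {xs. set xs \<subseteq> ?A \<and> length xs \<le> fst x + snd x + 1}"
      using urp_length[OF u] l by auto
  qed
  moreover have "finite {xs. set xs \<subseteq> ?A \<and> length xs \<le> fst x + snd x + 1}"
    by (intro finite_lists_length_le) auto
  ultimately show ?thesis by (rule finite_subset)
qed

lemma pp_on_path: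
  assumes P: "down_right_path N p" and i: "i \<le> N"
  shows "polymer_paths N p (p i) = {[p i]}"
proof
  show "{[p i]} \<subseteq> polymer_paths N p (p i)"
    using drp_in_strip[OF P i] i unfolding polymer_paths_def up_right_path_def path_set_def by auto
next
  show "polymer_paths N p (p i) \<subseteq> {[p i]}"
  proof
    fix \<pi> assume \<pi>: "\<pi> \<in> polymer_paths N p (p i)"
    then have ne: "\<pi> \<noteq> []" and l: "last \<pi> = p i" and h: "hd \<pi> \<in> path_set N p"
      and nin: "\<forall>k\<in>{1..<length \<pi>}. \<pi> ! k \<notin> path_set N p"
      unfolding polymer_paths_def up_right_path_def by auto
    have "length \<pi> = 1"
    proof (rule ccontr)
      assume n1: "length \<pi> \<noteq> 1"
      have "length \<pi> > 0" using ne by simp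
      with n1 have "length \<pi> \<ge> 2" by linarith
      then have "length \<pi> - 1 \<in> {1..<length \<pi>}" by auto
      moreover have "\<pi> ! (length \<pi> - 1) = p i" using l ne by (simp add: last_conv_nth)
      ultimately show False using nin i unfolding path_set_def by auto
    qed
    then have "\<pi> = [last \<pi>]" using ne by (cases \<pi>) auto
    then show "\<pi> \<in> {[p i]}" using l by simp
  qed
qed

lemma z_on_path:
  assumes P: "down_right_path N p" and i: "i \<le> N"
  shows "z_poly N p lam w (p i) = exp (lam i)"
  unfolding z_poly_def pp_on_path[OF assms] using drp_the[OF assms] by simp

definition preds :: "nat \<Rightarrow> nat \<times> nat \<Rightarrow> (nat \<times> nat) set" where
  "preds N x = {y \<in> strip N. (fst x \<ge> 1 \<and> y = (fst x - 1, snd x)) \<or> (snd x \<ge> 1 \<and> y = (fst x, snd x - 1))}"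

lemma finite_preds: "finite (preds N x)"
proof -
  have "preds N x \<subseteq> {(fst x - 1, snd x), (fst x, snd x - 1)}" unfolding preds_def by auto
  then show ?thesis by (rule finite_subset) auto
qed

lemma pp_rec:
  assumes x: "x \<in> strip N" "x \<notin> path_set N p"
  shows "polymer_paths N p x = (\<lambda>\<pi>. \<pi> @ [x]) ` (\<Union>y\<in>preds N x. polymer_paths N p y)"
proof
  show "polymer_paths N p x \<subseteq> (\<lambda>\<pi>. \<pi> @ [x]) ` (\<Union>y\<in>preds N x. polymer_paths N p y)"
  proof
    fix \<pi>' assume \<pi>': "\<pi>' \<in> polymer_paths N p x"
    then have u: "up_right_path N \<pi>'" and l: "last \<pi>' = x" and h: "hd \<pi>' \<in> path_set N p"
      and nin: "\<forall>k\<in>{1..<length \<pi>'}. \<pi>' ! k \<notin> path_set N p"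
      unfolding polymer_paths_def by auto
    have ne: "\<pi>' \<noteq> []" using u unfolding up_right_path_def by auto
    have len: "length \<pi>' \<ge> 2"
    proof (rule ccontr)
      assume "\<not> length \<pi>' \<ge> 2"
      moreover have "length \<pi>' > 0" using ne by simp
      ultimately have "length \<pi>' = 1" by linarith
      then have "hd \<pi>' = last \<pi>'" by (cases \<pi>') auto
      then show False using h l x by simp
    qed
    define \<pi> where "\<pi> = butlast \<pi>'"
    have eq: "\<pi>' = \<pi> @ [x]" unfolding \<pi>_def using append_butlast_last_id[OF ne] l by simp
    have lenpi: "length \<pi> = length \<pi>' - 1" "length \<pi> \<ge> 1" unfolding \<pi>_def using len by auto
    have nth: "\<pi> ! k = \<pi>' ! k" if "k < length \<pi>" for k using that unfolding \<pi>_def by (simp add: nth_butlast)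
    define y where "y = last \<pi>"
    have ylast: "y = \<pi>' ! (length \<pi>' - 2)"
    proof -
      have "\<pi> \<noteq> []" using lenpi by auto
      then have "last \<pi> = \<pi> ! (length \<pi> - 1)" by (simp add: last_conv_nth)
      also have "\<dots> = \<pi>' ! (length \<pi> - 1)" using lenpi by (intro nth) auto
      also have "length \<pi> - 1 = length \<pi>' - 2" using lenpi by auto
      finally show ?thesis unfolding y_def .
    qed
    have step: "\<pi>' ! (length \<pi>' - 2 + 1) = (fst (\<pi>'!(length \<pi>' - 2)) + 1, snd (\<pi>'!(length \<pi>' - 2))) \<or>
                \<pi>' ! (length \<pi>' - 2 + 1) = (fst (\<pi>'!(length \<pi>' - 2)), snd (\<pi>'!(length \<pi>' - 2)) + 1)"
      using u len unfolding up_right_path_def by auto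
    have xl: "\<pi>' ! (length \<pi>' - 2 + 1) = x"
    proof -
      have "length \<pi>' - 2 + 1 = length \<pi>' - 1" using len by auto
      then show ?thesis using l ne by (simp add: last_conv_nth)
    qed
    have ystrip: "y \<in> strip N"
    proof -
      have "y \<in> set \<pi>'" using ylast len by auto
      then show ?thesis using u unfolding up_right_path_def by auto
    qed
    have ypred: "y \<in> preds N x"
      using step xl ylast ystrip unfolding preds_def by auto
    have upi: "up_right_path N \<pi>"
      unfolding up_right_path_def
    proof (intro conjI allI impI)
      show "\<pi> \<noteq> []" using lenpi by auto
      show "set \<pi> \<subseteq> strip N" using u unfolding \<pi>_def up_right_path_def by (meson in_set_butlastD subset_iff)
      fix i assume "i + 1 < length \<pi>"
      then show "\<pi> ! (i + 1) = (fst (\<pi> ! i) + 1, snd (\<pi> ! i)) \<or> \<pi> ! (i + 1) = (fst (\<pi> ! i), snd (\<pi> ! i) + 1)"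
        using u nth[of i] nth[of "i+1"] lenpi unfolding up_right_path_def by auto
    qed
    have hpi: "hd \<pi> = hd \<pi>'" using eq lenpi by (cases \<pi>) auto
    have "\<pi> \<in> polymer_paths N p y"
      unfolding polymer_paths_def
    proof (intro CollectI conjI ballI)
      show "up_right_path N \<pi>" by fact
      show "hd \<pi> \<in> path_set N p" using hpi h by simp
      show "last \<pi> = y" unfolding y_def ..
      fix k assume "k \<in> {1..<length \<pi>}"
      then show "\<pi> ! k \<notin> path_set N p" using nth[of k] nin lenpi by auto
    qed
    then show "\<pi>' \<in> (\<lambda>\<pi>. \<pi> @ [x]) ` (\<Union>y\<in>preds N x. polymer_paths N p y)"
      using ypred eq by blast
  qed
next
  show "(\<lambda>\<pi>. \<pi> @ [x]) ` (\<Union>y\<in>preds N x. polymer_paths N p y) \<subseteq> polymer_paths N p x"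
  proof
    fix \<pi>' assume "\<pi>' \<in> (\<lambda>\<pi>. \<pi> @ [x]) ` (\<Union>y\<in>preds N x. polymer_paths N p y)"
    then obtain y \<pi> where y: "y \<in> preds N x" and \<pi>: "\<pi> \<in> polymer_paths N p y" and eq: "\<pi>' = \<pi> @ [x]" by auto
    from \<pi> have u: "up_right_path N \<pi>" and l: "last \<pi> = y" and h: "hd \<pi> \<in> path_set N p"
      and nin: "\<forall>k\<in>{1..<length \<pi>}. \<pi> ! k \<notin> path_set N p"
      unfolding polymer_paths_def by auto
    have ne: "\<pi> \<noteq> []" using u unfolding up_right_path_def by auto
    have ly: "\<pi> ! (length \<pi> - 1) = y" using l ne by (simp add: last_conv_nth)
    have u': "up_right_path N \<pi>'"
      unfolding up_right_path_def
    proof (intro conjI allI impI)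
      show "\<pi>' \<noteq> []" using eq by simp
      show "set \<pi>' \<subseteq> strip N" using u x eq unfolding up_right_path_def by auto
      fix i assume i: "i + 1 < length \<pi>'"
      show "\<pi>' ! (i + 1) = (fst (\<pi>' ! i) + 1, snd (\<pi>' ! i)) \<or> \<pi>' ! (i + 1) = (fst (\<pi>' ! i), snd (\<pi>' ! i) + 1)"
      proof (cases "i + 1 < length \<pi>")
        case True
        then show ?thesis using u eq unfolding up_right_path_def by (auto simp: nth_append)
      next
        case False
        then have "i = length \<pi> - 1" using i eq by auto
        then have "\<pi>' ! i = y" "\<pi>' ! (i+1) = x" using ly eq ne by (auto simp: nth_append)
        then show ?thesis using y unfolding preds_def by (cases x) auto
      qed
    qed
    show "\<pi>' \<in> polymer_paths N p x"
      unfolding polymer_paths_def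
    proof (intro CollectI conjI ballI)
      show "up_right_path N \<pi>'" by fact
      show "hd \<pi>' \<in> path_set N p" using h eq ne by simp
      show "last \<pi>' = x" using eq by simp
      fix k assume k: "k \<in> {1..<length \<pi>'}"
      show "\<pi>' ! k \<notin> path_set N p"
      proof (cases "k < length \<pi>")
        case True then show ?thesis using nin k eq by (auto simp: nth_append)
      next
        case False then have "k = length \<pi>" using k eq by auto
        then show ?thesis using x eq by simp
      qed
    qed
  qed
qed


lemma pp_ne: "\<pi> \<in> polymer_paths N p y \<Longrightarrow> \<pi> \<noteq> []"
  unfolding polymer_paths_def up_right_path_def by auto

lemma z_rec:
  assumes x: "x \<in> strip N" "x \<notin> path_set N p"
  shows "z_poly N p lam w x = (\<Sum>y\<in>preds N x. z_poly N p lam w y) * w x"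
proof -
  define tm where "tm \<pi> = exp (lam (THE j. j \<le> N \<and> p j = hd \<pi>)) * (\<Prod>i\<in>{1..<length \<pi>}. w (\<pi> ! i))" for \<pi>
  have zdef: "z_poly N p lam w y = (\<Sum>\<pi>\<in>polymer_paths N p y. tm \<pi>)" for y
    unfolding z_poly_def tm_def ..
  let ?U = "\<Union>y\<in>preds N x. polymer_paths N p y"
  have inj: "inj_on (\<lambda>\<pi>. \<pi> @ [x]) ?U" by (intro inj_onI) simp
  have tm_app: "tm (\<pi> @ [x]) = tm \<pi> * w x" if "\<pi> \<in> ?U" for \<pi>
  proof -
    have ne: "\<pi> \<noteq> []" using that pp_ne by blast
    then have l1: "length \<pi> \<ge> 1" by (cases \<pi>) auto
    have "(\<Prod>i\<in>{1..<length (\<pi> @ [x])}. w ((\<pi> @ [x]) ! i)) = (\<Prod>i\<in>{1..<Suc (length \<pi>)}. w ((\<pi> @ [x]) ! i))"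
      by simp
    also have "\<dots> = (\<Prod>i\<in>{1..<length \<pi>}. w ((\<pi> @ [x]) ! i)) * w ((\<pi> @ [x]) ! length \<pi>)"
      using l1 by (subst prod.op_ivl_Suc) auto
    also have "\<dots> = (\<Prod>i\<in>{1..<length \<pi>}. w (\<pi> ! i)) * w x"
      by (auto intro!: prod.cong simp: nth_append)
    finally show ?thesis unfolding tm_def using ne by (simp add: mult.assoc)
  qed
  have "z_poly N p lam w x = (\<Sum>\<pi>'\<in>(\<lambda>\<pi>. \<pi> @ [x]) ` ?U. tm \<pi>')"
    unfolding zdef pp_rec[OF x] ..
  also have "\<dots> = (\<Sum>\<pi>\<in>?U. tm (\<pi> @ [x]))"
    by (rule sum.reindex[OF inj, unfolded comp_def])
  also have "\<dots> = (\<Sum>\<pi>\<in>?U. tm \<pi> * w x)"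
    by (intro sum.cong refl tm_app)
  also have "\<dots> = (\<Sum>y\<in>preds N x. (\<Sum>\<pi>\<in>polymer_paths N p y. tm \<pi> * w x))"
  proof (rule sum.UNION_disjoint)
    show "finite (preds N x)" by (rule finite_preds)
    show "\<forall>y\<in>preds N x. finite (polymer_paths N p y)" by (simp add: finite_pp)
    show "\<forall>y\<in>preds N x. \<forall>y'\<in>preds N x. y \<noteq> y' \<longrightarrow> polymer_paths N p y \<inter> polymer_paths N p y' = {}"
      unfolding polymer_paths_def by auto
  qed
  also have "\<dots> = (\<Sum>y\<in>preds N x. z_poly N p lam w y) * w x"
    unfolding zdef sum_distrib_right ..
  finally show ?thesis .
qed

lemma z_local:
  assumes "\<And>v. fst v \<le> fst x \<Longrightarrow> snd v \<le> snd x \<Longrightarrow> w v = w' v"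
  shows "z_poly N p lam w x = z_poly N p lam w' x"
  unfolding z_poly_def
proof (intro sum.cong refl arg_cong2[where f="(*)"] prod.cong)
  fix \<pi> i assume \<pi>: "\<pi> \<in> polymer_paths N p x" and i: "i \<in> {1..<length \<pi>}"
  then have "up_right_path N \<pi>" "last \<pi> = x" unfolding polymer_paths_def by auto
  then show "w (\<pi> ! i) = w' (\<pi> ! i)" using urp_le_last[of N \<pi> i] i assms by auto
qed

lemma z_nonneg:
  assumes "\<And>v. v \<in> strip N \<Longrightarrow> w v > 0"
  shows "z_poly N p lam w x \<ge> 0"
  unfolding z_poly_def
proof (intro sum_nonneg mult_nonneg_nonneg prod_nonneg)
  fix \<pi> i assume \<pi>: "\<pi> \<in> polymer_paths N p x" and i: "i \<in> {1..<length \<pi>}"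
  then have "set \<pi> \<subseteq> strip N" unfolding polymer_paths_def up_right_path_def by auto
  then have "\<pi> ! i \<in> strip N" using i by auto
  then show "0 \<le> w (\<pi> ! i)" using assms by (simp add: less_imp_le)
qed auto


definition abv :: "nat \<Rightarrow> (nat \<Rightarrow> nat \<times> nat) \<Rightarrow> nat \<times> nat \<Rightarrow> bool" where
  "abv N p x \<longleftrightarrow> x \<in> strip N \<and> snd (p (fst x - snd x)) \<le> snd x"

lemma drp_snd_prev:
  assumes "down_right_path N r" "1 \<le> j" "j \<le> N"
  shows "snd (r (j - 1)) \<le> snd (r j) + 1"
  using drp_step[OF assms] by auto

lemma above_abv:
  assumes P: "down_right_path N p" and a: "above N p x"
  shows "abv N p x"
proof -
  obtain \<pi> where u: "up_right_path N \<pi>" and h: "hd \<pi> \<in> path_set N p" and l: "last \<pi> = x"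
    using a unfolding above_def by auto
  have ne: "\<pi> \<noteq> []" and st: "set \<pi> \<subseteq> strip N" using u unfolding up_right_path_def by auto
  have "abv N p (\<pi> ! k)" if "k < length \<pi>" for k
    using that
  proof (induction k)
    case 0
    obtain i where i: "i \<le> N" "hd \<pi> = p i" using h unfolding path_set_def by auto
    have "\<pi> ! 0 = p i" using i ne by (simp add: hd_conv_nth)
    then show ?case using drp_fst[OF P i(1)] drp_in_strip[OF P i(1)] unfolding abv_def by simp
  next
    case (Suc k)
    then have IH: "abv N p (\<pi> ! k)" by auto
    have sk: "\<pi> ! Suc k \<in> strip N" using Suc.prems st by auto
    have sk0: "\<pi> ! k \<in> strip N" using Suc.prems st by auto
    have "\<pi> ! (k + 1) = (fst (\<pi>!k) + 1, snd (\<pi>!k)) \<or> \<pi> ! (k + 1) = (fst (\<pi>!k), snd (\<pi>!k) + 1)"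
      using u Suc.prems unfolding up_right_path_def by auto
    then show ?case
    proof
      assume R: "\<pi> ! (k + 1) = (fst (\<pi>!k) + 1, snd (\<pi>!k))"
      let ?d = "fst (\<pi>!k) - snd (\<pi>!k)"
      have d: "?d + 1 \<le> N" "fst (\<pi>!k) \<ge> snd (\<pi>!k)" using sk sk0 R unfolding strip_def by auto
      have "snd (p (?d + 1)) \<le> snd (p ?d)" using drp_snd_mono[OF P, of ?d "?d+1"] d by auto
      then show ?thesis using IH sk R d unfolding abv_def by (auto simp: Suc_diff_le)
    next
      assume U: "\<pi> ! (k + 1) = (fst (\<pi>!k), snd (\<pi>!k) + 1)"
      let ?d = "fst (\<pi>!k) - snd (\<pi>!k)"
      have d: "1 \<le> ?d" "?d \<le> N" using sk sk0 U unfolding strip_def by auto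
      have "snd (p (?d - 1)) \<le> snd (p ?d) + 1" using drp_snd_prev[OF P d] .
      moreover have "fst (\<pi> ! Suc k) - snd (\<pi> ! Suc k) = ?d - 1" using U by simp
      ultimately show ?thesis using IH sk U unfolding abv_def by auto
    qed
  qed
  moreover have "x = \<pi> ! (length \<pi> - 1)" using l ne by (simp add: last_conv_nth)
  ultimately show ?thesis using ne by simp
qed

lemma abv_on_path:
  assumes P: "down_right_path N p" and a: "abv N p x" and e: "snd x = snd (p (fst x - snd x))"
  shows "x = p (fst x - snd x)"
proof -
  have "x \<in> strip N" using a unfolding abv_def by auto
  then have d: "fst x - snd x \<le> N" "snd x \<le> fst x" unfolding strip_def by auto
  show ?thesis using drp_pair[OF P d(1)] e d(2) by (metis add.commute le_add_diff_inverse prod.collapse)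
qed

lemma abv_not_on_path:
  assumes P: "down_right_path N p" and a: "abv N p x" and e: "snd x \<noteq> snd (p (fst x - snd x))"
  shows "x \<notin> path_set N p"
proof
  assume "x \<in> path_set N p"
  then obtain i where i: "i \<le> N" "x = p i" unfolding path_set_def by auto
  then have "fst x - snd x = i" using drp_fst[OF P i(1)] by simp
  then show False using e i by simp
qed

lemma z_pos:
  assumes N: "N \<ge> 1" and P: "down_right_path N p" and wpos: "\<And>v. v \<in> strip N \<Longrightarrow> w v > 0"
    and a: "abv N p x"
  shows "z_poly N p lam w x > 0"
  using a
proof (induction "fst x + snd x" arbitrary: x rule: less_induct)
  case less
  define d where "d = fst x - snd x"
  have xs: "x \<in> strip N" and le: "snd (p d) \<le> snd x" using less.prems unfolding abv_def d_def by auto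
  have dN: "d \<le> N" "snd x \<le> fst x" using xs unfolding strip_def d_def by auto
  show ?case
  proof (cases "snd x = snd (p d)")
    case True
    then have "x = p d" using abv_on_path[OF P less.prems] unfolding d_def by simp
    then show ?thesis using z_on_path[OF P dN(1)] by simp
  next
    case False
    then have lt: "snd (p d) < snd x" using le by simp
    have nx: "x \<notin> path_set N p" using abv_not_on_path[OF P less.prems] False unfolding d_def by simp
    obtain y where y: "y \<in> preds N x" "abv N p y" "fst y + snd y < fst x + snd x"
    proof (cases "d < N")
      case True
      let ?y = "(fst x, snd x - 1)"
      have m1: "snd x \<ge> 1" using lt by simp
      have ys: "?y \<in> strip N" using xs True m1 unfolding strip_def d_def by auto
      have dy: "fst ?y - snd ?y = d + 1" using m1 dN unfolding d_def by auto
      have "snd (p (d + 1)) \<le> snd (p d)" using drp_snd_mono[OF P, of d "d+1"] True by auto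
      then have "abv N p ?y" using ys dy lt unfolding abv_def by auto
      moreover have "?y \<in> preds N x" using ys m1 unfolding preds_def by auto
      moreover have "fst ?y + snd ?y < fst x + snd x" using m1 by auto
      ultimately show ?thesis using that by blast
    next
      case False
      then have dEq: "d = N" using dN by simp
      let ?y = "(fst x - 1, snd x)"
      have n1: "fst x \<ge> 1" using dEq N dN unfolding d_def by auto
      have ys: "?y \<in> strip N" using xs dEq N dN unfolding strip_def d_def by auto
      have dy: "fst ?y - snd ?y = N - 1" using dEq dN N unfolding d_def by auto
      have "snd (p (N - 1)) \<le> snd (p N) + 1" using drp_snd_prev[OF P N order_refl] .
      then have "abv N p ?y" using ys dy lt dEq unfolding abv_def by auto
      moreover have "?y \<in> preds N x" using ys n1 unfolding preds_def by auto
      moreover have "fst ?y + snd ?y < fst x + snd x" using n1 by auto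
      ultimately show ?thesis using that by blast
    qed
    have "z_poly N p lam w y > 0" using less.hyps[OF y(3) y(2)] .
    then have "(\<Sum>y\<in>preds N x. z_poly N p lam w y) > 0"
      using y(1) z_nonneg[of N w p lam, OF wpos] finite_preds by (intro sum_pos2) auto
    moreover have "w x > 0" using wpos xs by auto
    ultimately show ?thesis unfolding z_rec[OF xs nx] by simp
  qed
qed


lemma indep_coord:
  fixes M :: "'i \<Rightarrow> real measure" and H :: "('i \<Rightarrow> real) \<Rightarrow> real \<Rightarrow> ennreal"
  assumes probs: "\<And>i. i \<in> S \<Longrightarrow> prob_space (M i)" and x: "x \<in> S"
    and Hm: "(\<lambda>p. H (fst p) (snd p)) \<in> borel_measurable (PiM S M \<Otimes>\<^sub>M M x)"
    and Hind: "\<And>w t t'. H (w(x := t')) t = H w t"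
  shows "(\<integral>\<^sup>+w. H w (w x) \<partial>PiM S M) = (\<integral>\<^sup>+w. (\<integral>\<^sup>+t. H w t \<partial>M x) \<partial>PiM S M)"
proof -
  define T where "T = S - {x}"
  have ST: "S = insert x T" "x \<notin> T" using x unfolding T_def by auto
  interpret Mx: prob_space "M x" using probs x by auto
  interpret PT: prob_space "PiM T M" using probs ST by (intro prob_space_PiM) auto
  interpret PS: prob_space "PiM S M" using probs by (intro prob_space_PiM) auto
  interpret pair: pair_sigma_finite "M x" "PiM T M" ..
  have D: "distr (M x \<Otimes>\<^sub>M PiM T M) (PiM S M) (\<lambda>(t, X). X(x := t)) = PiM S M"
    using distr_pair_PiM_eq_PiM[of T M x] probs ST by auto
  have Um: "(\<lambda>p. (snd p)(x := fst p)) \<in> measurable (M x \<Otimes>\<^sub>M PiM T M) (PiM S M)"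
    using meas_upd[of snd "M x \<Otimes>\<^sub>M PiM T M" T M fst x] ST by simp
  have Um': "(\<lambda>(t, X). X(x := t)) \<in> measurable (M x \<Otimes>\<^sub>M PiM T M) (PiM S M)"
    using Um by (simp add: case_prod_beta')
  have Hc: "(\<lambda>y. H (f y) (g y)) \<in> borel_measurable N"
    if "f \<in> measurable N (PiM S M)" "g \<in> measurable N (M x)" for N f g
    using measurable_compose[OF measurable_Pair[OF that] Hm] by simp
  have H1m: "(\<lambda>w. H w (w x)) \<in> borel_measurable (PiM S M)"
    using x by (intro Hc) auto
  have Qm: "(\<lambda>w. \<integral>\<^sup>+t. H w t \<partial>M x) \<in> borel_measurable (PiM S M)"
    using Hm by (intro Mx.borel_measurable_nn_integral) (simp add: case_prod_beta')
  have "(\<integral>\<^sup>+w. H w (w x) \<partial>PiM S M) = (\<integral>\<^sup>+w. H w (w x) \<partial>distr (M x \<Otimes>\<^sub>M PiM T M) (PiM S M) (\<lambda>(t, X). X(x := t)))"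
    unfolding D ..
  also have "\<dots> = (\<integral>\<^sup>+p. H ((snd p)(x := fst p)) (fst p) \<partial>(M x \<Otimes>\<^sub>M PiM T M))"
    using H1m Um' by (subst nn_integral_distr) (auto simp: case_prod_beta')
  also have "\<dots> = (\<integral>\<^sup>+X. (\<integral>\<^sup>+t. H ((X::'i\<Rightarrow>real)(x := t)) t \<partial>M x) \<partial>PiM T M)"
    using Um by (subst pair.nn_integral_snd[symmetric]) (auto intro!: Hc)
  also have "\<dots> = (\<integral>\<^sup>+X. (\<integral>\<^sup>+t. H X t \<partial>M x) \<partial>PiM T M)"
    by (simp add: Hind)
  finally have L: "(\<integral>\<^sup>+w. H w (w x) \<partial>PiM S M) = (\<integral>\<^sup>+X. (\<integral>\<^sup>+t. H X t \<partial>M x) \<partial>PiM T M)" .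
  have "(\<integral>\<^sup>+w. (\<integral>\<^sup>+t. H w t \<partial>M x) \<partial>PiM S M) = (\<integral>\<^sup>+w. (\<integral>\<^sup>+t. H w t \<partial>M x) \<partial>distr (M x \<Otimes>\<^sub>M PiM T M) (PiM S M) (\<lambda>(t, X). X(x := t)))"
    unfolding D ..
  also have "\<dots> = (\<integral>\<^sup>+p. (\<integral>\<^sup>+t. H ((snd p)(x := fst p)) t \<partial>M x) \<partial>(M x \<Otimes>\<^sub>M PiM T M))"
    using Qm Um' by (subst nn_integral_distr) (auto simp: case_prod_beta')
  also have "\<dots> = (\<integral>\<^sup>+X. (\<integral>\<^sup>+t'. (\<integral>\<^sup>+t. H ((X::'i\<Rightarrow>real)(x := t')) t \<partial>M x) \<partial>M x) \<partial>PiM T M)"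
    using Um Qm by (subst pair.nn_integral_snd[symmetric]) (auto intro!: measurable_compose[OF Um Qm])
  also have "\<dots> = (\<integral>\<^sup>+X. (\<integral>\<^sup>+t. H X t \<partial>M x) \<partial>PiM T M)"
    by (simp add: Hind Mx.emeasure_space_1)
  finally show ?thesis using L by simp
qed

lemma alpha_ext_range:
  assumes "N \<ge> 1"
  shows "\<exists>i\<in>{1..N}. alpha_ext N \<alpha> k = \<alpha> i"
proof (cases "k mod N = 0")
  case True then show ?thesis using assms unfolding alpha_ext_def by auto
next
  case False
  have "k mod N < N" using assms by auto
  then show ?thesis using False unfolding alpha_ext_def by (intro bexI[of _ "k mod N"]) auto
qed

lemma weight_param_pos:
  assumes N: "N \<ge> 1"
    and aa: "\<And>i j. i \<in> {1..N} \<Longrightarrow> j \<in> {1..N} \<Longrightarrow> \<alpha> i + \<alpha> j > 0"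
    and au: "\<And>i. i \<in> {1..N} \<Longrightarrow> \<alpha> i + u > 0"
    and av: "\<And>i. i \<in> {1..N} \<Longrightarrow> \<alpha> i + v > 0"
  shows "weight_param N \<alpha> u v y > 0"
  using alpha_ext_range[OF N, of \<alpha> "fst y"] alpha_ext_range[OF N, of \<alpha> "snd y"] aa au av
  unfolding weight_param_def Let_def by auto

lemma inv_gamma_pos_AE:
  assumes "\<theta> > 0" shows "AE t in inv_gamma \<theta>. t > 0"
proof -
  have dm: "(\<lambda>x. ennreal (inv_gamma_density \<theta> x)) \<in> borel_measurable borel"
    unfolding inv_gamma_density_def by measurable
  show ?thesis unfolding inv_gamma_def using dm
    by (subst AE_density) (auto simp: inv_gamma_density_def split: if_splits)
qed

lemma sets_inv_gamma[simp]: "sets (inv_gamma \<theta>) = sets borel"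
  unfolding inv_gamma_def by simp

lemma space_inv_gamma[simp]: "space (inv_gamma \<theta>) = UNIV"
  unfolding inv_gamma_def by simp


lemma pp_the:
  assumes P: "down_right_path N p" and \<pi>: "\<pi> \<in> polymer_paths N p x"
  shows "(THE j. j \<le> N \<and> p j = hd \<pi>) \<le> N"
proof -
  obtain i where i: "i \<le> N" "hd \<pi> = p i" using \<pi> unfolding polymer_paths_def path_set_def by auto
  have "(THE j. j \<le> N \<and> p j = hd \<pi>) = i"
  proof (rule the_equality)
    show "i \<le> N \<and> p i = hd \<pi>" using i by simp
    fix j assume "j \<le> N \<and> p j = hd \<pi>"
    then show "j = i" using drp_inj[OF P, of j i] i by auto
  qed
  then show ?thesis using i by simp
qed

lemma pp_strip:
  assumes \<pi>: "\<pi> \<in> polymer_paths N p x" and i: "i < length \<pi>"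
  shows "\<pi> ! i \<in> strip N"
  using \<pi> i unfolding polymer_paths_def up_right_path_def by auto

lemma z_meas:
  assumes P: "down_right_path N p"
    and Mset: "\<And>i. i \<in> strip N \<Longrightarrow> sets (M i) = sets borel"
    and fm: "\<And>j. j \<le> N \<Longrightarrow> (\<lambda>k. f k j) \<in> borel_measurable K"
    and gm: "g \<in> measurable K (PiM (strip N) M)"
  shows "(\<lambda>k. z_poly N p (f k) (g k) x) \<in> borel_measurable K"
  unfolding z_poly_def
proof (intro borel_measurable_sum borel_measurable_times borel_measurable_prod)
  fix \<pi> assume \<pi>: "\<pi> \<in> polymer_paths N p x"
  show "(\<lambda>k. exp (f k (THE j. j \<le> N \<and> p j = hd \<pi>))) \<in> borel_measurable K"
  proof (rule measurable_compose[OF fm[OF pp_the[OF P \<pi>]]])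
    show "(exp :: real \<Rightarrow> real) \<in> borel_measurable borel"
      by (intro borel_measurable_continuous_onI continuous_intros)
  qed
  fix i assume i: "i \<in> {1..<length \<pi>}"
  have s: "\<pi> ! i \<in> strip N" using pp_strip[OF \<pi>] i by auto
  have "(\<lambda>k. g k (\<pi> ! i)) \<in> measurable K (M (\<pi> ! i))"
    using measurable_component_singleton'[OF gm measurable_ident_sets[OF refl] s] by simp
  then show "(\<lambda>k. g k (\<pi> ! i)) \<in> borel_measurable K"
    using measurable_cong_sets[OF refl Mset[OF s], of K] by simp
qed

definition hvec :: "nat \<Rightarrow> (nat \<Rightarrow> nat \<times> nat) \<Rightarrow> (nat \<Rightarrow> nat \<times> nat) \<Rightarrow> (nat \<Rightarrow> real) \<Rightarrow> ((nat \<times> nat) \<Rightarrow> real) \<Rightarrow> nat \<Rightarrow> real" where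
  "hvec N p r lam w = restrict (\<lambda>j. free_energy N p lam w (r j)) {..N}"

lemma hvec_meas:
  assumes P: "down_right_path N p"
    and Mset: "\<And>i. i \<in> strip N \<Longrightarrow> sets (M i) = sets borel"
    and fm: "\<And>j. j \<le> N \<Longrightarrow> (\<lambda>k. f k j) \<in> borel_measurable K"
    and gm: "g \<in> measurable K (PiM (strip N) M)"
  shows "(\<lambda>k. hvec N p r (f k) (g k)) \<in> measurable K (LB N)"
  unfolding hvec_def free_energy_def
proof (intro measurable_restrict)
  fix j assume "j \<in> {..N}"
  have "(\<lambda>k. z_poly N p (f k) (g k) (r j)) \<in> borel_measurable K" by (rule z_meas[OF P Mset fm gm])
  then show "(\<lambda>k. ln (z_poly N p (f k) (g k) (r j))) \<in> measurable K lborel" by measurable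
qed

lemma hvec_space: "hvec N p r lam w \<in> space (LB N)"
  unfolding hvec_def by (simp add: space_PiM)

lemma wtGP_meas:
  shows "(\<lambda>q. wt_GP N \<alpha> u v r (fst q) (snd q)) \<in> borel_measurable (LB N \<Otimes>\<^sub>M LB N)"
proof -
  have c1: "(\<lambda>q. fst q k) \<in> borel_measurable (LB N \<Otimes>\<^sub>M LB N)" if "k \<le> N" for k
    using measurable_compose[OF measurable_fst measurable_component_singleton[of k "{..N}" "\<lambda>_. lborel"]] that by simp
  have c2: "(\<lambda>q. snd q k) \<in> borel_measurable (LB N \<Otimes>\<^sub>M LB N)" if "k \<le> N" for k
    using measurable_compose[OF measurable_snd measurable_component_singleton[of k "{..N}" "\<lambda>_. lborel"]] that by simp
  have ul: "up_idx r j \<le> N" "low_idx r j \<le> N" if "j \<in> {1..N}" for j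
    using that unfolding up_idx_def low_idx_def by auto
  have fm: "(\<lambda>x. f_theta a x) \<in> borel_measurable borel" for a
    unfolding f_theta_def by (intro borel_measurable_continuous_onI continuous_intros)
  have em: "(exp :: real \<Rightarrow> real) \<in> borel_measurable borel"
    by (intro borel_measurable_continuous_onI continuous_intros)
  have e1: "(\<lambda>q. - u * (fst q 0 - snd q 0) - v * (fst q N - snd q N)) \<in> borel_measurable (LB N \<Otimes>\<^sub>M LB N)"
    by (intro borel_measurable_diff borel_measurable_times borel_measurable_const c1 c2) auto
  have e2: "(\<lambda>q. - exp (- (fst q (low_idx r j) - snd q (up_idx r j)))) \<in> borel_measurable (LB N \<Otimes>\<^sub>M LB N)"
    if "j \<in> {1..N}" for j
    by (intro borel_measurable_uminus measurable_compose[OF _ em] borel_measurable_diff c1 c2 ul that)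
  show ?thesis
    unfolding wt_GP_def
  proof (rule borel_measurable_times)
    show "(\<lambda>q. exp (- u * (fst q 0 - snd q 0) - v * (fst q N - snd q N))) \<in> borel_measurable (LB N \<Otimes>\<^sub>M LB N)"
      using e1 by (rule measurable_compose[OF _ em])
    show "(\<lambda>q. \<Prod>j = 1..N. f_theta (edge_label N \<alpha> r j) (fst q (up_idx r j) - fst q (low_idx r j)) *
                 f_theta (edge_label N \<alpha> r j) (snd q (up_idx r j) - snd q (low_idx r j)) *
                 exp (- exp (- (fst q (low_idx r j) - snd q (up_idx r j))))) \<in> borel_measurable (LB N \<Otimes>\<^sub>M LB N)"
    proof (rule borel_measurable_prod)
      fix j assume j: "j \<in> {1..N}"
      have a: "(\<lambda>q. f_theta (edge_label N \<alpha> r j) (fst q (up_idx r j) - fst q (low_idx r j))) \<in> borel_measurable (LB N \<Otimes>\<^sub>M LB N)"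
        by (rule measurable_compose[OF _ fm], rule borel_measurable_diff, rule c1[OF ul(1)[OF j]], rule c1[OF ul(2)[OF j]])
      have b: "(\<lambda>q. f_theta (edge_label N \<alpha> r j) (snd q (up_idx r j) - snd q (low_idx r j))) \<in> borel_measurable (LB N \<Otimes>\<^sub>M LB N)"
        by (rule measurable_compose[OF _ fm], rule borel_measurable_diff, rule c2[OF ul(1)[OF j]], rule c2[OF ul(2)[OF j]])
      have c: "(\<lambda>q. exp (- exp (- (fst q (low_idx r j) - snd q (up_idx r j))))) \<in> borel_measurable (LB N \<Otimes>\<^sub>M LB N)"
        using e2[OF j] by (rule measurable_compose[OF _ em])
      show "(\<lambda>q. f_theta (edge_label N \<alpha> r j) (fst q (up_idx r j) - fst q (low_idx r j)) *
                 f_theta (edge_label N \<alpha> r j) (snd q (up_idx r j) - snd q (low_idx r j)) *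
                 exp (- exp (- (fst q (low_idx r j) - snd q (up_idx r j))))) \<in> borel_measurable (LB N \<Otimes>\<^sub>M LB N)"
        by (rule borel_measurable_times[OF borel_measurable_times[OF a b] c])
    qed
  qed
qed


definition Claim :: "nat \<Rightarrow> (nat \<Rightarrow> real) \<Rightarrow> real \<Rightarrow> real \<Rightarrow> (nat \<Rightarrow> nat \<times> nat) \<Rightarrow> (nat \<Rightarrow> nat \<times> nat) \<Rightarrow> bool" where
  "Claim N \<alpha> u v p r \<longleftrightarrow> (\<forall>F \<in> borel_measurable (LB N).
      (\<integral>\<^sup>+lam. (\<integral>\<^sup>+w. F (hvec N p r lam w) \<partial>weight_measure N \<alpha> u v) * wt_P N \<alpha> u v p lam \<partial>LB N)
    = (\<integral>\<^sup>+lam. F lam * wt_P N \<alpha> u v r lam \<partial>LB N))"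

lemma weight_AE_pos:
  assumes pos: "\<And>y. weight_param N \<alpha> u v y > 0"
  shows "AE w in weight_measure N \<alpha> u v. \<forall>y\<in>strip N. w y > 0"
proof -
  have c: "countable (strip N)" by (rule countable_subset[of _ UNIV]) auto
  show ?thesis unfolding weight_measure_def
  proof (subst AE_ball_countable[OF c], intro ballI)
    fix y assume y: "y \<in> strip N"
    show "AE w in PiM (strip N) (\<lambda>x. inv_gamma (weight_param N \<alpha> u v x)). w y > 0"
      using y pos prob_inv_gamma inv_gamma_pos_AE
      by (intro AE_PiM_component) auto
  qed
qed

lemma move_step:
  assumes N: "N \<ge> 1"
    and aa: "\<And>i j. i \<in> {1..N} \<Longrightarrow> j \<in> {1..N} \<Longrightarrow> \<alpha> i + \<alpha> j > 0"
    and au: "\<And>i. i \<in> {1..N} \<Longrightarrow> \<alpha> i + u > 0"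
    and av: "\<And>i. i \<in> {1..N} \<Longrightarrow> \<alpha> i + v > 0"
    and P: "down_right_path N p"
    and d: "d \<le> N" and x: "x \<in> strip N"
    and Lm[measurable]: "Lf \<in> borel_measurable (LB N)" and Lj: "\<And>l t. Lf (l(d:=t)) = Lf l"
    and hrel: "\<And>lam w. lam \<in> space (LB N) \<Longrightarrow> (\<forall>y\<in>strip N. w y > 0) \<Longrightarrow>
        hvec N p r lam w = (hvec N p r0 lam w)(d := Lf (hvec N p r0 lam w) + ln (w x))"
    and hind: "\<And>lam w t. hvec N p r0 lam (w(x := t)) = hvec N p r0 lam w"
    and th: "\<theta> = weight_param N \<alpha> u v x"
    and key: "\<And>l m x'. (\<integral>\<^sup>+s. (\<integral>\<^sup>+y. ennreal (wt_GP N \<alpha> u v r0 (l(d:=s)) (m(d:=y))) \<partial>lborel) \<partial>lborel)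
                 * ennreal (f_theta \<theta> (x' - Lf l) / Gamma \<theta>)
               = (\<integral>\<^sup>+y. ennreal (wt_GP N \<alpha> u v r (l(d:=x')) (m(d:=y))) \<partial>lborel)"
    and IH: "Claim N \<alpha> u v p r0"
  shows "Claim N \<alpha> u v p r"
  unfolding Claim_def
proof (intro ballI)
  fix F :: "(nat \<Rightarrow> real) \<Rightarrow> ennreal" assume Fm[measurable]: "F \<in> borel_measurable (LB N)"
  let ?W = "weight_measure N \<alpha> u v"
  let ?Mw = "\<lambda>y. inv_gamma (weight_param N \<alpha> u v y)"
  have pos: "\<And>y. weight_param N \<alpha> u v y > 0" by (rule weight_param_pos[OF N]) (auto intro: aa au av)
  have thpos: "\<theta> > 0" using pos th by simp
  have probs: "\<And>y. prob_space (?Mw y)" using pos prob_inv_gamma by blast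
  have AEpos: "AE w in ?W. \<forall>y\<in>strip N. w y > 0" by (rule weight_AE_pos[OF pos])
  have Wdef: "?W = PiM (strip N) ?Mw" unfolding weight_measure_def ..
  have upd2[measurable]: "(\<lambda>z. (f z)(d := g z)) \<in> measurable M (LB N)"
    if "f \<in> measurable M (LB N)" "g \<in> borel_measurable M" for M f g
  proof -
    have "insert d {..N} = {..N}" using d by auto
    moreover have g': "g \<in> measurable M lborel" using that(2) by simp
    ultimately show ?thesis using meas_upd[OF that(1) g', of d] by simp
  qed
  have lnm: "(ln :: real \<Rightarrow> real) \<in> borel_measurable borel" by measurable
  define G where "G \<mu> = (\<integral>\<^sup>+g. ennreal (f_theta \<theta> g / Gamma \<theta>) * F (\<mu>(d := Lf \<mu> + g)) \<partial>lborel)" for \<mu>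
  have ftm: "(\<lambda>g. f_theta \<theta> g / Gamma \<theta>) \<in> borel_measurable borel"
    unfolding f_theta_def using Gamma_real_pos[OF thpos] by (intro borel_measurable_continuous_onI continuous_intros) auto
  have Gm: "G \<in> borel_measurable (LB N)"
    unfolding G_def using ftm by measurable
  have inner: "(\<integral>\<^sup>+w. F (hvec N p r lam w) \<partial>?W) = (\<integral>\<^sup>+w. G (hvec N p r0 lam w) \<partial>?W)"
    if lam: "lam \<in> space (LB N)" for lam
  proof -
    define H where "H w t = F ((hvec N p r0 lam w)(d := Lf (hvec N p r0 lam w) + ln t))" for w t
    have hm: "(\<lambda>k. hvec N p r0 ((\<lambda>_. lam) k) (fst k)) \<in> measurable (PiM (strip N) ?Mw \<Otimes>\<^sub>M ?Mw x) (LB N)"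
    proof (rule hvec_meas[OF P])
      show "\<And>i. i \<in> strip N \<Longrightarrow> sets (?Mw i) = sets borel" by simp
      show "\<And>j. j \<le> N \<Longrightarrow> (\<lambda>k. lam j) \<in> borel_measurable (PiM (strip N) ?Mw \<Otimes>\<^sub>M ?Mw x)" by simp
      show "fst \<in> measurable (PiM (strip N) ?Mw \<Otimes>\<^sub>M ?Mw x) (PiM (strip N) ?Mw)" by simp
    qed
    have sm: "(\<lambda>k. snd k) \<in> borel_measurable (PiM (strip N) ?Mw \<Otimes>\<^sub>M ?Mw x)"
    proof -
      have "snd \<in> measurable (PiM (strip N) ?Mw \<Otimes>\<^sub>M ?Mw x) (?Mw x)" by (rule measurable_snd)
      moreover have "measurable (PiM (strip N) ?Mw \<Otimes>\<^sub>M ?Mw x) (?Mw x) = borel_measurable (PiM (strip N) ?Mw \<Otimes>\<^sub>M ?Mw x)"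
        by (rule measurable_cong_sets[OF refl sets_inv_gamma])
      ultimately show ?thesis by simp
    qed
    have Hm: "(\<lambda>k. H (fst k) (snd k)) \<in> borel_measurable (PiM (strip N) ?Mw \<Otimes>\<^sub>M ?Mw x)"
      unfolding H_def using hm sm lnm by measurable
    have step1: "(\<integral>\<^sup>+w. F (hvec N p r lam w) \<partial>?W) = (\<integral>\<^sup>+w. H w (w x) \<partial>?W)"
      using AEpos by (rule nn_integral_cong_AE[OF AE_mp]) (auto simp: H_def hrel[OF lam])
    have step2: "(\<integral>\<^sup>+w. H w (w x) \<partial>?W) = (\<integral>\<^sup>+w. (\<integral>\<^sup>+t. H w t \<partial>?Mw x) \<partial>?W)"
      unfolding Wdef
      by (rule indep_coord[OF _ x Hm]) (simp add: probs, simp only: H_def hind)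
    have step3: "(\<integral>\<^sup>+t. H w t \<partial>?Mw x) = G (hvec N p r0 lam w)" for w
    proof -
      have Hw: "(\<lambda>t. H w t) \<in> borel_measurable borel"
      proof -
        have "(\<lambda>t. (hvec N p r0 lam w)(d := Lf (hvec N p r0 lam w) + ln t)) \<in> measurable borel (LB N)"
          using hvec_space[of N p r0 lam w] lnm by measurable
        then show ?thesis unfolding H_def by measurable
      qed
      have "(\<integral>\<^sup>+t. H w t \<partial>?Mw x) = (\<integral>\<^sup>+s. ennreal (f_theta \<theta> s / Gamma \<theta>) * H w (exp s) \<partial>lborel)"
        unfolding th[symmetric] using inv_gamma_log[OF thpos Hw] .
      also have "\<dots> = G (hvec N p r0 lam w)" unfolding H_def G_def by simp
      finally show ?thesis .
    qed
    show ?thesis using step1 step2 step3 by simp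
  qed
  have "(\<integral>\<^sup>+lam. (\<integral>\<^sup>+w. F (hvec N p r lam w) \<partial>?W) * wt_P N \<alpha> u v p lam \<partial>LB N)
      = (\<integral>\<^sup>+lam. (\<integral>\<^sup>+w. G (hvec N p r0 lam w) \<partial>?W) * wt_P N \<alpha> u v p lam \<partial>LB N)"
    by (intro nn_integral_cong) (simp add: inner)
  also have "\<dots> = (\<integral>\<^sup>+lam. G lam * wt_P N \<alpha> u v r0 lam \<partial>LB N)"
    using IH Gm unfolding Claim_def by blast
  also have "\<dots> = (\<integral>\<^sup>+l. (\<integral>\<^sup>+m. ennreal (wt_GP N \<alpha> u v r0 l m) \<partial>LB N) *
        (\<integral>\<^sup>+g. ennreal (f_theta \<theta> g / Gamma \<theta>) * F (l(d := Lf l + g)) \<partial>lborel) \<partial>LB N)"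
    unfolding G_def wt_P_def by (simp add: mult.commute)
  also have "\<dots> = (\<integral>\<^sup>+l. F l * (\<integral>\<^sup>+m. ennreal (wt_GP N \<alpha> u v r l m) \<partial>LB N) \<partial>LB N)"
    by (rule local_move[OF d wtGP_meas wtGP_meas ftm Lm Lj Fm key])
  also have "\<dots> = (\<integral>\<^sup>+lam. F lam * wt_P N \<alpha> u v r lam \<partial>LB N)"
    unfolding wt_P_def ..
  finally show "(\<integral>\<^sup>+lam. (\<integral>\<^sup>+w. F (hvec N p r lam w) \<partial>?W) * wt_P N \<alpha> u v p lam \<partial>LB N)
      = (\<integral>\<^sup>+lam. F lam * wt_P N \<alpha> u v r lam \<partial>LB N)" .
qed


lemma alpha_ext_period: "alpha_ext N \<alpha> (k + N) = alpha_ext N \<alpha> k"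
  unfolding alpha_ext_def by simp

definition Tf :: "nat \<Rightarrow> (nat \<Rightarrow> real) \<Rightarrow> (nat \<Rightarrow> nat \<times> nat) \<Rightarrow> nat \<Rightarrow> (nat \<Rightarrow> real) \<Rightarrow> (nat \<Rightarrow> real) \<Rightarrow> real" where
  "Tf N \<alpha> r k l1 l2 = f_theta (edge_label N \<alpha> r k) (l1 (up_idx r k) - l1 (low_idx r k)) *
        f_theta (edge_label N \<alpha> r k) (l2 (up_idx r k) - l2 (low_idx r k)) *
        exp (- exp (- (l1 (low_idx r k) - l2 (up_idx r k))))"

lemma wt_GP_Tf: "wt_GP N \<alpha> u v r l m = exp (- u * (l 0 - m 0) - v * (l N - m N)) * (\<Prod>k\<in>{1..N}. Tf N \<alpha> r k l m)"
  unfolding wt_GP_def Tf_def ..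

lemma Tf_nonneg: "Tf N \<alpha> r k l m \<ge> 0"
  unfolding Tf_def f_theta_def by simp

lemma Tf_upd:
  assumes "k \<noteq> d" "k \<noteq> d + 1"
  shows "Tf N \<alpha> r k (l(d:=s)) (m(d:=y)) = Tf N \<alpha> r k l m"
proof -
  have "up_idx r k \<noteq> d" "low_idx r k \<noteq> d" using assms unfolding up_idx_def low_idx_def by auto
  then show ?thesis unfolding Tf_def by simp
qed

lemma Tf_same:
  assumes "r k = r0 k" "r (k - 1) = r0 (k - 1)"
  shows "Tf N \<alpha> r k = Tf N \<alpha> r0 k"
  using assms unfolding Tf_def edge_label_def up_idx_def low_idx_def horizontal_def by simp

lemma key_from_local:
  fixes W W' :: "(nat \<Rightarrow> real) \<Rightarrow> (nat \<Rightarrow> real) \<Rightarrow> real"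
  assumes W: "\<And>s y. W (l(d:=s)) (m(d:=y)) = C * loc s y"
    and W': "\<And>x' y. W' (l(d:=x')) (m(d:=y)) = C * loc' x' y"
    and C: "C \<ge> 0"
    and locm: "(\<lambda>q. loc (fst q) (snd q)) \<in> borel_measurable (lborel \<Otimes>\<^sub>M lborel)"
    and loc'm: "\<And>x'. loc' x' \<in> borel_measurable borel"
    and locnn: "\<And>s y. loc s y \<ge> 0"
    and id: "(\<integral>\<^sup>+s. (\<integral>\<^sup>+y. ennreal (loc s y) \<partial>lborel) \<partial>lborel) * R = (\<integral>\<^sup>+y. ennreal (loc' x' y) \<partial>lborel)"
  shows "(\<integral>\<^sup>+s. (\<integral>\<^sup>+y. ennreal (W (l(d:=s)) (m(d:=y))) \<partial>lborel) \<partial>lborel) * R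
       = (\<integral>\<^sup>+y. ennreal (W' (l(d:=x')) (m(d:=y))) \<partial>lborel)"
proof -
  have m1: "(\<lambda>y. ennreal (loc s y)) \<in> borel_measurable borel" for s
    using measurable_Pair2[OF locm, of s] by simp
  have m2: "(\<lambda>s. \<integral>\<^sup>+y. ennreal (loc s y) \<partial>lborel) \<in> borel_measurable borel"
    using lborel.borel_measurable_nn_integral[of "\<lambda>s y. ennreal (loc s y)" lborel] locm
    by (simp add: case_prod_beta')
  have "(\<integral>\<^sup>+s. (\<integral>\<^sup>+y. ennreal (W (l(d:=s)) (m(d:=y))) \<partial>lborel) \<partial>lborel)
      = (\<integral>\<^sup>+s. ennreal C * (\<integral>\<^sup>+y. ennreal (loc s y) \<partial>lborel) \<partial>lborel)"
    unfolding W using C m1 by (intro nn_integral_cong) (simp add: ennreal_mult' nn_integral_cmult)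
  also have "\<dots> = ennreal C * (\<integral>\<^sup>+s. (\<integral>\<^sup>+y. ennreal (loc s y) \<partial>lborel) \<partial>lborel)"
    by (rule nn_integral_cmult) (use m2 in simp)
  finally have L: "(\<integral>\<^sup>+s. (\<integral>\<^sup>+y. ennreal (W (l(d:=s)) (m(d:=y))) \<partial>lborel) \<partial>lborel)
      = ennreal C * (\<integral>\<^sup>+s. (\<integral>\<^sup>+y. ennreal (loc s y) \<partial>lborel) \<partial>lborel)" .
  have R: "(\<integral>\<^sup>+y. ennreal (W' (l(d:=x')) (m(d:=y))) \<partial>lborel) = ennreal C * (\<integral>\<^sup>+y. ennreal (loc' x' y) \<partial>lborel)"
    unfolding W' using C loc'm[of x'] by (simp add: ennreal_mult' nn_integral_cmult)
  show ?thesis unfolding L R id[symmetric] by (simp add: mult.assoc)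
qed


lemma prod_split2:
  fixes N :: nat
  assumes "d \<in> {1..N}" "d + 1 \<in> {1..N}"
  shows "(\<Prod>k\<in>{1..N}. g k) = (\<Prod>k\<in>{1..N} - {d, d+1}. g k) * (g d * g (d + 1))"
proof -
  have "(\<Prod>k\<in>{1..N}. g k) = (\<Prod>k\<in>{1..N} - {d, d+1}. g k) * (\<Prod>k\<in>{d, d+1}. g k)"
    using assms by (intro prod.subset_diff) auto
  then show ?thesis by simp
qed

lemma prod_split1:
  fixes N :: nat
  assumes "d \<in> {1..N}"
  shows "(\<Prod>k\<in>{1..N}. g k) = (\<Prod>k\<in>{1..N} - {d}. g k) * g d"
proof -
  have "(\<Prod>k\<in>{1..N}. g k) = (\<Prod>k\<in>{1..N} - {d}. g k) * (\<Prod>k\<in>{d}. g k)"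
    using assms by (intro prod.subset_diff) auto
  then show ?thesis by simp
qed

lemma corner_key:
  assumes R0: "down_right_path N r0"
    and d: "0 < d" "d < N"
    and c1: "r0 (d - 1) = (fst (r0 d), snd (r0 d) + 1)"
    and c2: "r0 (d + 1) = (fst (r0 d) + 1, snd (r0 d))"
    and r: "r = r0(d := (fst (r0 d) + 1, snd (r0 d) + 1))"
    and AB: "alpha_ext N \<alpha> (snd (r0 (d - 1))) + alpha_ext N \<alpha> (fst (r0 (d + 1))) > 0"
  shows "(\<integral>\<^sup>+s. (\<integral>\<^sup>+y. ennreal (wt_GP N \<alpha> u v r0 (l(d:=s)) (m(d:=y))) \<partial>lborel) \<partial>lborel)
                 * ennreal (f_theta (weight_param N \<alpha> u v (r d)) (x' - ln (exp (l (d - 1)) + exp (l (d + 1)))) / Gamma (weight_param N \<alpha> u v (r d)))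
               = (\<integral>\<^sup>+y. ennreal (wt_GP N \<alpha> u v r (l(d:=x')) (m(d:=y))) \<partial>lborel)"
proof -
  define A where "A = alpha_ext N \<alpha> (snd (r0 (d - 1)))"
  define B where "B = alpha_ext N \<alpha> (fst (r0 (d + 1)))"
  have AB': "A + B > 0" using AB unfolding A_def B_def .
  have fd: "fst (r0 d) = snd (r0 d) + d" using drp_fst[OF R0] d by auto
  have dm1: "d - 1 \<noteq> d" "d + 1 \<noteq> d" "Suc (d - 1) = d" "d - 1 \<noteq> d + 1" using d by auto
  have h0d: "\<not> horizontal r0 d" unfolding horizontal_def using c1 by simp
  have h0d1: "horizontal r0 (d + 1)" unfolding horizontal_def using c2 by simp
  have hd: "horizontal r d" unfolding horizontal_def using c1 r dm1 by simp
  have hd1: "\<not> horizontal r (d + 1)" unfolding horizontal_def using c2 r dm1 by simp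
  have e0d: "edge_label N \<alpha> r0 d = A" unfolding edge_label_def A_def using h0d by simp
  have e0d1: "edge_label N \<alpha> r0 (d + 1) = B" unfolding edge_label_def B_def using h0d1 by simp
  have ed: "edge_label N \<alpha> r d = B" unfolding edge_label_def B_def using hd r c2 by simp
  have ed1: "edge_label N \<alpha> r (d + 1) = A" unfolding edge_label_def A_def using hd1 r c1 dm1 by simp
  have th: "weight_param N \<alpha> u v (r d) = A + B"
  proof -
    have "fst (r d) = snd (r d) + d" using r fd by simp
    then have "fst (r d) \<noteq> snd (r d)" "fst (r d) \<noteq> snd (r d) + N" using d by auto
    moreover have "alpha_ext N \<alpha> (fst (r d)) = B" unfolding B_def using r c2 by simp
    moreover have "alpha_ext N \<alpha> (snd (r d)) = A" unfolding A_def using r c1 by simp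
    ultimately show ?thesis unfolding weight_param_def Let_def by simp
  qed
  define C where "C = exp (- u * (l 0 - m 0) - v * (l N - m N)) * (\<Prod>k\<in>{1..N} - {d, d+1}. Tf N \<alpha> r0 k l m)"
  have din: "d \<in> {1..N}" "d + 1 \<in> {1..N}" using d by auto
  have C0: "C \<ge> 0" unfolding C_def by (intro mult_nonneg_nonneg prod_nonneg Tf_nonneg) auto
  define loc where "loc s y = (f_theta A (l (d - 1) - s) * f_theta A (m (d - 1) - y) * exp (- exp (- (s - m (d - 1))))) *
      (f_theta B (l (d + 1) - s) * f_theta B (m (d + 1) - y) * exp (- exp (- (s - m (d + 1)))))" for s y
  define loc' where "loc' x' y = (f_theta B (x' - l (d - 1)) * f_theta B (y - m (d - 1)) * exp (- exp (- (l (d - 1) - y)))) *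
      (f_theta A (x' - l (d + 1)) * f_theta A (y - m (d + 1)) * exp (- exp (- (l (d + 1) - y))))" for x' y
  have W: "wt_GP N \<alpha> u v r0 (l(d:=s)) (m(d:=y)) = C * loc s y" for s y
  proof -
    have "wt_GP N \<alpha> u v r0 (l(d:=s)) (m(d:=y)) = exp (- u * (l 0 - m 0) - v * (l N - m N)) *
        ((\<Prod>k\<in>{1..N} - {d, d+1}. Tf N \<alpha> r0 k (l(d:=s)) (m(d:=y))) * (Tf N \<alpha> r0 d (l(d:=s)) (m(d:=y)) * Tf N \<alpha> r0 (d + 1) (l(d:=s)) (m(d:=y))))"
      unfolding wt_GP_Tf prod_split2[OF din] using d by simp
    also have "(\<Prod>k\<in>{1..N} - {d, d+1}. Tf N \<alpha> r0 k (l(d:=s)) (m(d:=y))) = (\<Prod>k\<in>{1..N} - {d, d+1}. Tf N \<alpha> r0 k l m)"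
      by (intro prod.cong refl Tf_upd) auto
    also have "Tf N \<alpha> r0 d (l(d:=s)) (m(d:=y)) * Tf N \<alpha> r0 (d + 1) (l(d:=s)) (m(d:=y)) = loc s y"
      unfolding Tf_def loc_def e0d e0d1 using h0d h0d1 dm1 unfolding up_idx_def low_idx_def by simp
    finally show ?thesis unfolding C_def by (simp only: mult.assoc)
  qed
  have W': "wt_GP N \<alpha> u v r (l(d:=x')) (m(d:=y)) = C * loc' x' y" for x' y
  proof -
    have "wt_GP N \<alpha> u v r (l(d:=x')) (m(d:=y)) = exp (- u * (l 0 - m 0) - v * (l N - m N)) *
        ((\<Prod>k\<in>{1..N} - {d, d+1}. Tf N \<alpha> r k (l(d:=x')) (m(d:=y))) * (Tf N \<alpha> r d (l(d:=x')) (m(d:=y)) * Tf N \<alpha> r (d + 1) (l(d:=x')) (m(d:=y))))"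
      unfolding wt_GP_Tf prod_split2[OF din] using d by simp
    also have "(\<Prod>k\<in>{1..N} - {d, d+1}. Tf N \<alpha> r k (l(d:=x')) (m(d:=y))) = (\<Prod>k\<in>{1..N} - {d, d+1}. Tf N \<alpha> r0 k l m)"
    proof (intro prod.cong refl)
      fix k assume k: "k \<in> {1..N} - {d, d+1}"
      then have "r k = r0 k" "r (k - 1) = r0 (k - 1)" using r by auto
      then have "Tf N \<alpha> r k = Tf N \<alpha> r0 k" by (rule Tf_same)
      then show "Tf N \<alpha> r k (l(d:=x')) (m(d:=y)) = Tf N \<alpha> r0 k l m" using k Tf_upd[of k d N \<alpha> r0 l x' m y] by auto
    qed
    also have "Tf N \<alpha> r d (l(d:=x')) (m(d:=y)) * Tf N \<alpha> r (d + 1) (l(d:=x')) (m(d:=y)) = loc' x' y"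
      unfolding Tf_def loc'_def ed ed1 using hd hd1 dm1 unfolding up_idx_def low_idx_def by simp
    finally show ?thesis unfolding C_def by (simp only: mult.assoc)
  qed
  have locm: "(\<lambda>q. loc (fst q) (snd q)) \<in> borel_measurable (lborel \<Otimes>\<^sub>M lborel)"
    unfolding loc_def f_theta_def by measurable
  have loc'm: "loc' x' \<in> borel_measurable borel" for x'
    unfolding loc'_def f_theta_def by measurable
  have locnn: "loc s y \<ge> 0" for s y unfolding loc_def f_theta_def by simp
  have id: "(\<integral>\<^sup>+s. (\<integral>\<^sup>+y. ennreal (loc s y) \<partial>lborel) \<partial>lborel)
      * ennreal (f_theta (A + B) (x' - ln (exp (l (d - 1)) + exp (l (d + 1)))) / Gamma (A + B))
      = (\<integral>\<^sup>+y. ennreal (loc' x' y) \<partial>lborel)"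
    unfolding loc_def loc'_def by (rule CI[OF AB'])
  show ?thesis unfolding th
    by (rule key_from_local[where W="wt_GP N \<alpha> u v r0" and W'="wt_GP N \<alpha> u v r" and l=l and m=m and d=d and C=C and loc=loc and loc'=loc', OF W W' C0 locm loc'm locnn id])
qed


lemma exp_split2: "exp ((a::real) - b) = exp a * exp (- b)"
  by (simp add: exp_diff exp_minus divide_inverse)

lemma left_key:
  assumes R0: "down_right_path N r0" and N: "N \<ge> 1"
    and c2: "r0 1 = (fst (r0 0) + 1, snd (r0 0))"
    and r: "r = r0(0 := (fst (r0 0) + 1, snd (r0 0) + 1))"
    and Bu: "alpha_ext N \<alpha> (fst (r0 1)) + u > 0"
  shows "(\<integral>\<^sup>+s. (\<integral>\<^sup>+y. ennreal (wt_GP N \<alpha> u v r0 (l(0:=s)) (m(0:=y))) \<partial>lborel) \<partial>lborel)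
                 * ennreal (f_theta (weight_param N \<alpha> u v (r 0)) (x' - l 1) / Gamma (weight_param N \<alpha> u v (r 0)))
               = (\<integral>\<^sup>+y. ennreal (wt_GP N \<alpha> u v r (l(0:=x')) (m(0:=y))) \<partial>lborel)"
proof -
  define B where "B = alpha_ext N \<alpha> (fst (r0 1))"
  have Bu': "B + u > 0" using Bu unfolding B_def .
  have f0: "fst (r0 0) = snd (r0 0)" using drp_fst[OF R0, of 0] by simp
  have h01: "horizontal r0 1" unfolding horizontal_def using c2 by simp
  have h1: "\<not> horizontal r 1" unfolding horizontal_def using c2 r by simp
  have e01: "edge_label N \<alpha> r0 1 = B" unfolding edge_label_def B_def using h01 by simp
  have e1: "edge_label N \<alpha> r 1 = B" unfolding edge_label_def B_def using h1 r c2 f0 by simp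
  have th: "weight_param N \<alpha> u v (r 0) = B + u"
    unfolding weight_param_def Let_def B_def using r c2 f0 by simp
  have N0: "N \<noteq> 0" using N by simp
  define C where "C = exp (- v * (l N - m N)) * (\<Prod>k\<in>{1..N} - {1}. Tf N \<alpha> r0 k l m)"
  have din: "1 \<in> {1..N}" using N by auto
  have C0: "C \<ge> 0" unfolding C_def by (intro mult_nonneg_nonneg prod_nonneg Tf_nonneg) auto
  define loc where "loc s y = exp (- u * (s - y)) * (f_theta B (l 1 - s) * f_theta B (m 1 - y) * exp (- exp (- (s - m 1))))" for s y
  define loc' where "loc' x' y = exp (- u * (x' - y)) * (f_theta B (x' - l 1) * f_theta B (y - m 1) * exp (- exp (- (l 1 - y))))" for x' y
  have W: "wt_GP N \<alpha> u v r0 (l(0:=s)) (m(0:=y)) = C * loc s y" for s y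
  proof -
    have "wt_GP N \<alpha> u v r0 (l(0:=s)) (m(0:=y)) = (exp (- u * (s - y)) * exp (- v * (l N - m N))) *
        ((\<Prod>k\<in>{1..N} - {1}. Tf N \<alpha> r0 k (l(0:=s)) (m(0:=y))) * Tf N \<alpha> r0 1 (l(0:=s)) (m(0:=y)))"
      unfolding wt_GP_Tf prod_split1[OF din] using N0 by (simp add: exp_split2)
    also have "(\<Prod>k\<in>{1..N} - {1}. Tf N \<alpha> r0 k (l(0:=s)) (m(0:=y))) = (\<Prod>k\<in>{1..N} - {1}. Tf N \<alpha> r0 k l m)"
      by (intro prod.cong refl Tf_upd) auto
    also have "Tf N \<alpha> r0 1 (l(0:=s)) (m(0:=y)) = f_theta B (l 1 - s) * f_theta B (m 1 - y) * exp (- exp (- (s - m 1)))"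
      unfolding Tf_def e01 using h01 unfolding up_idx_def low_idx_def by simp
    finally show ?thesis unfolding C_def loc_def by (simp only: mult_ac)
  qed
  have W': "wt_GP N \<alpha> u v r (l(0:=x')) (m(0:=y)) = C * loc' x' y" for x' y
  proof -
    have "wt_GP N \<alpha> u v r (l(0:=x')) (m(0:=y)) = (exp (- u * (x' - y)) * exp (- v * (l N - m N))) *
        ((\<Prod>k\<in>{1..N} - {1}. Tf N \<alpha> r k (l(0:=x')) (m(0:=y))) * Tf N \<alpha> r 1 (l(0:=x')) (m(0:=y)))"
      unfolding wt_GP_Tf prod_split1[OF din] using N0 by (simp add: exp_split2)
    also have "(\<Prod>k\<in>{1..N} - {1}. Tf N \<alpha> r k (l(0:=x')) (m(0:=y))) = (\<Prod>k\<in>{1..N} - {1}. Tf N \<alpha> r0 k l m)"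
    proof (intro prod.cong refl)
      fix k assume k: "k \<in> {1..N} - {1}"
      then have "r k = r0 k" "r (k - 1) = r0 (k - 1)" using r by auto
      then have "Tf N \<alpha> r k = Tf N \<alpha> r0 k" by (rule Tf_same)
      then show "Tf N \<alpha> r k (l(0:=x')) (m(0:=y)) = Tf N \<alpha> r0 k l m" using k Tf_upd[of k 0 N \<alpha> r0 l x' m y] by auto
    qed
    also have "Tf N \<alpha> r 1 (l(0:=x')) (m(0:=y)) = f_theta B (x' - l 1) * f_theta B (y - m 1) * exp (- exp (- (l 1 - y)))"
      unfolding Tf_def e1 using h1 unfolding up_idx_def low_idx_def by simp
    finally show ?thesis unfolding C_def loc'_def by (simp only: mult_ac)
  qed
  have locm: "(\<lambda>q. loc (fst q) (snd q)) \<in> borel_measurable (lborel \<Otimes>\<^sub>M lborel)"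
    unfolding loc_def f_theta_def by measurable
  have loc'm: "loc' x' \<in> borel_measurable borel" for x'
    unfolding loc'_def f_theta_def by measurable
  have locnn: "loc s y \<ge> 0" for s y unfolding loc_def f_theta_def by simp
  have id: "(\<integral>\<^sup>+s. (\<integral>\<^sup>+y. ennreal (loc s y) \<partial>lborel) \<partial>lborel)
      * ennreal (f_theta (B + u) (x' - l 1) / Gamma (B + u))
      = (\<integral>\<^sup>+y. ennreal (loc' x' y) \<partial>lborel)"
    unfolding loc_def loc'_def by (rule BI[OF Bu'])
  show ?thesis unfolding th
    by (rule key_from_local[where W="wt_GP N \<alpha> u v r0" and W'="wt_GP N \<alpha> u v r" and l=l and m=m and d=0 and C=C and loc=loc and loc'=loc', OF W W' C0 locm loc'm locnn id])
qed

lemma right_key: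
  assumes R0: "down_right_path N r0" and N: "N \<ge> 1"
    and c1: "r0 (N - 1) = (fst (r0 N), snd (r0 N) + 1)"
    and r: "r = r0(N := (fst (r0 N) + 1, snd (r0 N) + 1))"
    and Av: "alpha_ext N \<alpha> (snd (r0 (N - 1))) + v > 0"
  shows "(\<integral>\<^sup>+s. (\<integral>\<^sup>+y. ennreal (wt_GP N \<alpha> u v r0 (l(N:=s)) (m(N:=y))) \<partial>lborel) \<partial>lborel)
                 * ennreal (f_theta (weight_param N \<alpha> u v (r N)) (x' - l (N - 1)) / Gamma (weight_param N \<alpha> u v (r N)))
               = (\<integral>\<^sup>+y. ennreal (wt_GP N \<alpha> u v r (l(N:=x')) (m(N:=y))) \<partial>lborel)"
proof -
  define A where "A = alpha_ext N \<alpha> (snd (r0 (N - 1)))"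
  have Av': "A + v > 0" using Av unfolding A_def .
  have fN: "fst (r0 N) = snd (r0 N) + N" using drp_fst[OF R0, of N] by simp
  have dm1: "N - 1 \<noteq> N" "Suc (N - 1) = N" using N by auto
  have h0: "\<not> horizontal r0 N" unfolding horizontal_def using c1 by simp
  have h1: "horizontal r N" unfolding horizontal_def using c1 r dm1 by simp
  have e0: "edge_label N \<alpha> r0 N = A" unfolding edge_label_def A_def using h0 by simp
  have e1: "edge_label N \<alpha> r N = A"
  proof -
    have "fst (r N) = (snd (r0 N) + 1) + N" using r fN by simp
    then have "alpha_ext N \<alpha> (fst (r N)) = alpha_ext N \<alpha> ((snd (r0 N) + 1) + N)" by (simp only:)
    also have "\<dots> = alpha_ext N \<alpha> (snd (r0 N) + 1)" by (rule alpha_ext_period)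
    finally have "alpha_ext N \<alpha> (fst (r N)) = alpha_ext N \<alpha> (snd (r0 N) + 1)" .
    then show ?thesis unfolding edge_label_def A_def using h1 c1 by simp
  qed
  have th: "weight_param N \<alpha> u v (r N) = A + v"
  proof -
    have "fst (r N) = snd (r N) + N" "snd (r N) = snd (r0 N) + 1" using r fN by auto
    then have "fst (r N) \<noteq> snd (r N)" "fst (r N) = snd (r N) + N" using N by auto
    then show ?thesis unfolding weight_param_def Let_def A_def using c1 r by simp
  qed
  have N0: "N \<noteq> 0" using N by simp
  define C where "C = exp (- u * (l 0 - m 0)) * (\<Prod>k\<in>{1..N} - {N}. Tf N \<alpha> r0 k l m)"
  have din: "N \<in> {1..N}" using N by auto
  have C0: "C \<ge> 0" unfolding C_def by (intro mult_nonneg_nonneg prod_nonneg Tf_nonneg) auto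
  define loc where "loc s y = exp (- v * (s - y)) * (f_theta A (l (N - 1) - s) * f_theta A (m (N - 1) - y) * exp (- exp (- (s - m (N - 1)))))" for s y
  define loc' where "loc' x' y = exp (- v * (x' - y)) * (f_theta A (x' - l (N - 1)) * f_theta A (y - m (N - 1)) * exp (- exp (- (l (N - 1) - y))))" for x' y
  have W: "wt_GP N \<alpha> u v r0 (l(N:=s)) (m(N:=y)) = C * loc s y" for s y
  proof -
    have "wt_GP N \<alpha> u v r0 (l(N:=s)) (m(N:=y)) = (exp (- u * (l 0 - m 0)) * exp (- v * (s - y))) *
        ((\<Prod>k\<in>{1..N} - {N}. Tf N \<alpha> r0 k (l(N:=s)) (m(N:=y))) * Tf N \<alpha> r0 N (l(N:=s)) (m(N:=y)))"
      unfolding wt_GP_Tf prod_split1[OF din] using N0 by (simp add: exp_split2)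
    also have "(\<Prod>k\<in>{1..N} - {N}. Tf N \<alpha> r0 k (l(N:=s)) (m(N:=y))) = (\<Prod>k\<in>{1..N} - {N}. Tf N \<alpha> r0 k l m)"
      by (intro prod.cong refl Tf_upd) auto
    also have "Tf N \<alpha> r0 N (l(N:=s)) (m(N:=y)) = f_theta A (l (N - 1) - s) * f_theta A (m (N - 1) - y) * exp (- exp (- (s - m (N - 1))))"
      unfolding Tf_def e0 using h0 dm1 unfolding up_idx_def low_idx_def by simp
    finally show ?thesis unfolding C_def loc_def by (simp only: mult_ac)
  qed
  have W': "wt_GP N \<alpha> u v r (l(N:=x')) (m(N:=y)) = C * loc' x' y" for x' y
  proof -
    have "wt_GP N \<alpha> u v r (l(N:=x')) (m(N:=y)) = (exp (- u * (l 0 - m 0)) * exp (- v * (x' - y))) *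
        ((\<Prod>k\<in>{1..N} - {N}. Tf N \<alpha> r k (l(N:=x')) (m(N:=y))) * Tf N \<alpha> r N (l(N:=x')) (m(N:=y)))"
      unfolding wt_GP_Tf prod_split1[OF din] using N0 by (simp add: exp_split2)
    also have "(\<Prod>k\<in>{1..N} - {N}. Tf N \<alpha> r k (l(N:=x')) (m(N:=y))) = (\<Prod>k\<in>{1..N} - {N}. Tf N \<alpha> r0 k l m)"
    proof (intro prod.cong refl)
      fix k assume k: "k \<in> {1..N} - {N}"
      then have "r k = r0 k" "r (k - 1) = r0 (k - 1)" using r by auto
      then have "Tf N \<alpha> r k = Tf N \<alpha> r0 k" by (rule Tf_same)
      then show "Tf N \<alpha> r k (l(N:=x')) (m(N:=y)) = Tf N \<alpha> r0 k l m" using k Tf_upd[of k N N \<alpha> r0 l x' m y] by auto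
    qed
    also have "Tf N \<alpha> r N (l(N:=x')) (m(N:=y)) = f_theta A (x' - l (N - 1)) * f_theta A (y - m (N - 1)) * exp (- exp (- (l (N - 1) - y)))"
      unfolding Tf_def e1 using h1 dm1 unfolding up_idx_def low_idx_def by simp
    finally show ?thesis unfolding C_def loc'_def by (simp only: mult_ac)
  qed
  have locm: "(\<lambda>q. loc (fst q) (snd q)) \<in> borel_measurable (lborel \<Otimes>\<^sub>M lborel)"
    unfolding loc_def f_theta_def by measurable
  have loc'm: "loc' x' \<in> borel_measurable borel" for x'
    unfolding loc'_def f_theta_def by measurable
  have locnn: "loc s y \<ge> 0" for s y unfolding loc_def f_theta_def by simp
  have id: "(\<integral>\<^sup>+s. (\<integral>\<^sup>+y. ennreal (loc s y) \<partial>lborel) \<partial>lborel)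
      * ennreal (f_theta (A + v) (x' - l (N - 1)) / Gamma (A + v))
      = (\<integral>\<^sup>+y. ennreal (loc' x' y) \<partial>lborel)"
    unfolding loc_def loc'_def by (rule BI[OF Av'])
  show ?thesis unfolding th
    by (rule key_from_local[where W="wt_GP N \<alpha> u v r0" and W'="wt_GP N \<alpha> u v r" and l=l and m=m and d=N and C=C and loc=loc and loc'=loc', OF W W' C0 locm loc'm locnn id])
qed


lemma hind_gen:
  assumes R0: "down_right_path N r0" and d: "d \<le> N" and x: "x = (fst (r0 d) + 1, snd (r0 d) + 1)"
  shows "hvec N p r0 lam (w(x := t)) = hvec N p r0 lam w"
  unfolding hvec_def free_energy_def
proof (intro restrict_ext arg_cong[where f=ln] z_local)
  fix j v assume j: "j \<in> {..N}" and v: "fst v \<le> fst (r0 j)" "snd v \<le> snd (r0 j)"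
  have "v \<noteq> x"
  proof (cases "j \<le> d")
    case True
    have "fst (r0 j) \<le> fst (r0 d)" by (rule drp_fst_mono[OF R0 True d])
    then show ?thesis using v x by auto
  next
    case False
    then have "snd (r0 d) \<ge> snd (r0 j)" using drp_snd_mono[OF R0, of d j] j by auto
    then show ?thesis using v x by auto
  qed
  then show "(w(x := t)) v = w v" by simp
qed

lemma hrel_gen:
  assumes N: "N \<ge> 1" and P: "down_right_path N p" and R0: "down_right_path N r0"
    and ge: "\<And>j. j \<le> N \<Longrightarrow> snd (p j) \<le> snd (r0 j)"
    and d: "d \<le> N" and x: "x = (fst (r0 d) + 1, snd (r0 d) + 1)" and r: "r = r0(d := x)"
    and xs: "x \<in> strip N"
    and Is: "Iset \<subseteq> {..N}" "Iset \<noteq> {}" and inj: "inj_on r0 Iset"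
    and pr: "preds N x = r0 ` Iset"
    and lam: "lam \<in> space (LB N)" and wpos: "\<forall>y\<in>strip N. w y > 0"
  shows "hvec N p r lam w = (hvec N p r0 lam w)(d := ln (\<Sum>i\<in>Iset. exp (hvec N p r0 lam w i)) + ln (w x))"
proof
  fix j
  have fI: "finite Iset" using Is(1) finite_subset by auto
  have fd: "fst (r0 d) = snd (r0 d) + d" using drp_fst[OF R0 d] .
  have zpos: "z_poly N p lam w (r0 i) > 0" if "i \<le> N" for i
  proof (rule z_pos[OF N P])
    show "\<And>v. v \<in> strip N \<Longrightarrow> w v > 0" using wpos by auto
    show "abv N p (r0 i)" unfolding abv_def using drp_in_strip[OF R0 that] drp_fst[OF R0 that] ge[OF that] by simp
  qed
  show "hvec N p r lam w j = ((hvec N p r0 lam w)(d := ln (\<Sum>i\<in>Iset. exp (hvec N p r0 lam w i)) + ln (w x))) j"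
  proof (cases "j = d")
    case False
    then show ?thesis unfolding hvec_def r by simp
  next
    case True
    have ax: "abv N p x" unfolding abv_def using xs x fd ge[OF d] by simp
    have nx: "x \<notin> path_set N p"
      using abv_not_on_path[OF P ax] x fd ge[OF d] by simp
    have "z_poly N p lam w x = (\<Sum>y\<in>preds N x. z_poly N p lam w y) * w x" by (rule z_rec[OF xs nx])
    also have "(\<Sum>y\<in>preds N x. z_poly N p lam w y) = (\<Sum>i\<in>Iset. z_poly N p lam w (r0 i))"
      unfolding pr by (rule sum.reindex[OF inj, unfolded comp_def])
    also have "\<dots> = (\<Sum>i\<in>Iset. exp (hvec N p r0 lam w i))"
    proof (intro sum.cong refl)
      fix i assume "i \<in> Iset"
      then have i: "i \<le> N" using Is by auto
      then show "z_poly N p lam w (r0 i) = exp (hvec N p r0 lam w i)"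
        unfolding hvec_def free_energy_def using zpos[OF i] by simp
    qed
    finally have zx: "z_poly N p lam w x = (\<Sum>i\<in>Iset. exp (hvec N p r0 lam w i)) * w x" .
    have Spos: "(\<Sum>i\<in>Iset. exp (hvec N p r0 lam w i)) > 0" using fI Is(2) by (intro sum_pos) auto
    have wx: "w x > 0" using wpos xs by auto
    show ?thesis using True d zx Spos wx unfolding hvec_def free_energy_def r by (simp add: ln_mult)
  qed
qed


lemma coord_meas: "k \<le> N \<Longrightarrow> (\<lambda>l. l k) \<in> borel_measurable (LB N)"
  using measurable_component_singleton[of k "{..N}" "\<lambda>_. lborel"] by simp

lemma corner_move:
  assumes N: "N \<ge> 1"
    and aa: "\<And>i j. i \<in> {1..N} \<Longrightarrow> j \<in> {1..N} \<Longrightarrow> \<alpha> i + \<alpha> j > 0"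
    and au: "\<And>i. i \<in> {1..N} \<Longrightarrow> \<alpha> i + u > 0"
    and av: "\<And>i. i \<in> {1..N} \<Longrightarrow> \<alpha> i + v > 0"
    and P: "down_right_path N p" and R0: "down_right_path N r0"
    and ge: "\<And>j. j \<le> N \<Longrightarrow> snd (p j) \<le> snd (r0 j)"
    and d: "0 < d" "d < N"
    and c1: "r0 (d - 1) = (fst (r0 d), snd (r0 d) + 1)"
    and c2: "r0 (d + 1) = (fst (r0 d) + 1, snd (r0 d))"
    and r: "r = r0(d := (fst (r0 d) + 1, snd (r0 d) + 1))"
    and IH: "Claim N \<alpha> u v p r0"
  shows "Claim N \<alpha> u v p r"
proof -
  define x where "x = (fst (r0 d) + 1, snd (r0 d) + 1)"
  define Lf where "Lf l = ln (exp (l (d - 1)) + exp (l (d + 1)))" for l :: "nat \<Rightarrow> real"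
  have fd: "fst (r0 d) = snd (r0 d) + d" using drp_fst[OF R0] d by auto
  have xs: "x \<in> strip N" unfolding x_def strip_def using fd d by auto
  have dN: "d \<le> N" using d by simp
  have Lm: "Lf \<in> borel_measurable (LB N)"
  proof -
    have em: "(exp :: real \<Rightarrow> real) \<in> borel_measurable borel" by (intro borel_measurable_continuous_onI continuous_intros)
    have lnm: "(ln :: real \<Rightarrow> real) \<in> borel_measurable borel" by measurable
    have m1: "(\<lambda>l. l (d - 1)) \<in> borel_measurable (LB N)" "(\<lambda>l. l (d + 1)) \<in> borel_measurable (LB N)"
      using coord_meas[of "d - 1" N] coord_meas[of "d + 1" N] d by auto
    have "(\<lambda>l. exp (l (d - 1)) + exp (l (d + 1))) \<in> borel_measurable (LB N)"
      by (intro borel_measurable_add measurable_compose[OF m1(1) em] measurable_compose[OF m1(2) em])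
    then show ?thesis unfolding Lf_def by (rule measurable_compose[OF _ lnm])
  qed
  have Lj: "Lf (l(d:=t)) = Lf l" for l t
  proof -
    have "d - 1 \<noteq> d" using d by simp
    then show ?thesis unfolding Lf_def by simp
  qed
  have pr: "preds N x = r0 ` {d - 1, d + 1}"
  proof -
    have s1: "r0 (d - 1) \<in> strip N" "r0 (d + 1) \<in> strip N" using drp_in_strip[OF R0] d by auto
    show ?thesis unfolding preds_def x_def using s1 c1 c2 by auto
  qed
  have inj: "inj_on r0 {d - 1, d + 1}" using c1 c2 d by (auto simp: inj_on_def)
  have hrel: "hvec N p r lam w = (hvec N p r0 lam w)(d := Lf (hvec N p r0 lam w) + ln (w x))"
    if lam: "lam \<in> space (LB N)" and wpos: "\<forall>y\<in>strip N. w y > 0" for lam w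
  proof -
    have "hvec N p r lam w = (hvec N p r0 lam w)(d := ln (\<Sum>i\<in>{d - 1, d + 1}. exp (hvec N p r0 lam w i)) + ln (w x))"
      by (rule hrel_gen[OF N P R0 ge dN x_def r[folded x_def] xs _ _ inj pr lam wpos]) (use d in auto)
    moreover have "(\<Sum>i\<in>{d - 1, d + 1}. exp (hvec N p r0 lam w i)) = exp (hvec N p r0 lam w (d - 1)) + exp (hvec N p r0 lam w (d + 1))"
      using d by simp
    ultimately show ?thesis unfolding Lf_def by simp
  qed
  have AB: "alpha_ext N \<alpha> (snd (r0 (d - 1))) + alpha_ext N \<alpha> (fst (r0 (d + 1))) > 0"
    using alpha_ext_range[OF N, of \<alpha> "snd (r0 (d - 1))"] alpha_ext_range[OF N, of \<alpha> "fst (r0 (d + 1))"] aa by auto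
  have rd: "r d = x" unfolding r x_def by simp
  show ?thesis
  proof (rule move_step[OF N aa au av P dN xs Lm Lj hrel hind_gen[OF R0 dN x_def] refl _ IH])
    fix l m x'
    show "(\<integral>\<^sup>+s. (\<integral>\<^sup>+y. ennreal (wt_GP N \<alpha> u v r0 (l(d:=s)) (m(d:=y))) \<partial>lborel) \<partial>lborel)
                 * ennreal (f_theta (weight_param N \<alpha> u v x) (x' - Lf l) / Gamma (weight_param N \<alpha> u v x))
               = (\<integral>\<^sup>+y. ennreal (wt_GP N \<alpha> u v r (l(d:=x')) (m(d:=y))) \<partial>lborel)"
      using corner_key[OF R0 d c1 c2 r AB, of u v l m x'] unfolding rd Lf_def .
  qed
qed

lemma left_move:
  assumes N: "N \<ge> 1"
    and aa: "\<And>i j. i \<in> {1..N} \<Longrightarrow> j \<in> {1..N} \<Longrightarrow> \<alpha> i + \<alpha> j > 0"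
    and au: "\<And>i. i \<in> {1..N} \<Longrightarrow> \<alpha> i + u > 0"
    and av: "\<And>i. i \<in> {1..N} \<Longrightarrow> \<alpha> i + v > 0"
    and P: "down_right_path N p" and R0: "down_right_path N r0"
    and ge: "\<And>j. j \<le> N \<Longrightarrow> snd (p j) \<le> snd (r0 j)"
    and c2: "r0 1 = (fst (r0 0) + 1, snd (r0 0))"
    and r: "r = r0(0 := (fst (r0 0) + 1, snd (r0 0) + 1))"
    and IH: "Claim N \<alpha> u v p r0"
  shows "Claim N \<alpha> u v p r"
proof -
  define x where "x = (fst (r0 0) + 1, snd (r0 0) + 1)"
  define Lf where "Lf l = l 1" for l :: "nat \<Rightarrow> real"
  have f0: "fst (r0 0) = snd (r0 0)" using drp_fst[OF R0, of 0] by simp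
  have xs: "x \<in> strip N" unfolding x_def strip_def using f0 by auto
  have dN: "0 \<le> N" by simp
  have Lm: "Lf \<in> borel_measurable (LB N)"
    unfolding Lf_def using coord_meas[of 1 N] N by simp
  have Lj: "Lf (l(0:=t)) = Lf l" for l t unfolding Lf_def by simp
  have pr: "preds N x = r0 ` {1}"
  proof -
    have s1: "r0 1 \<in> strip N" using drp_in_strip[OF R0] N by auto
    show ?thesis unfolding preds_def x_def using s1 c2 f0 by (auto simp: strip_def)
  qed
  have hrel: "hvec N p r lam w = (hvec N p r0 lam w)(0 := Lf (hvec N p r0 lam w) + ln (w x))"
    if lam: "lam \<in> space (LB N)" and wpos: "\<forall>y\<in>strip N. w y > 0" for lam w
  proof -
    have "hvec N p r lam w = (hvec N p r0 lam w)(0 := ln (\<Sum>i\<in>{1}. exp (hvec N p r0 lam w i)) + ln (w x))"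
      by (rule hrel_gen[OF N P R0 ge dN x_def r[folded x_def] xs _ _ _ pr lam wpos]) (use N in auto)
    then show ?thesis unfolding Lf_def by simp
  qed
  have Bu: "alpha_ext N \<alpha> (fst (r0 1)) + u > 0"
    using alpha_ext_range[OF N, of \<alpha> "fst (r0 1)"] au by auto
  have rd: "r 0 = x" unfolding r x_def by simp
  show ?thesis
  proof (rule move_step[OF N aa au av P dN xs Lm Lj hrel hind_gen[OF R0 dN x_def] refl _ IH])
    fix l m x'
    show "(\<integral>\<^sup>+s. (\<integral>\<^sup>+y. ennreal (wt_GP N \<alpha> u v r0 (l(0:=s)) (m(0:=y))) \<partial>lborel) \<partial>lborel)
                 * ennreal (f_theta (weight_param N \<alpha> u v x) (x' - Lf l) / Gamma (weight_param N \<alpha> u v x))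
               = (\<integral>\<^sup>+y. ennreal (wt_GP N \<alpha> u v r (l(0:=x')) (m(0:=y))) \<partial>lborel)"
      using left_key[OF R0 N c2 r Bu, of v l m x'] unfolding rd Lf_def .
  qed
qed

lemma right_move:
  assumes N: "N \<ge> 1"
    and aa: "\<And>i j. i \<in> {1..N} \<Longrightarrow> j \<in> {1..N} \<Longrightarrow> \<alpha> i + \<alpha> j > 0"
    and au: "\<And>i. i \<in> {1..N} \<Longrightarrow> \<alpha> i + u > 0"
    and av: "\<And>i. i \<in> {1..N} \<Longrightarrow> \<alpha> i + v > 0"
    and P: "down_right_path N p" and R0: "down_right_path N r0"
    and ge: "\<And>j. j \<le> N \<Longrightarrow> snd (p j) \<le> snd (r0 j)"
    and c1: "r0 (N - 1) = (fst (r0 N), snd (r0 N) + 1)"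
    and r: "r = r0(N := (fst (r0 N) + 1, snd (r0 N) + 1))"
    and IH: "Claim N \<alpha> u v p r0"
  shows "Claim N \<alpha> u v p r"
proof -
  define x where "x = (fst (r0 N) + 1, snd (r0 N) + 1)"
  define Lf where "Lf l = l (N - 1)" for l :: "nat \<Rightarrow> real"
  have fN: "fst (r0 N) = snd (r0 N) + N" using drp_fst[OF R0, of N] by simp
  have xs: "x \<in> strip N" unfolding x_def strip_def using fN by auto
  have dN: "N \<le> N" by simp
  have Lm: "Lf \<in> borel_measurable (LB N)"
    unfolding Lf_def using coord_meas[of "N - 1" N] by simp
  have Lj: "Lf (l(N:=t)) = Lf l" for l t
  proof -
    have "N - 1 \<noteq> N" using N by simp
    then show ?thesis unfolding Lf_def by simp
  qed
  have pr: "preds N x = r0 ` {N - 1}"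
  proof -
    have s1: "r0 (N - 1) \<in> strip N" using drp_in_strip[OF R0] by auto
    show ?thesis unfolding preds_def x_def using s1 c1 fN by (auto simp: strip_def)
  qed
  have hrel: "hvec N p r lam w = (hvec N p r0 lam w)(N := Lf (hvec N p r0 lam w) + ln (w x))"
    if lam: "lam \<in> space (LB N)" and wpos: "\<forall>y\<in>strip N. w y > 0" for lam w
  proof -
    have "hvec N p r lam w = (hvec N p r0 lam w)(N := ln (\<Sum>i\<in>{N - 1}. exp (hvec N p r0 lam w i)) + ln (w x))"
      by (rule hrel_gen[OF N P R0 ge dN x_def r[folded x_def] xs _ _ _ pr lam wpos]) auto
    then show ?thesis unfolding Lf_def by simp
  qed
  have Av: "alpha_ext N \<alpha> (snd (r0 (N - 1))) + v > 0"
    using alpha_ext_range[OF N, of \<alpha> "snd (r0 (N - 1))"] av by auto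
  have rd: "r N = x" unfolding r x_def by simp
  show ?thesis
  proof (rule move_step[OF N aa au av P dN xs Lm Lj hrel hind_gen[OF R0 dN x_def] refl _ IH])
    fix l m x'
    show "(\<integral>\<^sup>+s. (\<integral>\<^sup>+y. ennreal (wt_GP N \<alpha> u v r0 (l(N:=s)) (m(N:=y))) \<partial>lborel) \<partial>lborel)
                 * ennreal (f_theta (weight_param N \<alpha> u v x) (x' - Lf l) / Gamma (weight_param N \<alpha> u v x))
               = (\<integral>\<^sup>+y. ennreal (wt_GP N \<alpha> u v r (l(N:=x')) (m(N:=y))) \<partial>lborel)"
      using right_key[OF R0 N c1 r Av, of u l m x'] unfolding rd Lf_def .
  qed
qed


lemma lower_exists:
  assumes N: "N \<ge> 1" and P: "down_right_path N p" and R: "down_right_path N r"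
    and ge: "\<And>j. j \<le> N \<Longrightarrow> snd (p j) \<le> snd (r j)"
    and ne: "\<exists>j\<le>N. snd (p j) < snd (r j)"
  shows "\<exists>r0 d. down_right_path N r0 \<and> (\<forall>j\<le>N. snd (p j) \<le> snd (r0 j)) \<and>
     (\<Sum>j\<le>N. snd (r0 j)) < (\<Sum>j\<le>N. snd (r j)) \<and>
     ((0 < d \<and> d < N \<and> r0 (d - 1) = (fst (r0 d), snd (r0 d) + 1) \<and> r0 (d + 1) = (fst (r0 d) + 1, snd (r0 d))
        \<and> r = r0(d := (fst (r0 d) + 1, snd (r0 d) + 1)))
      \<or> (r0 1 = (fst (r0 0) + 1, snd (r0 0)) \<and> r = r0(0 := (fst (r0 0) + 1, snd (r0 0) + 1)))
      \<or> (r0 (N - 1) = (fst (r0 N), snd (r0 N) + 1) \<and> r = r0(N := (fst (r0 N) + 1, snd (r0 N) + 1))))"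
proof -
  define D where "D = {j. j \<le> N \<and> snd (p j) < snd (r j)}"
  define val where "val j = 2 * snd (r j) + j" for j
  have fD: "finite D" unfolding D_def by auto
  have neD: "D \<noteq> {}" using ne unfolding D_def by auto
  define M where "M = Max (val ` D)"
  have "M \<in> val ` D" unfolding M_def using fD neD by (intro Max_in) auto
  then obtain d where dD: "d \<in> D" and dM: "val d = M" by auto
  have maxd: "val j \<le> val d" if "j \<in> D" for j
    using Max_ge[of "val ` D" "val j"] fD that dM unfolding M_def by auto
  have dN: "d \<le> N" and lt: "snd (p d) < snd (r d)" using dD unfolding D_def by auto
  define m where "m = snd (r d)"
  have m1: "m \<ge> 1" using lt unfolding m_def by simp
  have rd: "r d = (m + d, m)" using drp_pair[OF R dN] unfolding m_def by simp
  have a: "r (d + 1) = (m + d, m - 1)" if "d < N"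
  proof -
    have d1: "d + 1 \<le> N" using that by simp
    have st: "(snd (r (d+1)) = snd (r d) \<and> horizontal r (d+1)) \<or> (snd (r (d+1)) + 1 = snd (r d) \<and> \<not> horizontal r (d+1))"
      using drp_step[OF R _ d1] by simp
    have "snd (r (d+1)) + 1 = snd (r d)"
    proof (rule ccontr)
      assume "snd (r (d+1)) + 1 \<noteq> snd (r d)"
      then have eq: "snd (r (d+1)) = snd (r d)" using st by auto
      have "snd (p (d+1)) \<le> snd (p d)" using drp_snd_mono[OF P, of d "d+1"] d1 by simp
      then have "d + 1 \<in> D" using eq lt d1 unfolding D_def by auto
      then have "val (d+1) \<le> val d" by (rule maxd)
      then show False using eq unfolding val_def by simp
    qed
    then have "snd (r (d+1)) = m - 1" unfolding m_def by simp
    moreover have "r (d+1) = (snd (r (d+1)) + (d+1), snd (r (d+1)))" by (rule drp_pair[OF R d1])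
    ultimately show ?thesis using m1 by simp
  qed
  have b: "r (d - 1) = (m + d - 1, m)" if "0 < d"
  proof -
    have d1: "1 \<le> d" using that by simp
    have st: "(snd (r d) = snd (r (d-1)) \<and> horizontal r d) \<or> (snd (r d) + 1 = snd (r (d-1)) \<and> \<not> horizontal r d)"
      using drp_step[OF R d1 dN] .
    have "snd (r (d-1)) = snd (r d)"
    proof (rule ccontr)
      assume "snd (r (d-1)) \<noteq> snd (r d)"
      then have eq: "snd (r (d-1)) = snd (r d) + 1" using st by auto
      have "snd (p (d-1)) \<le> snd (p d) + 1" using drp_snd_prev[OF P d1 dN] .
      then have "d - 1 \<in> D" using eq lt dN unfolding D_def by auto
      then have "val (d-1) \<le> val d" by (rule maxd)
      then show False using eq d1 unfolding val_def by simp
    qed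
    moreover have "d - 1 \<le> N" using dN by simp
    ultimately show ?thesis using drp_pair[OF R, of "d - 1"] d1 unfolding m_def by auto
  qed
  define r0 where "r0 = r(d := (m + d - 1, m - 1))"
  have r0d: "r0 d = (m + d - 1, m - 1)" unfolding r0_def by simp
  have rback: "r = r0(d := (fst (r0 d) + 1, snd (r0 d) + 1))"
    unfolding r0_def using rd m1 by (auto simp: fun_eq_iff)
  have R0: "down_right_path N r0"
    unfolding down_right_path_def
  proof (intro conjI ballI)
    show "fst (r0 0) = snd (r0 0)"
    proof (cases "d = 0")
      case True then show ?thesis using r0d by simp
    next
      case False then show ?thesis unfolding r0_def using R unfolding down_right_path_def by simp
    qed
    fix j assume j: "j \<in> {1..N}"
    show "r0 j = (fst (r0 (j - 1)) + 1, snd (r0 (j - 1))) \<or> (snd (r0 (j - 1)) \<ge> 1 \<and> r0 j = (fst (r0 (j - 1)), snd (r0 (j - 1)) - 1))"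
    proof (cases "j = d")
      case True
      then have d0: "0 < d" using j by auto
      have "r0 (j - 1) = (m + d - 1, m)" using b[OF d0] True d0 unfolding r0_def by simp
      then show ?thesis using True r0d m1 by simp
    next
      case False
      show ?thesis
      proof (cases "j = d + 1")
        case True
        then have dlt: "d < N" using j by auto
        have "r0 j = (m + d, m - 1)" using a[OF dlt] True unfolding r0_def by simp
        moreover have "r0 (j - 1) = (m + d - 1, m - 1)" using True r0d by simp
        ultimately show ?thesis using m1 by simp
      next
        case False2: False
        have "r0 j = r j" "r0 (j - 1) = r (j - 1)" using False False2 unfolding r0_def by auto
        then show ?thesis using R j unfolding down_right_path_def by simp
      qed
    qed
  qed
  have ge0: "\<forall>j\<le>N. snd (p j) \<le> snd (r0 j)"
  proof (intro allI impI)
    fix j assume "j \<le> N"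
    then show "snd (p j) \<le> snd (r0 j)" using ge lt unfolding r0_def m_def by (cases "j = d") auto
  qed
  have sum_lt: "(\<Sum>j\<le>N. snd (r0 j)) < (\<Sum>j\<le>N. snd (r j))"
  proof (rule sum_strict_mono_ex1)
    show "finite {..N}" by simp
    show "\<forall>j\<in>{..N}. snd (r0 j) \<le> snd (r j)" unfolding r0_def m_def by auto
    show "\<exists>j\<in>{..N}. snd (r0 j) < snd (r j)" using dN m1 unfolding r0_def m_def by (intro bexI[of _ d]) auto
  qed
  have cfg: "(0 < d \<and> d < N \<and> r0 (d - 1) = (fst (r0 d), snd (r0 d) + 1) \<and> r0 (d + 1) = (fst (r0 d) + 1, snd (r0 d))
        \<and> r = r0(d := (fst (r0 d) + 1, snd (r0 d) + 1)))
      \<or> (r0 1 = (fst (r0 0) + 1, snd (r0 0)) \<and> r = r0(0 := (fst (r0 0) + 1, snd (r0 0) + 1)))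
      \<or> (r0 (N - 1) = (fst (r0 N), snd (r0 N) + 1) \<and> r = r0(N := (fst (r0 N) + 1, snd (r0 N) + 1)))"
  proof (cases "d = 0")
    case True
    have "r0 1 = r 1" unfolding r0_def using True by simp
    also have "\<dots> = (m, m - 1)" using a True N by simp
    finally have "r0 1 = (fst (r0 0) + 1, snd (r0 0))" using r0d True m1 by simp
    then show ?thesis using rback True by simp
  next
    case False
    then have d0: "0 < d" by simp
    show ?thesis
    proof (cases "d = N")
      case True
      have "N - 1 \<noteq> d" using True d0 by simp
      then have "r0 (N - 1) = r (N - 1)" unfolding r0_def by simp
      also have "\<dots> = (m + d - 1, m)" using b[OF d0] True by simp
      finally have "r0 (N - 1) = (fst (r0 N), snd (r0 N) + 1)" using r0d True m1 by simp
      then show ?thesis using rback True by simp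
    next
      case False
      then have dlt: "d < N" using dN by simp
      have "r0 (d - 1) = (fst (r0 d), snd (r0 d) + 1)" using b[OF d0] r0d m1 d0 unfolding r0_def by simp
      moreover have "r0 (d + 1) = (fst (r0 d) + 1, snd (r0 d))" using a[OF dlt] r0d m1 d0 unfolding r0_def by simp
      ultimately show ?thesis using rback d0 dlt by simp
    qed
  qed
  show ?thesis using R0 ge0 sum_lt cfg by blast
qed


lemma wt_GP_cong:
  assumes "\<And>j. j \<le> N \<Longrightarrow> r j = p j"
  shows "wt_GP N \<alpha> u v r = wt_GP N \<alpha> u v p"
proof (intro ext)
  fix l m
  have "Tf N \<alpha> r k = Tf N \<alpha> p k" if "k \<in> {1..N}" for k
    using that assms by (intro Tf_same) auto
  then have "(\<Prod>k\<in>{1..N}. Tf N \<alpha> r k l m) = (\<Prod>k\<in>{1..N}. Tf N \<alpha> p k l m)"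
    by (intro prod.cong refl) auto
  then show "wt_GP N \<alpha> u v r l m = wt_GP N \<alpha> u v p l m"
    unfolding wt_GP_Tf by simp
qed

lemma claim_base:
  assumes N: "N \<ge> 1"
    and aa: "\<And>i j. i \<in> {1..N} \<Longrightarrow> j \<in> {1..N} \<Longrightarrow> \<alpha> i + \<alpha> j > 0"
    and au: "\<And>i. i \<in> {1..N} \<Longrightarrow> \<alpha> i + u > 0"
    and av: "\<And>i. i \<in> {1..N} \<Longrightarrow> \<alpha> i + v > 0"
    and P: "down_right_path N p"
    and eq: "\<And>j. j \<le> N \<Longrightarrow> r j = p j"
  shows "Claim N \<alpha> u v p r"
  unfolding Claim_def
proof (intro ballI)
  fix F :: "(nat \<Rightarrow> real) \<Rightarrow> ennreal" assume Fm: "F \<in> borel_measurable (LB N)"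
  have pos: "\<And>y. weight_param N \<alpha> u v y > 0" by (rule weight_param_pos[OF N]) (auto intro: aa au av)
  interpret W: prob_space "weight_measure N \<alpha> u v"
    unfolding weight_measure_def using pos prob_inv_gamma by (intro prob_space_PiM) auto
  have h: "hvec N p r lam w = lam" if lam: "lam \<in> space (LB N)" for lam w
  proof -
    have "hvec N p r lam w = restrict lam {..N}"
      unfolding hvec_def free_energy_def
      by (intro restrict_ext) (simp add: eq z_on_path[OF P])
    also have "\<dots> = lam" using lam by (simp add: space_PiM restrict_PiE_iff extensional_restrict PiE_def)
    finally show ?thesis .
  qed
  have wt: "wt_P N \<alpha> u v r = wt_P N \<alpha> u v p" unfolding wt_P_def using wt_GP_cong[OF eq] by simp
  show "(\<integral>\<^sup>+lam. (\<integral>\<^sup>+w. F (hvec N p r lam w) \<partial>weight_measure N \<alpha> u v) * wt_P N \<alpha> u v p lam \<partial>LB N)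
      = (\<integral>\<^sup>+lam. F lam * wt_P N \<alpha> u v r lam \<partial>LB N)"
    unfolding wt by (intro nn_integral_cong) (simp add: h W.emeasure_space_1)
qed

lemma claim_all:
  assumes N: "N \<ge> 1"
    and aa: "\<And>i j. i \<in> {1..N} \<Longrightarrow> j \<in> {1..N} \<Longrightarrow> \<alpha> i + \<alpha> j > 0"
    and au: "\<And>i. i \<in> {1..N} \<Longrightarrow> \<alpha> i + u > 0"
    and av: "\<And>i. i \<in> {1..N} \<Longrightarrow> \<alpha> i + v > 0"
    and P: "down_right_path N p"
  shows "down_right_path N r \<Longrightarrow> (\<And>j. j \<le> N \<Longrightarrow> snd (p j) \<le> snd (r j)) \<Longrightarrow> Claim N \<alpha> u v p r"
proof (induction "\<Sum>j\<le>N. snd (r j)" arbitrary: r rule: less_induct)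
  case less
  show ?case
  proof (cases "\<exists>j\<le>N. snd (p j) < snd (r j)")
    case False
    then have "snd (r j) = snd (p j)" if "j \<le> N" for j using less.prems(2)[OF that] that by force
    then have eqf: "r j = p j" if "j \<le> N" for j
      using drp_pair[OF less.prems(1) that] drp_pair[OF P that] that by (metis)
    show ?thesis by (rule claim_base[where \<alpha>=\<alpha> and u=u and v=v and r=r, OF N aa au av P eqf])
  next
    case True
    obtain r0 d where R0: "down_right_path N r0" and ge0: "\<forall>j\<le>N. snd (p j) \<le> snd (r0 j)"
      and lt: "(\<Sum>j\<le>N. snd (r0 j)) < (\<Sum>j\<le>N. snd (r j))"
      and cfg: "(0 < d \<and> d < N \<and> r0 (d - 1) = (fst (r0 d), snd (r0 d) + 1) \<and> r0 (d + 1) = (fst (r0 d) + 1, snd (r0 d))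
        \<and> r = r0(d := (fst (r0 d) + 1, snd (r0 d) + 1)))
      \<or> (r0 1 = (fst (r0 0) + 1, snd (r0 0)) \<and> r = r0(0 := (fst (r0 0) + 1, snd (r0 0) + 1)))
      \<or> (r0 (N - 1) = (fst (r0 N), snd (r0 N) + 1) \<and> r = r0(N := (fst (r0 N) + 1, snd (r0 N) + 1)))"
      using lower_exists[OF N P less.prems(1) less.prems(2) True] by blast
    have ge0': "\<And>j. j \<le> N \<Longrightarrow> snd (p j) \<le> snd (r0 j)" using ge0 by auto
    have IH: "Claim N \<alpha> u v p r0" using less.hyps[OF lt R0 ge0'] .
    from cfg show ?thesis
    proof (elim disjE conjE)
      assume "0 < d" "d < N" "r0 (d - 1) = (fst (r0 d), snd (r0 d) + 1)" "r0 (d + 1) = (fst (r0 d) + 1, snd (r0 d))"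
        "r = r0(d := (fst (r0 d) + 1, snd (r0 d) + 1))"
      then show ?thesis using corner_move[where \<alpha>=\<alpha> and u=u and v=v, OF N aa au av P R0 ge0'] IH by blast
    next
      assume "r0 1 = (fst (r0 0) + 1, snd (r0 0))" "r = r0(0 := (fst (r0 0) + 1, snd (r0 0) + 1))"
      then show ?thesis using left_move[where \<alpha>=\<alpha> and u=u and v=v, OF N aa au av P R0 ge0'] IH by blast
    next
      assume "r0 (N - 1) = (fst (r0 N), snd (r0 N) + 1)" "r = r0(N := (fst (r0 N) + 1, snd (r0 N) + 1))"
      then show ?thesis using right_move[where \<alpha>=\<alpha> and u=u and v=v, OF N aa au av P R0 ge0'] IH by blast
    qed
  qed
qed

lemma part1:
  assumes N: "N \<ge> 1"
    and aa: "\<And>i j. i \<in> {1..N} \<Longrightarrow> j \<in> {1..N} \<Longrightarrow> \<alpha> i + \<alpha> j > 0"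
    and au: "\<And>i. i \<in> {1..N} \<Longrightarrow> \<alpha> i + u > 0"
    and av: "\<And>i. i \<in> {1..N} \<Longrightarrow> \<alpha> i + v > 0"
    and P: "down_right_path N p" and Q: "down_right_path N q"
    and QP: "path_above N p q"
  shows "Claim N \<alpha> u v p q"
proof (rule claim_all[where \<alpha>=\<alpha> and u=u and v=v, OF N aa au av P Q])
  fix j assume j: "j \<le> N"
  have "abv N p (q j)" using above_abv[OF P] QP j unfolding path_above_def by auto
  then show "snd (p j) \<le> snd (q j)" unfolding abv_def using drp_fst[OF Q j] by simp
qed


lemma shift_inv:
  fixes I :: "nat set"
  assumes fin: "finite I"
  shows "g \<in> borel_measurable (PiM I (\<lambda>_. lborel :: real measure)) \<Longrightarrow>
    (\<integral>\<^sup>+x. g (restrict (\<lambda>j. x j + c) I) \<partial>PiM I (\<lambda>_. lborel)) = (\<integral>\<^sup>+x. g x \<partial>PiM I (\<lambda>_. lborel))"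
  using fin
proof (induction I arbitrary: g rule: finite_induct)
  case empty
  interpret P: product_sigma_finite "\<lambda>_. lborel :: real measure" by (rule psf_lborel)
  show ?case
  proof (intro nn_integral_cong)
    fix x :: "nat \<Rightarrow> real" assume "x \<in> space (PiM {} (\<lambda>_. lborel :: real measure))"
    then have "x = (\<lambda>k. undefined)" by (simp add: space_PiM)
    moreover have "restrict (\<lambda>j. x j + c) ({}::nat set) = (\<lambda>k. undefined)" by auto
    ultimately show "g (restrict (\<lambda>j. x j + c) ({}::nat set)) = g x" by simp
  qed
next
  case (insert i I)
  interpret P: product_sigma_finite "\<lambda>_. lborel :: real measure" by (rule psf_lborel)
  interpret SI: sigma_finite_measure "PiM I (\<lambda>_. lborel :: real measure)" using insert by (intro sf_LB) auto
  note gm[measurable] = insert.prems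
  have sh: "(\<lambda>x. restrict (\<lambda>j. x j + c) (insert i I)) \<in> measurable (PiM (insert i I) (\<lambda>_. lborel)) (PiM (insert i I) (\<lambda>_. lborel))"
    by (intro measurable_restrict) auto
  have sh': "(\<lambda>x. restrict (\<lambda>j. x j + c) I) \<in> measurable (PiM I (\<lambda>_. lborel)) (PiM I (\<lambda>_. lborel))"
    by (intro measurable_restrict) auto
  define K where "K X = (\<integral>\<^sup>+y. g (X(i := y)) \<partial>lborel)" for X
  have upd: "(\<lambda>p. (fst p)(i := snd p)) \<in> measurable (PiM I (\<lambda>_. lborel) \<Otimes>\<^sub>M lborel) (PiM (insert i I) (\<lambda>_. lborel :: real measure))"
    using meas_upd[of fst "PiM I (\<lambda>_. lborel) \<Otimes>\<^sub>M lborel" I "\<lambda>_. lborel" snd i] by simp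
  have Km: "K \<in> borel_measurable (PiM I (\<lambda>_. lborel))"
    unfolding K_def using measurable_compose[OF upd gm]
    by (intro lborel.borel_measurable_nn_integral) (simp add: case_prod_beta')
  have "(\<integral>\<^sup>+x. g (restrict (\<lambda>j. x j + c) (insert i I)) \<partial>PiM (insert i I) (\<lambda>_. lborel))
      = (\<integral>\<^sup>+x. (\<integral>\<^sup>+y. g (restrict (\<lambda>j. (x(i := y)) j + c) (insert i I)) \<partial>lborel) \<partial>PiM I (\<lambda>_. lborel))"
    using insert.hyps by (subst P.product_nn_integral_insert) (auto intro: measurable_compose[OF sh gm])
  also have "\<dots> = (\<integral>\<^sup>+x. K (restrict (\<lambda>j. x j + c) I) \<partial>PiM I (\<lambda>_. lborel))"
  proof (intro nn_integral_cong)
    fix x assume x: "x \<in> space (PiM I (\<lambda>_. lborel :: real measure))"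
    let ?X = "restrict (\<lambda>j. x j + c) I"
    have X: "?X \<in> space (PiM I (\<lambda>_. lborel :: real measure))" by (simp add: space_PiM)
    have eq: "restrict (\<lambda>j. (x(i := y)) j + c) (insert i I) = ?X(i := y + c)" for y
      using insert.hyps by (auto simp: fun_eq_iff)
    have hm: "(\<lambda>y. g (?X(i := y))) \<in> borel_measurable borel"
      using measurable_comp[OF measurable_component_update[OF X insert.hyps(2)] gm] by (simp add: comp_def)
    have "(\<integral>\<^sup>+y. g (?X(i := y + c)) \<partial>lborel) = (\<integral>\<^sup>+y. g (?X(i := y)) \<partial>lborel)"
      using nn_integral_real_affine[OF hm, of 1 c] by (simp add: add.commute)
    then show "(\<integral>\<^sup>+y. g (restrict (\<lambda>j. (x(i := y)) j + c) (insert i I)) \<partial>lborel) = K ?X"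
      unfolding K_def eq .
  qed
  also have "\<dots> = (\<integral>\<^sup>+x. K x \<partial>PiM I (\<lambda>_. lborel))" by (rule insert.IH[OF Km])
  also have "\<dots> = (\<integral>\<^sup>+x. g x \<partial>PiM (insert i I) (\<lambda>_. lborel))"
    unfolding K_def using insert.hyps by (subst P.product_nn_integral_insert) auto
  finally show ?case .
qed


abbreviation LB1 :: "nat \<Rightarrow> (nat \<Rightarrow> real) measure" where
  "LB1 N \<equiv> PiM {1..N} (\<lambda>_. lborel)"

definition rel :: "nat \<Rightarrow> (nat \<Rightarrow> real) \<Rightarrow> nat \<Rightarrow> real" where
  "rel N lam = restrict (\<lambda>j. lam j - lam 0) {1..N}"

definition shiftv :: "nat \<Rightarrow> real \<Rightarrow> (nat \<Rightarrow> real) \<Rightarrow> nat \<Rightarrow> real" where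
  "shiftv N c x = restrict (\<lambda>j. x j + c) {..N}"

lemma init_vec_meas: "init_vec \<in> measurable (LB1 N) (LB N)"
proof -
  have "init_vec = (\<lambda>L j. if j = 0 then 0 else L j)" unfolding init_vec_def by (auto simp: fun_eq_iff)
  moreover have "(\<lambda>L j. if j = 0 then 0 else L j) \<in> measurable (LB1 N) (LB N)"
  proof (rule measurable_PiM_single'[where f="\<lambda>j L. if j = 0 then 0 else L j"])
    fix j assume "j \<in> {..N}"
    then show "(\<lambda>L. if j = 0 then 0 else L j) \<in> measurable (LB1 N) lborel"
      by (cases "j = 0") auto
  next
    show "(\<lambda>L j. if j = 0 then 0 else L j) \<in> space (LB1 N) \<rightarrow> (\<Pi>\<^sub>E i\<in>{..N}. space lborel)"
      by (auto simp: space_PiM PiE_iff extensional_def)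
  qed
  ultimately show ?thesis by simp
qed

lemma rel_meas: "rel N \<in> measurable (LB N) (LB1 N)"
  unfolding rel_def by (intro measurable_restrict) auto

lemma rel_space: "rel N lam \<in> space (LB1 N)"
  unfolding rel_def by (simp add: space_PiM)

lemma shiftv_init_rel:
  assumes "lam \<in> space (LB N)"
  shows "lam = shiftv N (lam 0) (init_vec (rel N lam))"
  using assms unfolding shiftv_def init_vec_def rel_def
  by (auto simp: fun_eq_iff space_PiM PiE_def extensional_def)

lemma rel_shiftv: "rel N (shiftv N c X) = rel N X"
  unfolding rel_def shiftv_def by (auto simp: fun_eq_iff)

lemma DEC:
  assumes Gm: "(\<lambda>q. G (fst q) (snd q)) \<in> borel_measurable (LB1 N \<Otimes>\<^sub>M lborel)"
  shows "(\<integral>\<^sup>+lam. G (rel N lam) (lam 0) \<partial>LB N) = (\<integral>\<^sup>+L. (\<integral>\<^sup>+y. G L y \<partial>lborel) \<partial>LB1 N)"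
proof -
  interpret P: product_sigma_finite "\<lambda>_. lborel :: real measure" by (rule psf_lborel)
  interpret S1: sigma_finite_measure "LB1 N" by (intro sf_LB) auto
  interpret PL: pair_sigma_finite lborel "LB1 N" ..
  interpret PL2: pair_sigma_finite "LB1 N" lborel ..
  have ins: "{..N} = insert 0 {1..N}" by auto
  have Gc: "(\<lambda>z. G (f z) (g z)) \<in> borel_measurable M" if "f \<in> measurable M (LB1 N)" "g \<in> borel_measurable M" for M f g
    using measurable_compose[OF measurable_Pair[OF that(1), of g] Gm] that(2) by simp
  have m1: "(\<lambda>lam. G (rel N lam) (lam 0)) \<in> borel_measurable (PiM (insert 0 {1..N}) (\<lambda>_. lborel))"
    using Gc[OF rel_meas[of N], of "\<lambda>lam. lam 0"] ins by simp
  have "(\<integral>\<^sup>+lam. G (rel N lam) (lam 0) \<partial>LB N)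
      = (\<integral>\<^sup>+x. (\<integral>\<^sup>+y. G (rel N (x(0 := y))) ((x(0 := y)) 0) \<partial>lborel) \<partial>LB1 N)"
    unfolding ins by (rule P.product_nn_integral_insert[OF _ _ m1]) auto
  also have "\<dots> = (\<integral>\<^sup>+x. (\<integral>\<^sup>+y. G (restrict (\<lambda>j. x j + (- y)) {1..N}) y \<partial>lborel) \<partial>LB1 N)"
  proof (intro nn_integral_cong)
    fix x y :: "nat \<Rightarrow> real" and y' :: real
    have "rel N (x(0 := y')) = restrict (\<lambda>j. x j + (- y')) {1..N}" unfolding rel_def by (auto simp: fun_eq_iff)
    then show "G (rel N (x(0 := y'))) ((x(0 := y')) 0) = G (restrict (\<lambda>j. x j + (- y')) {1..N}) y'" by simp
  qed
  also have "\<dots> = (\<integral>\<^sup>+y. (\<integral>\<^sup>+x. G (restrict (\<lambda>j. x j + (- y)) {1..N}) y \<partial>LB1 N) \<partial>lborel)"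
  proof (rule PL.Fubini')
    have "(\<lambda>q. restrict (\<lambda>j. snd q j + (- fst q)) {1..N}) \<in> measurable (lborel \<Otimes>\<^sub>M LB1 N) (LB1 N)"
      by (intro measurable_restrict) auto
    then show "(\<lambda>(y, x). G (restrict (\<lambda>j. x j + - y) {1..N}) y) \<in> borel_measurable (lborel \<Otimes>\<^sub>M LB1 N)"
      using Gc[of _ "lborel \<Otimes>\<^sub>M LB1 N" fst] by (simp add: case_prod_beta')
  qed
  also have "\<dots> = (\<integral>\<^sup>+y. (\<integral>\<^sup>+L. G L y \<partial>LB1 N) \<partial>lborel)"
  proof (rule nn_integral_cong)
    fix y :: real
    have gm: "(\<lambda>L. G L y) \<in> borel_measurable (LB1 N)" using Gc[of "\<lambda>L. L" "LB1 N" "\<lambda>_. y"] by simp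
    show "(\<integral>\<^sup>+x. G (restrict (\<lambda>j. x j + (- y)) {1..N}) y \<partial>LB1 N) = (\<integral>\<^sup>+L. G L y \<partial>LB1 N)"
      using shift_inv[OF finite_atLeastAtMost gm, of "-y"] by simp
  qed
  also have "\<dots> = (\<integral>\<^sup>+L. (\<integral>\<^sup>+y. G L y \<partial>lborel) \<partial>LB1 N)"
    using Gm by (intro PL2.Fubini') (simp add: case_prod_beta')
  finally show ?thesis .
qed


lemma wt_GP_shift: "wt_GP N \<alpha> u v p (shiftv N c l) (shiftv N c m) = wt_GP N \<alpha> u v p l m"
proof -
  have ul: "up_idx p k \<le> N" "low_idx p k \<le> N" if "k \<in> {1..N}" for k
    using that unfolding up_idx_def low_idx_def by auto
  have "Tf N \<alpha> p k (shiftv N c l) (shiftv N c m) = Tf N \<alpha> p k l m" if "k \<in> {1..N}" for k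
    using ul[OF that] unfolding Tf_def shiftv_def by simp
  then have "(\<Prod>k\<in>{1..N}. Tf N \<alpha> p k (shiftv N c l) (shiftv N c m)) = (\<Prod>k\<in>{1..N}. Tf N \<alpha> p k l m)"
    by (intro prod.cong refl) auto
  moreover have "- u * (shiftv N c l 0 - shiftv N c m 0) - v * (shiftv N c l N - shiftv N c m N)
      = - u * (l 0 - m 0) - v * (l N - m N)" unfolding shiftv_def by simp
  ultimately show ?thesis unfolding wt_GP_Tf by simp
qed

lemma shiftv_meas: "shiftv N c \<in> measurable (LB N) (LB N)"
  unfolding shiftv_def by (intro measurable_restrict) auto

lemma wt_P_shift: "wt_P N \<alpha> u v p (shiftv N c l) = wt_P N \<alpha> u v p l"
proof -
  have gm: "(\<lambda>m. ennreal (wt_GP N \<alpha> u v p (shiftv N c l) m)) \<in> borel_measurable (LB N)"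
    using measurable_compose[OF measurable_Pair[OF measurable_const[of "shiftv N c l" "LB N"] measurable_ident_sets[OF refl]] wtGP_meas[of N \<alpha> u v p]]
    by (simp add: space_PiM shiftv_def)
  have "wt_P N \<alpha> u v p (shiftv N c l) = (\<integral>\<^sup>+m. ennreal (wt_GP N \<alpha> u v p (shiftv N c l) (restrict (\<lambda>j. m j + c) {..N})) \<partial>LB N)"
    unfolding wt_P_def using shift_inv[OF finite_atMost gm, of c] by simp
  also have "\<dots> = wt_P N \<alpha> u v p l"
    unfolding wt_P_def using wt_GP_shift[of N \<alpha> u v p c l] unfolding shiftv_def by simp
  finally show ?thesis .
qed

lemma wt_P_rel:
  assumes "lam \<in> space (LB N)"
  shows "wt_P N \<alpha> u v p lam = wt_P N \<alpha> u v p (init_vec (rel N lam))"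
  using wt_P_shift[of N \<alpha> u v p "lam 0" "init_vec (rel N lam)"] shiftv_init_rel[OF assms] by simp

lemma z_shift:
  assumes P: "down_right_path N p"
  shows "z_poly N p (shiftv N c lam) w x = exp c * z_poly N p lam w x"
  unfolding z_poly_def sum_distrib_left
proof (intro sum.cong refl)
  fix \<pi> assume \<pi>: "\<pi> \<in> polymer_paths N p x"
  have "(THE j. j \<le> N \<and> p j = hd \<pi>) \<le> N" by (rule pp_the[OF P \<pi>])
  then show "exp (shiftv N c lam (THE j. j \<le> N \<and> p j = hd \<pi>)) * (\<Prod>i = 1..<length \<pi>. w (\<pi> ! i))
      = exp c * (exp (lam (THE j. j \<le> N \<and> p j = hd \<pi>)) * (\<Prod>i = 1..<length \<pi>. w (\<pi> ! i)))"
    unfolding shiftv_def by (simp add: exp_add mult_ac)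
qed

lemma hvec_shift:
  assumes N: "N \<ge> 1" and P: "down_right_path N p" and Q: "down_right_path N q"
    and ge: "\<And>j. j \<le> N \<Longrightarrow> snd (p j) \<le> snd (q j)"
    and wpos: "\<forall>y\<in>strip N. w y > 0"
  shows "hvec N p q (shiftv N c lam) w = shiftv N c (hvec N p q lam w)"
  unfolding hvec_def shiftv_def free_energy_def
proof (intro restrict_ext)
  fix j assume j: "j \<in> {..N}"
  have "z_poly N p lam w (q j) > 0"
  proof (rule z_pos[OF N P])
    show "\<And>v. v \<in> strip N \<Longrightarrow> w v > 0" using wpos by auto
    show "abv N p (q j)" unfolding abv_def using drp_in_strip[OF Q] drp_fst[OF Q] ge j by simp
  qed
  then show "ln (z_poly N p (\<lambda>j\<in>{..N}. lam j + c) w (q j)) = (\<lambda>j\<in>{..N}. ln (z_poly N p lam w (q j))) j + c"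
    using z_shift[OF P, of c lam w "q j"] j unfolding shiftv_def by (simp add: ln_mult)
qed


lemma wt_P_meas: "wt_P N \<alpha> u v p \<in> borel_measurable (LB N)"
proof -
  interpret SN: sigma_finite_measure "LB N" by (intro sf_LB) auto
  show ?thesis unfolding wt_P_def
    using wtGP_meas[of N \<alpha> u v p] by (intro SN.borel_measurable_nn_integral) (simp add: case_prod_beta')
qed

lemma ind01_int: "(\<integral>\<^sup>+y. indicator {0..1::real} (t + y) \<partial>lborel) = 1"
proof -
  have "(\<integral>\<^sup>+y. (indicator {0..1::real} :: real \<Rightarrow> ennreal) y \<partial>lborel) = (\<integral>\<^sup>+y. (indicator {0..1::real} :: real \<Rightarrow> ennreal) (t + 1 * y) \<partial>lborel)"
    using nn_integral_real_affine[of "indicator {0..1::real} :: real \<Rightarrow> ennreal" 1 t] by simp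
  then show ?thesis by simp
qed

lemma K2:
  assumes N: "N \<ge> 1"
    and aa: "\<And>i j. i \<in> {1..N} \<Longrightarrow> j \<in> {1..N} \<Longrightarrow> \<alpha> i + \<alpha> j > 0"
    and au: "\<And>i. i \<in> {1..N} \<Longrightarrow> \<alpha> i + u > 0"
    and av: "\<And>i. i \<in> {1..N} \<Longrightarrow> \<alpha> i + v > 0"
    and P: "down_right_path N p" and Q: "down_right_path N q"
    and ge: "\<And>j. j \<le> N \<Longrightarrow> snd (p j) \<le> snd (q j)"
    and CL: "Claim N \<alpha> u v p q"
    and A: "A \<in> sets (LB1 N)"
  shows "(\<integral>\<^sup>+L. wt_P N \<alpha> u v p (init_vec L) * (\<integral>\<^sup>+w. indicator A (rel N (hvec N p q (init_vec L) w)) \<partial>weight_measure N \<alpha> u v) \<partial>LB1 N)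
       = (\<integral>\<^sup>+L. wt_P N \<alpha> u v q (init_vec L) * indicator A L \<partial>LB1 N)"
proof -
  let ?W = "weight_measure N \<alpha> u v"
  let ?Mw = "\<lambda>y. inv_gamma (weight_param N \<alpha> u v y)"
  have pos: "\<And>y. weight_param N \<alpha> u v y > 0" by (rule weight_param_pos[OF N]) (auto intro: aa au av)
  interpret W: prob_space ?W
    unfolding weight_measure_def using pos prob_inv_gamma by (intro prob_space_PiM) auto
  interpret WL: pair_sigma_finite lborel ?W ..
  interpret L1: sigma_finite_measure "LB1 N" by (intro sf_LB) auto
  have AEpos: "AE w in ?W. \<forall>y\<in>strip N. w y > 0" by (rule weight_AE_pos[OF pos])
  have Wdef: "?W = PiM (strip N) ?Mw" unfolding weight_measure_def ..
  define F :: "(nat \<Rightarrow> real) \<Rightarrow> ennreal" where "F lam = indicator A (rel N lam) * indicator {0..1::real} (lam 0)" for lam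
  have indA: "indicator A \<in> borel_measurable (LB1 N)" using A by simp
  have c0: "(\<lambda>lam. lam 0) \<in> borel_measurable (LB N)" using coord_meas[of 0 N] by simp
  have Fm: "(F :: (nat \<Rightarrow> real) \<Rightarrow> ennreal) \<in> borel_measurable (LB N)"
    unfolding F_def using rel_meas[of N] c0 A by measurable
  define hq where "hq L w = hvec N p q (init_vec L) w" for L w
  have hq_meas: "(\<lambda>k. hq (f k) (g k)) \<in> measurable K (LB N)"
    if fm: "f \<in> measurable K (LB1 N)" and gm: "g \<in> measurable K ?W" for K f g
    unfolding hq_def
  proof (rule hvec_meas[OF P])
    show "\<And>i. i \<in> strip N \<Longrightarrow> sets (?Mw i) = sets borel" by simp
    show "g \<in> measurable K (PiM (strip N) ?Mw)" using gm Wdef by simp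
    fix j assume j: "j \<le> N"
    have "(\<lambda>k. init_vec (f k)) \<in> measurable K (LB N)" using measurable_compose[OF fm init_vec_meas] by simp
    then show "(\<lambda>k. init_vec (f k) j) \<in> borel_measurable K"
      using measurable_compose[OF _ coord_meas[OF j]] by blast
  qed
  define G1 where "G1 L y = (\<integral>\<^sup>+w. indicator A (rel N (hq L w)) * indicator {0..1::real} (hq L w 0 + y) \<partial>?W) * wt_P N \<alpha> u v p (init_vec L)" for L y
  define G2 where "G2 L y = indicator A L * indicator {0..1::real} y * wt_P N \<alpha> u v q (init_vec L)" for L :: "nat \<Rightarrow> real" and y :: real
  have wtp: "(\<lambda>L. wt_P N \<alpha> u v r (init_vec L)) \<in> borel_measurable (LB1 N)" for r
    using measurable_compose[OF init_vec_meas wt_P_meas] by simp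
  have inner_m: "(\<lambda>z. indicator A (rel N (hq (fst (fst z)) (snd z))) * indicator {0..1::real} (hq (fst (fst z)) (snd z) 0 + snd (fst z)) :: ennreal)
      \<in> borel_measurable ((LB1 N \<Otimes>\<^sub>M lborel) \<Otimes>\<^sub>M ?W)"
  proof -
    have h: "(\<lambda>z. hq (fst (fst z)) (snd z)) \<in> measurable ((LB1 N \<Otimes>\<^sub>M lborel) \<Otimes>\<^sub>M ?W) (LB N)"
      by (rule hq_meas) auto
    have h1: "(\<lambda>z. rel N (hq (fst (fst z)) (snd z))) \<in> measurable ((LB1 N \<Otimes>\<^sub>M lborel) \<Otimes>\<^sub>M ?W) (LB1 N)"
      using measurable_compose[OF h rel_meas] by simp
    have h2: "(\<lambda>z. hq (fst (fst z)) (snd z) 0) \<in> borel_measurable ((LB1 N \<Otimes>\<^sub>M lborel) \<Otimes>\<^sub>M ?W)"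
      using measurable_compose[OF h c0] by simp
    show ?thesis using h1 h2 A by measurable
  qed
  have G1m: "(\<lambda>z. G1 (fst z) (snd z)) \<in> borel_measurable (LB1 N \<Otimes>\<^sub>M lborel)"
  proof -
    have a: "(\<lambda>z. wt_P N \<alpha> u v p (init_vec (fst z))) \<in> borel_measurable (LB1 N \<Otimes>\<^sub>M lborel)"
      using measurable_compose[OF measurable_fst wtp] by simp
    have b: "(\<lambda>z. \<integral>\<^sup>+w. indicator A (rel N (hq (fst z) w)) * indicator {0..1::real} (hq (fst z) w 0 + snd z) \<partial>?W) \<in> borel_measurable (LB1 N \<Otimes>\<^sub>M lborel)"
      using inner_m by (intro W.borel_measurable_nn_integral) (simp add: case_prod_beta')
    show ?thesis unfolding G1_def using a b by measurable
  qed
  have G2m: "(\<lambda>z. G2 (fst z) (snd z)) \<in> borel_measurable (LB1 N \<Otimes>\<^sub>M lborel)"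
  proof -
    have a: "(\<lambda>z. wt_P N \<alpha> u v q (init_vec (fst z))) \<in> borel_measurable (LB1 N \<Otimes>\<^sub>M lborel)"
      using measurable_compose[OF measurable_fst wtp] by simp
    show ?thesis unfolding G2_def using a A by measurable
  qed
  have LHS: "(\<integral>\<^sup>+lam. (\<integral>\<^sup>+w. F (hvec N p q lam w) \<partial>?W) * wt_P N \<alpha> u v p lam \<partial>LB N) = (\<integral>\<^sup>+lam. G1 (rel N lam) (lam 0) \<partial>LB N)"
  proof (intro nn_integral_cong)
    fix lam assume lam: "lam \<in> space (LB N)"
    have "(\<integral>\<^sup>+w. F (hvec N p q lam w) \<partial>?W) = (\<integral>\<^sup>+w. indicator A (rel N (hq (rel N lam) w)) * indicator {0..1::real} (hq (rel N lam) w 0 + lam 0) \<partial>?W)"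
    proof (rule nn_integral_cong_AE)
      show "AE w in ?W. F (hvec N p q lam w) = indicator A (rel N (hq (rel N lam) w)) * indicator {0..1::real} (hq (rel N lam) w 0 + lam 0)"
        using AEpos
      proof (rule AE_mp, intro AE_I2 impI)
        fix w :: "nat \<times> nat \<Rightarrow> real" assume wpos: "\<forall>y\<in>strip N. w y > 0"
        have "hvec N p q lam w = hvec N p q (shiftv N (lam 0) (init_vec (rel N lam))) w"
          using shiftv_init_rel[OF lam] by simp
        also have "\<dots> = shiftv N (lam 0) (hq (rel N lam) w)"
          unfolding hq_def by (rule hvec_shift[OF N P Q ge wpos])
        finally have hs: "hvec N p q lam w = shiftv N (lam 0) (hq (rel N lam) w)" .
        show "F (hvec N p q lam w) = indicator A (rel N (hq (rel N lam) w)) * indicator {0..1::real} (hq (rel N lam) w 0 + lam 0)"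
          unfolding F_def hs rel_shiftv by (simp add: shiftv_def)
      qed
    qed
    then show "(\<integral>\<^sup>+w. F (hvec N p q lam w) \<partial>?W) * wt_P N \<alpha> u v p lam = G1 (rel N lam) (lam 0)"
      unfolding G1_def using wt_P_rel[OF lam] by simp
  qed
  have RHS: "(\<integral>\<^sup>+lam. F lam * wt_P N \<alpha> u v q lam \<partial>LB N) = (\<integral>\<^sup>+lam. G2 (rel N lam) (lam 0) \<partial>LB N)"
    unfolding F_def G2_def using wt_P_rel by (intro nn_integral_cong) simp
  have eq: "(\<integral>\<^sup>+L. (\<integral>\<^sup>+y. G1 L y \<partial>lborel) \<partial>LB1 N) = (\<integral>\<^sup>+L. (\<integral>\<^sup>+y. G2 L y \<partial>lborel) \<partial>LB1 N)"
  proof -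
    have c: "(\<integral>\<^sup>+lam. (\<integral>\<^sup>+w. F (hvec N p q lam w) \<partial>?W) * wt_P N \<alpha> u v p lam \<partial>LB N) = (\<integral>\<^sup>+lam. F lam * wt_P N \<alpha> u v q lam \<partial>LB N)"
      using CL Fm unfolding Claim_def by blast
    then have "(\<integral>\<^sup>+lam. G1 (rel N lam) (lam 0) \<partial>LB N) = (\<integral>\<^sup>+lam. G2 (rel N lam) (lam 0) \<partial>LB N)"
      unfolding LHS RHS .
    then show ?thesis unfolding DEC[OF G1m] DEC[OF G2m] .
  qed
  have I1: "(\<integral>\<^sup>+y. G1 L y \<partial>lborel) = wt_P N \<alpha> u v p (init_vec L) * (\<integral>\<^sup>+w. indicator A (rel N (hq L w)) \<partial>?W)"
    if L: "L \<in> space (LB1 N)" for L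
  proof -
    have m: "(\<lambda>z. indicator A (rel N (hq L (snd z))) * indicator {0..1::real} (hq L (snd z) 0 + fst z) :: ennreal) \<in> borel_measurable (lborel \<Otimes>\<^sub>M ?W)"
    proof -
      have h: "(\<lambda>z. hq L (snd z)) \<in> measurable (lborel \<Otimes>\<^sub>M ?W) (LB N)" using L by (intro hq_meas) auto
      have h1: "(\<lambda>z. rel N (hq L (snd z))) \<in> measurable (lborel \<Otimes>\<^sub>M ?W) (LB1 N)"
        using measurable_compose[OF h rel_meas] by simp
      have h2: "(\<lambda>z. hq L (snd z) 0) \<in> borel_measurable (lborel \<Otimes>\<^sub>M ?W)"
        using measurable_compose[OF h c0] by simp
      show ?thesis using h1 h2 A by measurable
    qed
    have "(\<integral>\<^sup>+y. G1 L y \<partial>lborel) = (\<integral>\<^sup>+y. (\<integral>\<^sup>+w. indicator A (rel N (hq L w)) * indicator {0..1::real} (hq L w 0 + y) \<partial>?W) \<partial>lborel) * wt_P N \<alpha> u v p (init_vec L)"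
      unfolding G1_def using m by (intro nn_integral_multc W.borel_measurable_nn_integral) (simp_all add: case_prod_beta')
    also have "(\<integral>\<^sup>+y. (\<integral>\<^sup>+w. indicator A (rel N (hq L w)) * indicator {0..1::real} (hq L w 0 + y) \<partial>?W) \<partial>lborel)
        = (\<integral>\<^sup>+w. (\<integral>\<^sup>+y. indicator A (rel N (hq L w)) * indicator {0..1::real} (hq L w 0 + y) \<partial>lborel) \<partial>?W)"
      using m by (intro WL.Fubini'[symmetric]) (simp add: case_prod_beta')
    also have "\<dots> = (\<integral>\<^sup>+w. indicator A (rel N (hq L w)) \<partial>?W)"
    proof (intro nn_integral_cong)
      fix w
      have "(\<integral>\<^sup>+y. indicator A (rel N (hq L w)) * indicator {0..1::real} (hq L w 0 + y) \<partial>lborel)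
          = indicator A (rel N (hq L w)) * (\<integral>\<^sup>+y. indicator {0..1::real} (hq L w 0 + y) \<partial>lborel)"
        by (intro nn_integral_cmult) simp
      then show "(\<integral>\<^sup>+y. indicator A (rel N (hq L w)) * indicator {0..1::real} (hq L w 0 + y) \<partial>lborel) = indicator A (rel N (hq L w))"
        by (simp add: ind01_int)
    qed
    finally show ?thesis by (simp add: mult.commute)
  qed
  have I2: "(\<integral>\<^sup>+y. G2 L y \<partial>lborel) = wt_P N \<alpha> u v q (init_vec L) * indicator A L" for L
  proof -
    have "(\<integral>\<^sup>+y. G2 L y \<partial>lborel) = (indicator A L * wt_P N \<alpha> u v q (init_vec L)) * (\<integral>\<^sup>+y. indicator {0..1::real} (0 + y) \<partial>lborel)"
      unfolding G2_def by (subst nn_integral_cmult[symmetric]) (auto simp: mult_ac)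
    then show ?thesis by (simp add: ind01_int mult.commute)
  qed
  have "(\<integral>\<^sup>+L. wt_P N \<alpha> u v p (init_vec L) * (\<integral>\<^sup>+w. indicator A (rel N (hq L w)) \<partial>?W) \<partial>LB1 N)
      = (\<integral>\<^sup>+L. (\<integral>\<^sup>+y. G1 L y \<partial>lborel) \<partial>LB1 N)"
    by (intro nn_integral_cong) (simp add: I1)
  also have "\<dots> = (\<integral>\<^sup>+L. wt_P N \<alpha> u v q (init_vec L) * indicator A L \<partial>LB1 N)"
    unfolding eq I2 ..
  finally show ?thesis unfolding hq_def .
qed


lemma part2:
  assumes N: "N \<ge> 1"
    and aa: "\<And>i j. i \<in> {1..N} \<Longrightarrow> j \<in> {1..N} \<Longrightarrow> \<alpha> i + \<alpha> j > 0"
    and au: "\<And>i. i \<in> {1..N} \<Longrightarrow> \<alpha> i + u > 0"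
    and av: "\<And>i. i \<in> {1..N} \<Longrightarrow> \<alpha> i + v > 0"
    and P: "down_right_path N p" and Q: "down_right_path N q"
    and ge: "\<And>j. j \<le> N \<Longrightarrow> snd (p j) \<le> snd (q j)"
    and CL: "Claim N \<alpha> u v p q"
  shows "distr (density (PiM {1..N} (\<lambda>_. lborel)) (P_LG N \<alpha> u v p) \<Otimes>\<^sub>M weight_measure N \<alpha> u v)
              (PiM {1..N} (\<lambda>_. lborel))
              (\<lambda>(L, w). restrict (\<lambda>j. free_energy N p (init_vec L) w (q j)
                                      - free_energy N p (init_vec L) w (q 0)) {1..N})
        = density (PiM {1..N} (\<lambda>_. lborel)) (P_LG N \<alpha> u v q)"
proof -
  let ?W = "weight_measure N \<alpha> u v"
  let ?Mw = "\<lambda>y. inv_gamma (weight_param N \<alpha> u v y)"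
  let ?D = "density (LB1 N) (P_LG N \<alpha> u v p)"
  have pos: "\<And>y. weight_param N \<alpha> u v y > 0" by (rule weight_param_pos[OF N]) (auto intro: aa au av)
  interpret W: prob_space ?W
    unfolding weight_measure_def using pos prob_inv_gamma by (intro prob_space_PiM) auto
  have Wdef: "?W = PiM (strip N) ?Mw" unfolding weight_measure_def ..
  define \<Psi> where "\<Psi> z = rel N (hvec N p q (init_vec (fst z)) (snd z))" for z
  have Psi_eq: "(\<lambda>(L, w). restrict (\<lambda>j. free_energy N p (init_vec L) w (q j) - free_energy N p (init_vec L) w (q 0)) {1..N}) = \<Psi>"
    unfolding \<Psi>_def rel_def hvec_def by (auto simp: fun_eq_iff)
  have Psi_m0: "\<Psi> \<in> measurable (LB1 N \<Otimes>\<^sub>M ?W) (LB1 N)"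
  proof -
    have "(\<lambda>z. hvec N p q (init_vec (fst z)) (snd z)) \<in> measurable (LB1 N \<Otimes>\<^sub>M ?W) (LB N)"
    proof (rule hvec_meas[OF P])
      show "\<And>i. i \<in> strip N \<Longrightarrow> sets (?Mw i) = sets borel" by simp
      show "snd \<in> measurable (LB1 N \<Otimes>\<^sub>M ?W) (PiM (strip N) ?Mw)" using Wdef by simp
      fix j assume j: "j \<le> N"
      have "(\<lambda>z. init_vec (fst z)) \<in> measurable (LB1 N \<Otimes>\<^sub>M ?W) (LB N)"
        using measurable_compose[OF measurable_fst init_vec_meas] by simp
      then show "(\<lambda>z. init_vec (fst z) j) \<in> borel_measurable (LB1 N \<Otimes>\<^sub>M ?W)"
        using measurable_compose[OF _ coord_meas[OF j]] by blast
    qed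
    then show ?thesis unfolding \<Psi>_def using measurable_compose[OF _ rel_meas] by blast
  qed
  have setsD: "sets (?D \<Otimes>\<^sub>M ?W) = sets (LB1 N \<Otimes>\<^sub>M ?W)" by (intro sets_pair_measure_cong) auto
  have Psi_m: "\<Psi> \<in> measurable (?D \<Otimes>\<^sub>M ?W) (LB1 N)"
    using Psi_m0 measurable_cong_sets[OF setsD refl] by simp
  define Zp where "Zp = Z_LG N \<alpha> u v p"
  define Zq where "Zq = Z_LG N \<alpha> u v q"
  have wtp: "(\<lambda>L. wt_P N \<alpha> u v r (init_vec L)) \<in> borel_measurable (LB1 N)" for r
    using measurable_compose[OF init_vec_meas wt_P_meas] by simp
  have Zeq: "Zp = Zq"
  proof -
    have "(\<integral>\<^sup>+L. wt_P N \<alpha> u v p (init_vec L) * (\<integral>\<^sup>+w. indicator (space (LB1 N)) (rel N (hvec N p q (init_vec L) w)) \<partial>?W) \<partial>LB1 N)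
       = (\<integral>\<^sup>+L. wt_P N \<alpha> u v q (init_vec L) * indicator (space (LB1 N)) L \<partial>LB1 N)"
      by (rule K2[OF N aa au av P Q ge CL sets.top])
    moreover have "(\<integral>\<^sup>+w. indicator (space (LB1 N)) (rel N (hvec N p q (init_vec L) w)) \<partial>?W) = 1" for L
      using rel_space[of N] by (simp add: W.emeasure_space_1)
    moreover have "(\<integral>\<^sup>+L. wt_P N \<alpha> u v q (init_vec L) * indicator (space (LB1 N)) L \<partial>LB1 N) = (\<integral>\<^sup>+L. wt_P N \<alpha> u v q (init_vec L) \<partial>LB1 N)"
      by (intro nn_integral_cong) simp
    ultimately have "(\<integral>\<^sup>+L. wt_P N \<alpha> u v p (init_vec L) \<partial>LB1 N) = (\<integral>\<^sup>+L. wt_P N \<alpha> u v q (init_vec L) \<partial>LB1 N)"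
      by simp
    then show ?thesis unfolding Zp_def Zq_def Z_LG_def .
  qed
  have PLp: "P_LG N \<alpha> u v p L = wt_P N \<alpha> u v p (init_vec L) * inverse Zp" for L
    unfolding P_LG_def Zp_def divide_ennreal_def ..
  have PLq: "P_LG N \<alpha> u v q L = wt_P N \<alpha> u v q (init_vec L) * inverse Zp" for L
    unfolding P_LG_def Zeq Zq_def divide_ennreal_def ..
  have PLm: "P_LG N \<alpha> u v r \<in> borel_measurable (LB1 N)" for r
    unfolding P_LG_def using wtp[of r] by measurable
  have inner_m: "(\<lambda>L. \<integral>\<^sup>+w. indicator A (\<Psi> (L, w)) \<partial>?W) \<in> borel_measurable (LB1 N)" if A: "A \<in> sets (LB1 N)" for A
  proof -
    have "(\<lambda>z. indicator A (\<Psi> z) :: ennreal) \<in> borel_measurable (LB1 N \<Otimes>\<^sub>M ?W)"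
      using Psi_m0 A by measurable
    then show ?thesis by (intro W.borel_measurable_nn_integral) (simp add: case_prod_beta')
  qed
  show ?thesis unfolding Psi_eq
  proof (rule measure_eqI)
    show "sets (distr (?D \<Otimes>\<^sub>M ?W) (LB1 N) \<Psi>) = sets (density (LB1 N) (P_LG N \<alpha> u v q))" by simp
    fix A assume "A \<in> sets (distr (?D \<Otimes>\<^sub>M ?W) (LB1 N) \<Psi>)"
    then have A: "A \<in> sets (LB1 N)" by simp
    have "emeasure (distr (?D \<Otimes>\<^sub>M ?W) (LB1 N) \<Psi>) A = emeasure (?D \<Otimes>\<^sub>M ?W) (\<Psi> -` A \<inter> space (?D \<Otimes>\<^sub>M ?W))"
      using Psi_m A by (rule emeasure_distr)
    also have "\<dots> = (\<integral>\<^sup>+z. indicator (\<Psi> -` A \<inter> space (?D \<Otimes>\<^sub>M ?W)) z \<partial>(?D \<Otimes>\<^sub>M ?W))"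
      using measurable_sets[OF Psi_m A] by simp
    also have "\<dots> = (\<integral>\<^sup>+L. (\<integral>\<^sup>+w. indicator (\<Psi> -` A \<inter> space (?D \<Otimes>\<^sub>M ?W)) (L, w) \<partial>?W) \<partial>?D)"
      using measurable_sets[OF Psi_m A] by (intro W.nn_integral_fst[symmetric]) simp
    also have "\<dots> = (\<integral>\<^sup>+L. (\<integral>\<^sup>+w. indicator A (\<Psi> (L, w)) \<partial>?W) \<partial>?D)"
      by (intro nn_integral_cong) (auto simp: space_pair_measure indicator_def)
    also have "\<dots> = (\<integral>\<^sup>+L. P_LG N \<alpha> u v p L * (\<integral>\<^sup>+w. indicator A (\<Psi> (L, w)) \<partial>?W) \<partial>LB1 N)"
      using PLm inner_m[OF A] by (subst nn_integral_density) auto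
    also have "\<dots> = inverse Zp * (\<integral>\<^sup>+L. wt_P N \<alpha> u v p (init_vec L) * (\<integral>\<^sup>+w. indicator A (rel N (hvec N p q (init_vec L) w)) \<partial>?W) \<partial>LB1 N)"
      unfolding PLp \<Psi>_def using wtp inner_m[OF A] unfolding \<Psi>_def
      by (subst nn_integral_cmult[symmetric]) (auto simp: mult_ac)
    also have "\<dots> = inverse Zp * (\<integral>\<^sup>+L. wt_P N \<alpha> u v q (init_vec L) * indicator A L \<partial>LB1 N)"
      using K2[OF N aa au av P Q ge CL A] by simp
    also have "\<dots> = (\<integral>\<^sup>+L. P_LG N \<alpha> u v q L * indicator A L \<partial>LB1 N)"
      unfolding PLq using wtp A by (subst nn_integral_cmult[symmetric]) (auto simp: mult_ac)
    also have "\<dots> = emeasure (density (LB1 N) (P_LG N \<alpha> u v q)) A"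
      using PLm A by (rule emeasure_density[symmetric])
    finally show "emeasure (distr (?D \<Otimes>\<^sub>M ?W) (LB1 N) \<Psi>) A = emeasure (density (LB1 N) (P_LG N \<alpha> u v q)) A" .
  qed
qed


theorem theorem3p13:
  fixes N :: nat and \<alpha> :: "nat \<Rightarrow> real" and u v :: real
    and p q :: "nat \<Rightarrow> nat \<times> nat"
  assumes N: "N \<ge> 1"
    and aa: "\<And>i j. i \<in> {1..N} \<Longrightarrow> j \<in> {1..N} \<Longrightarrow> \<alpha> i + \<alpha> j > 0"
    and au: "\<And>i. i \<in> {1..N} \<Longrightarrow> \<alpha> i + u > 0"
    and av: "\<And>i. i \<in> {1..N} \<Longrightarrow> \<alpha> i + v > 0"
    and P: "down_right_path N p" and Q: "down_right_path N q"
    and QP: "path_above N p q"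
  shows
    "(\<forall>F \<in> borel_measurable (PiM {..N} (\<lambda>_. lborel)).
        (\<integral>\<^sup>+ lam. (\<integral>\<^sup>+ w. F (restrict (\<lambda>j. free_energy N p lam w (q j)) {..N})
                          \<partial>(weight_measure N \<alpha> u v)) * wt_P N \<alpha> u v p lam
           \<partial>(PiM {..N} (\<lambda>_. lborel)))
        = (\<integral>\<^sup>+ lam'. F lam' * wt_P N \<alpha> u v q lam' \<partial>(PiM {..N} (\<lambda>_. lborel))))
     \<and>
     (u + v > 0 \<longrightarrow>
        distr (density (PiM {1..N} (\<lambda>_. lborel)) (P_LG N \<alpha> u v p) \<Otimes>\<^sub>M weight_measure N \<alpha> u v)
              (PiM {1..N} (\<lambda>_. lborel))
              (\<lambda>(L, w). restrict (\<lambda>j. free_energy N p (init_vec L) w (q j)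
                                      - free_energy N p (init_vec L) w (q 0)) {1..N})
        = density (PiM {1..N} (\<lambda>_. lborel)) (P_LG N \<alpha> u v q))"
proof -
  have CL: "Claim N \<alpha> u v p q"
    by (rule part1[where \<alpha>=\<alpha> and u=u and v=v, OF N aa au av P Q QP])
  have ge: "snd (p j) \<le> snd (q j)" if j: "j \<le> N" for j
  proof -
    have "abv N p (q j)" using above_abv[OF P] QP j unfolding path_above_def by auto
    then show ?thesis unfolding abv_def using drp_fst[OF Q j] by simp
  qed
  have part2': "distr (density (PiM {1..N} (\<lambda>_. lborel)) (P_LG N \<alpha> u v p) \<Otimes>\<^sub>M weight_measure N \<alpha> u v)
              (PiM {1..N} (\<lambda>_. lborel))
              (\<lambda>(L, w). restrict (\<lambda>j. free_energy N p (init_vec L) w (q j)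
                                      - free_energy N p (init_vec L) w (q 0)) {1..N})
        = density (PiM {1..N} (\<lambda>_. lborel)) (P_LG N \<alpha> u v q)"
    by (rule part2[where \<alpha>=\<alpha> and u=u and v=v, OF N aa au av P Q ge CL])
  have part1': "\<forall>F \<in> borel_measurable (PiM {..N} (\<lambda>_. lborel)).
        (\<integral>\<^sup>+ lam. (\<integral>\<^sup>+ w. F (restrict (\<lambda>j. free_energy N p lam w (q j)) {..N})
                          \<partial>(weight_measure N \<alpha> u v)) * wt_P N \<alpha> u v p lam
           \<partial>(PiM {..N} (\<lambda>_. lborel)))
        = (\<integral>\<^sup>+ lam'. F lam' * wt_P N \<alpha> u v q lam' \<partial>(PiM {..N} (\<lambda>_. lborel)))"
    using CL unfolding Claim_def hvec_def .
  show ?thesis using part1' part2' by blast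
qed


end
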